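(* Let $q\ge 1$, let $G$ be a finite subgroup of the unitary group $\mathrm{U}(q)$, and let $\boldsymbol{\lambda}$ be an irreducible complex representation of $G$ with character $\lambda$. Let $f(g)=\operatorname{tr}(g)$ denote the character of the defining representation $\boldsymbol{f}$ of $G\subset \mathrm{U}(q)$. Then the following are equivalent: (a) $G$ is a $\boldsymbol{\lambda}$-twisted unitary $t$-group; (b) $\lVert \lambda f^{t}\rVert = \lVert F^{t}\rVert$; (c) $\langle \lambda^*\lambda, R^{\downarrow}\rangle = 0$ for every irreducible representation $\boldsymbol{R}\in\mathcal{E}_t$ with $\boldsymbol{R}$ not the trivial representation.
   Context: For class functions $\chi,\psi$ on the finite group $G$, $\langle \chi,\psi\rangle := \frac{1}{|G|}\sum_{g\in G}\overline{\chi(g)}\psi(g)$, and $\lVert \chi\rVert := \langle\chi,\chi\rangle$ (no square root). Products of characters are pointwise products; $\lambda^*$ is the complex conjugate of $\lambda$. $\boldsymbol{F}$ denotes the defining (fundamental) representation of $\mathrm{U}(q)$ with character $F(U)=\operatorname{tr}U$, and $\lVert F^t\rVert := \int_{\mathrm{U}(q)} |\operatorname{tr} U|^{2t}\,dU$ with respect to the normalized Haar measure. $\mathcal{E}_t$ is the set of irreducible representations of $\mathrm{U}(q)$ occurring with nonzero multiplicity in $(\boldsymbol{F}\otimes\boldsymbol{F}^* )^{\otimes t}$ (where $\boldsymbol{F}^*$ is the dual/complex-conjugate representation), and for $\boldsymbol{R}\in\mathcal{E}_t$, $R^{\downarrow}$ is the character of the restriction of $\boldsymbol{R}$ to $G$.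 Definition: $G$ is a $\boldsymbol{\lambda}$-twisted unitary $t$-group if $\frac{1}{|G|}\sum_{g\in G}|\lambda(g)|^2 \,(g\otimes \bar g)^{\otimes t} = \int_{\mathrm{U}(q)} (U\otimes \bar U)^{\otimes t}\,dU$, where $\bar g$ is the entrywise complex conjugate and the integral is over normalized Haar measure. *)

theory Defs
  imports "HOL-Probability.Probability" "Jordan_Normal_Form.Matrix"
begin

definition mtrace :: "complex mat \<Rightarrow> complex" where
  "mtrace A = (\<Sum>i<dim_row A. A $$ (i, i))"

definition mconj :: "complex mat \<Rightarrow> complex mat" where
  "mconj A = map_mat cnj A"

definition madj :: "complex mat \<Rightarrow> complex mat" where
  "madj A = transpose_mat (mconj A)"

definition kron :: "complex mat \<Rightarrow> complex mat \<Rightarrow> complex mat" where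
  "kron A B = mat (dim_row A * dim_row B) (dim_col A * dim_col B)
     (\<lambda>(i, j). A $$ (i div dim_row B, j div dim_col B) * B $$ (i mod dim_row B, j mod dim_col B))"

fun tensor_pow :: "complex mat \<Rightarrow> nat \<Rightarrow> complex mat" where
  "tensor_pow A 0 = 1\<^sub>m 1"
| "tensor_pow A (Suc t) = kron (tensor_pow A t) A"

definition FFt :: "nat \<Rightarrow> complex mat \<Rightarrow> complex mat" where
  "FFt t U = tensor_pow (kron U (mconj U)) t"

definition unitary_group :: "nat \<Rightarrow> complex mat set" where
  "unitary_group q = {U \<in> carrier_mat q q. U * madj U = 1\<^sub>m q}"

text \<open>Borel sigma-algebra of \<open>U(q)\<close> as a subspace of \<open>\<complex>^(q\<times>q)\<close>: generated by
  preimages of open sets under the coordinate maps.\<close>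
definition unitary_borel :: "nat \<Rightarrow> complex mat set set" where
  "unitary_borel q = sigma_sets (unitary_group q)
     {{U \<in> unitary_group q. U $$ (i, j) \<in> A} | i j A. i < q \<and> j < q \<and> open A}"

definition haar_measure :: "nat \<Rightarrow> complex mat measure \<Rightarrow> bool" where
  "haar_measure q M \<longleftrightarrow> prob_space M \<and> space M = unitary_group q
     \<and> sets M = unitary_borel q
     \<and> (\<forall>V \<in> unitary_group q. (\<lambda>U. V * U) \<in> M \<rightarrow>\<^sub>M M \<and> distr M M (\<lambda>U. V * U) = M)"

definition mat_integral :: "complex mat measure \<Rightarrow> nat \<Rightarrow> (complex mat \<Rightarrow> complex mat) \<Rightarrow> complex mat" where
  "mat_integral M n T = mat n n (\<lambda>(i, j). LINT U|M. T U $$ (i, j))"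

definition finite_subgroup_unitary :: "nat \<Rightarrow> complex mat set \<Rightarrow> bool" where
  "finite_subgroup_unitary q G \<longleftrightarrow> finite G \<and> G \<subseteq> unitary_group q \<and> 1\<^sub>m q \<in> G
     \<and> (\<forall>g \<in> G. \<forall>h \<in> G. g * h \<in> G) \<and> (\<forall>g \<in> G. madj g \<in> G)"

definition is_rep :: "complex mat set \<Rightarrow> nat \<Rightarrow> (complex mat \<Rightarrow> complex mat) \<Rightarrow> bool" where
  "is_rep H d \<rho> \<longleftrightarrow> (\<forall>g \<in> H. \<rho> g \<in> carrier_mat d d)
     \<and> (\<forall>g \<in> H. \<exists>B \<in> carrier_mat d d. \<rho> g * B = 1\<^sub>m d)
     \<and> (\<forall>g \<in> H. \<forall>h \<in> H. \<rho> (g * h) = \<rho> g * \<rho> h)"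

definition is_subspace :: "nat \<Rightarrow> complex vec set \<Rightarrow> bool" where
  "is_subspace d W \<longleftrightarrow> W \<subseteq> carrier_vec d \<and> 0\<^sub>v d \<in> W
     \<and> (\<forall>v \<in> W. \<forall>w \<in> W. v + w \<in> W) \<and> (\<forall>c. \<forall>v \<in> W. c \<cdot>\<^sub>v v \<in> W)"

definition irreducible_rep :: "complex mat set \<Rightarrow> nat \<Rightarrow> (complex mat \<Rightarrow> complex mat) \<Rightarrow> bool" where
  "irreducible_rep H d \<rho> \<longleftrightarrow> is_rep H d \<rho> \<and> d \<ge> 1
     \<and> (\<forall>W. is_subspace d W \<and> (\<forall>g \<in> H. \<forall>v \<in> W. \<rho> g *\<^sub>v v \<in> W)
            \<longrightarrow> W = {0\<^sub>v d} \<or> W = carrier_vec d)"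

text \<open>\<open>\<rho>\<close> (dimension \<open>d\<close>) occurs with nonzero multiplicity in \<open>\<sigma>\<close> (dimension \<open>n\<close>):
  the space of intertwiners \<open>Hom_H(\<rho>, \<sigma>)\<close> is nonzero.\<close>
definition occurs_in :: "complex mat set \<Rightarrow> nat \<Rightarrow> (complex mat \<Rightarrow> complex mat) \<Rightarrow> nat \<Rightarrow> (complex mat \<Rightarrow> complex mat) \<Rightarrow> bool" where
  "occurs_in H d \<rho> n \<sigma> \<longleftrightarrow> (\<exists>A \<in> carrier_mat n d. A \<noteq> 0\<^sub>m n d \<and> (\<forall>g \<in> H. \<sigma> g * A = A * \<rho> g))"

text \<open>The trivial representation (up to equivalence, for a \<open>d\<close>-dimensional representation).\<close>
definition trivial_rep :: "complex mat set \<Rightarrow> nat \<Rightarrow> (complex mat \<Rightarrow> complex mat) \<Rightarrow> bool" where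
  "trivial_rep H d \<rho> \<longleftrightarrow> d = 1 \<and> (\<forall>g \<in> H. \<rho> g = 1\<^sub>m 1)"

definition in_E :: "nat \<Rightarrow> nat \<Rightarrow> nat \<Rightarrow> (complex mat \<Rightarrow> complex mat) \<Rightarrow> bool" where
  "in_E q t d R \<longleftrightarrow> irreducible_rep (unitary_group q) d R
     \<and> occurs_in (unitary_group q) d R (q ^ (2 * t)) (FFt t)"

definition cinner :: "complex mat set \<Rightarrow> (complex mat \<Rightarrow> complex) \<Rightarrow> (complex mat \<Rightarrow> complex) \<Rightarrow> complex" where
  "cinner G chi psi = (1 / of_nat (card G)) * (\<Sum>g\<in>G. cnj (chi g) * psi g)"

definition cnorm :: "complex mat set \<Rightarrow> (complex mat \<Rightarrow> complex) \<Rightarrow> complex" where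
  "cnorm G chi = cinner G chi chi"

definition twisted_unitary_design :: "nat \<Rightarrow> complex mat measure \<Rightarrow> complex mat set \<Rightarrow> (complex mat \<Rightarrow> complex) \<Rightarrow> nat \<Rightarrow> bool" where
  "twisted_unitary_design q M G lam t \<longleftrightarrow>
     mat (q ^ (2 * t)) (q ^ (2 * t))
       (\<lambda>(i, j). (1 / of_nat (card G)) * (\<Sum>g\<in>G. of_real ((cmod (lam g))\<^sup>2) * FFt t g $$ (i, j)))
     = mat_integral M (q ^ (2 * t)) (FFt t)"

end

theory Submission
  imports Defs "Jordan_Normal_Form.Spectral_Radius"
begin

no_notation vec_nth (infixl \<open>$\<close> 90)


lemma row_col_scalar[simp]: "i < dim_row A \<Longrightarrow> j < dim_col B \<Longrightarrow> dim_row B = dim_col A \<Longrightarrow>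
   Matrix.row A i \<bullet> col B j = (\<Sum>k<dim_col A. A $$ (i,k) * B $$ (k,j))"
  unfolding scalar_prod_def by (simp add: atLeast0LessThan)

lemma row_vec_scalar[simp]: "i < dim_row A \<Longrightarrow> dim_vec v = dim_col A \<Longrightarrow>
   Matrix.row A i \<bullet> v = (\<Sum>k<dim_col A. A $$ (i,k) * v $ k)"
  unfolding scalar_prod_def by (simp add: atLeast0LessThan)


lemma mult_entry:
  assumes "A \<in> carrier_mat n m" "B \<in> carrier_mat m p" "i < n" "j < p"
  shows "(A * B) $$ (i,j) = (\<Sum>k<m. A $$ (i,k) * B $$ (k,j))"
  using assms by (auto simp: scalar_prod_def atLeast0LessThan intro!: sum.cong)

lemma mv_entry:
  assumes "A \<in> carrier_mat n m" "v \<in> carrier_vec m" "i < n"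
  shows "(A *\<^sub>v v) $ i = (\<Sum>k<m. A $$ (i,k) * v $ k)"
  using assms by (auto simp: scalar_prod_def atLeast0LessThan intro!: sum.cong)

lemma madj_dims[simp]: "dim_row (madj A) = dim_col A" "dim_col (madj A) = dim_row A"
  by (auto simp: madj_def mconj_def)

lemma madj_index[simp]: "i < dim_col A \<Longrightarrow> j < dim_row A \<Longrightarrow> madj A $$ (i,j) = cnj (A $$ (j,i))"
  unfolding madj_def mconj_def by simp

lemma madj_carrier[simp]: "A \<in> carrier_mat n m \<Longrightarrow> madj A \<in> carrier_mat m n"
  unfolding carrier_mat_def by simp

lemma mconj_dims[simp]: "dim_row (mconj A) = dim_row A" "dim_col (mconj A) = dim_col A"
  by (auto simp: mconj_def)

lemma mconj_index[simp]: "i < dim_row A \<Longrightarrow> j < dim_col A \<Longrightarrow> mconj A $$ (i,j) = cnj (A $$ (i,j))"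
  unfolding mconj_def by simp

lemma mconj_carrier[simp]: "A \<in> carrier_mat n m \<Longrightarrow> mconj A \<in> carrier_mat n m"
  unfolding carrier_mat_def by simp

lemma madj_mult:
  assumes A: "A \<in> carrier_mat n m" and B: "B \<in> carrier_mat m p"
  shows "madj (A * B) = madj B * madj A"
proof (rule eq_matI)
  fix i j assume i: "i < dim_row (madj B * madj A)" and j: "j < dim_col (madj B * madj A)"
  hence i': "i < p" and j': "j < n" using A B by auto
  have "(madj B * madj A) $$ (i,j) = (\<Sum>k<m. madj B $$ (i,k) * madj A $$ (k,j))"
    by (rule mult_entry[OF madj_carrier[OF B] madj_carrier[OF A] i' j'])
  also have "\<dots> = (\<Sum>k<m. cnj (A $$ (j,k) * B $$ (k,i)))"
    using A B i' j' by (intro sum.cong, auto)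
  also have "\<dots> = cnj ((A*B) $$ (j,i))" using mult_entry[OF A B j' i'] by simp
  also have "\<dots> = madj (A*B) $$ (i,j)" using A B i' j' by simp
  finally show "madj (A * B) $$ (i, j) = (madj B * madj A) $$ (i, j)" by simp
qed (insert A B, auto)

lemma madj_madj[simp]: "madj (madj A) = A"
  by (rule eq_matI, auto)

lemma madj_one[simp]: "madj (1\<^sub>m n) = 1\<^sub>m n"
  by (rule eq_matI, auto)

lemma madj_zero[simp]: "madj (0\<^sub>m n m) = 0\<^sub>m m n"
  by (rule eq_matI, auto)

lemma madj_add: "A \<in> carrier_mat n m \<Longrightarrow> B \<in> carrier_mat n m \<Longrightarrow> madj (A + B) = madj A + madj B"
  by (rule eq_matI, auto)

lemma madj_minus: "A \<in> carrier_mat n m \<Longrightarrow> B \<in> carrier_mat n m \<Longrightarrow> madj (A - B) = madj A - madj B"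
  by (rule eq_matI, auto)

lemma madj_inj: "madj A = madj B \<Longrightarrow> A = B"
  by (metis madj_madj)

lemma mtrace_comm:
  assumes A: "A \<in> carrier_mat n m" and B: "B \<in> carrier_mat m n"
  shows "mtrace (A * B) = mtrace (B * A)"
proof -
  have e1: "\<And>i. i < n \<Longrightarrow> (A*B) $$ (i,i) = (\<Sum>k<m. A $$ (i,k) * B $$ (k,i))"
    using mult_entry[OF A B] by blast
  have e2: "\<And>i. i < m \<Longrightarrow> (B*A) $$ (i,i) = (\<Sum>k<n. B $$ (i,k) * A $$ (k,i))"
    using mult_entry[OF B A] by blast
  have "mtrace (A * B) = (\<Sum>i<n. \<Sum>k<m. A $$ (i,k) * B $$ (k,i))"
    unfolding mtrace_def using A B e1 by (auto intro!: sum.cong)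
  also have "\<dots> = (\<Sum>k<m. \<Sum>i<n. B $$ (k,i) * A $$ (i,k))"
    by (subst sum.swap, simp add: mult.commute)
  also have "\<dots> = mtrace (B * A)"
    unfolding mtrace_def using A B e2 by (auto intro!: sum.cong)
  finally show ?thesis .
qed

lemma mtrace_madj: "A \<in> carrier_mat n n \<Longrightarrow> mtrace (madj A) = cnj (mtrace A)"
  unfolding mtrace_def by auto

lemma mtrace_one[simp]: "mtrace (1\<^sub>m n) = of_nat n"
  unfolding mtrace_def by simp

lemma mtrace_add: "A \<in> carrier_mat n n \<Longrightarrow> B \<in> carrier_mat n n \<Longrightarrow> mtrace (A + B) = mtrace A + mtrace B"
  unfolding mtrace_def by (auto simp: sum.distrib)

lemma mtrace_minus: "A \<in> carrier_mat n n \<Longrightarrow> B \<in> carrier_mat n n \<Longrightarrow> mtrace (A - B) = mtrace A - mtrace B"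
  unfolding mtrace_def by (auto simp: sum_subtractf)

definition ip :: "complex vec \<Rightarrow> complex vec \<Rightarrow> complex" where
  "ip x y = (\<Sum>i<dim_vec x. cnj (x $ i) * y $ i)"

lemma ip_conj: "dim_vec x = dim_vec y \<Longrightarrow> ip y x = cnj (ip x y)"
  unfolding ip_def by (auto simp: mult.commute)

lemma cnj_self_mult: "cnj z * z = complex_of_real ((cmod z)^2)"
  using complex_norm_square[of z] by (simp add: mult.commute)

lemma ip_self: "ip x x = of_real (\<Sum>i<dim_vec x. (cmod (x $ i))^2)"
  unfolding ip_def of_real_sum cnj_self_mult ..

lemma ip_self_real: "Im (ip x x) = 0" "Re (ip x x) \<ge> 0"
  unfolding ip_self by (auto intro: sum_nonneg)

lemma ip_self_zero: "x \<in> carrier_vec n \<Longrightarrow> ip x x = 0 \<Longrightarrow> x = 0\<^sub>v n"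
proof -
  assume x: "x \<in> carrier_vec n" and z: "ip x x = 0"
  have s: "(\<Sum>i<dim_vec x. (cmod (x $ i))^2) = 0" using z unfolding ip_self of_real_eq_0_iff .
  have "\<forall>i\<in>{..<dim_vec x}. (cmod (x $ i))^2 = 0"
    using s by (subst sum_nonneg_eq_0_iff[symmetric], auto)
  thus ?thesis using x by (intro eq_vecI, auto)
qed

lemma ip_mv:
  assumes A: "A \<in> carrier_mat n m" and x: "x \<in> carrier_vec n" and y: "y \<in> carrier_vec m"
  shows "ip x (A *\<^sub>v y) = ip (madj A *\<^sub>v x) y"
proof -
  have "ip x (A *\<^sub>v y) = (\<Sum>i<n. cnj (x $ i) * (\<Sum>k<m. A $$ (i,k) * y $ k))"
    unfolding ip_def using x y A by (intro sum.cong, auto)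
  also have "\<dots> = (\<Sum>i<n. \<Sum>k<m. cnj (x $ i) * A $$ (i,k) * y $ k)"
    by (simp add: sum_distrib_left mult.assoc)
  also have "\<dots> = (\<Sum>k<m. \<Sum>i<n. cnj (x $ i) * A $$ (i,k) * y $ k)"
    by (rule sum.swap)
  also have "\<dots> = (\<Sum>k<m. cnj (\<Sum>i<n. madj A $$ (k,i) * x $ i) * y $ k)"
  proof (rule sum.cong[OF refl])
    fix k assume "k \<in> {..<m}"
    hence k: "k < m" by auto
    have "(\<Sum>i<n. cnj (x $ i) * A $$ (i,k) * y $ k) = (\<Sum>i<n. cnj (x $ i) * A $$ (i,k)) * y $ k"
      by (simp add: sum_distrib_right)
    also have "(\<Sum>i<n. cnj (x $ i) * A $$ (i,k)) = cnj (\<Sum>i<n. madj A $$ (k,i) * x $ i)"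
      using A k by (simp add: mult.commute)
    finally show "(\<Sum>i<n. cnj (x $ i) * A $$ (i,k) * y $ k) = cnj (\<Sum>i<n. madj A $$ (k,i) * x $ i) * y $ k" .
  qed
  also have "\<dots> = ip (madj A *\<^sub>v x) y"
    unfolding ip_def using A x by (intro sum.cong, auto)
  finally show ?thesis .
qed

lemma ip_unit: "x \<in> carrier_vec n \<Longrightarrow> i < n \<Longrightarrow> ip (unit_vec n i) x = x $ i"
proof -
  assume x: "x \<in> carrier_vec n" and i: "i < n"
  have "ip (unit_vec n i) x = (\<Sum>k<n. if k = i then x $ k else 0)"
    unfolding ip_def by (intro sum.cong, auto simp: i)
  also have "\<dots> = x $ i" using i by simp
  finally show ?thesis .
qed

lemma vec_eq_by_ip:
  assumes x: "x \<in> carrier_vec n" and y: "y \<in> carrier_vec n"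
    and h: "\<And>z. z \<in> carrier_vec n \<Longrightarrow> ip z x = ip z y"
  shows "x = y"
proof (rule eq_vecI)
  fix i assume "i < dim_vec y"
  hence i: "i < n" using y by auto
  show "x $ i = y $ i" using h[of "unit_vec n i"] ip_unit[OF x i] ip_unit[OF y i] by auto
qed (insert x y, auto)

lemma mv_unit: 
  assumes C: "(C :: complex mat) \<in> carrier_mat n m" and i: "i < n" and j: "j < m"
  shows "(C *\<^sub>v unit_vec m j) $ i = C $$ (i,j)"
proof -
  have "(C *\<^sub>v unit_vec m j) $ i = (\<Sum>k<m. C $$ (i,k) * unit_vec m j $ k)"
    using C i by simp
  also have "\<dots> = (\<Sum>k<m. if k = j then C $$ (i,k) else 0)"
    by (rule sum.cong, auto simp: j)
  also have "\<dots> = C $$ (i,j)" using j by simp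
  finally show ?thesis .
qed

lemma mat_eq_by_mv:
  fixes A B :: "complex mat"
  assumes A: "A \<in> carrier_mat n m" and B: "B \<in> carrier_mat n m"
    and h: "\<And>x. x \<in> carrier_vec m \<Longrightarrow> A *\<^sub>v x = B *\<^sub>v x"
  shows "A = B"
proof (rule eq_matI)
  fix i j assume "i < dim_row B" "j < dim_col B"
  hence i: "i < n" and j: "j < m" using B by auto
  have "(A *\<^sub>v unit_vec m j) $ i = (B *\<^sub>v unit_vec m j) $ i" using h[of "unit_vec m j"] j by auto
  thus "A $$ (i,j) = B $$ (i,j)" using mv_unit[OF A i j] mv_unit[OF B i j] by simp
qed (insert A B, auto)

lemma ip_add_right: "dim_vec y = dim_vec x \<Longrightarrow> dim_vec z = dim_vec x \<Longrightarrow> ip x (y + z) = ip x y + ip x z"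
  unfolding ip_def by (simp add: algebra_simps sum.distrib)

lemma ip_minus_right: "dim_vec y = dim_vec x \<Longrightarrow> dim_vec z = dim_vec x \<Longrightarrow> ip x (y - z) = ip x y - ip x z"
  unfolding ip_def by (simp add: algebra_simps sum_subtractf)

lemma ip_smult_right: "dim_vec y = dim_vec x \<Longrightarrow> ip x (c \<cdot>\<^sub>v y) = c * ip x y"
  unfolding ip_def by (simp add: algebra_simps sum_distrib_left)

lemma ip_smult_left: "ip (c \<cdot>\<^sub>v x) y = cnj c * ip x y"
  unfolding ip_def by (simp add: algebra_simps sum_distrib_left)

lemma ip_zero_right: "ip x (0\<^sub>v (dim_vec x)) = 0"
  unfolding ip_def by simp

lemma ip_zero_left: "ip (0\<^sub>v n) x = 0"
  unfolding ip_def by simp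

lemma madj_mv_col:
  assumes J: "J \<in> carrier_mat n e" and v: "v \<in> carrier_vec n" and a: "a < e"
  shows "(madj J *\<^sub>v v) $ a = ip (col J a) v"
proof -
  have "(madj J *\<^sub>v v) $ a = (\<Sum>k<n. madj J $$ (a,k) * v $ k)"
    by (rule mv_entry[OF madj_carrier[OF J] v a])
  also have "\<dots> = (\<Sum>k<n. cnj (col J a $ k) * v $ k)"
    using J a by (intro sum.cong, auto)
  also have "\<dots> = ip (col J a) v" unfolding ip_def using J by simp
  finally show ?thesis .
qed

lemma adj_H_entry:
  assumes X: "X \<in> carrier_mat n e" and H: "H \<in> carrier_mat n n" and Y: "Y \<in> carrier_mat n f"
    and a: "a < e" and b: "b < f"
  shows "(madj X * H * Y) $$ (a,b) = ip (col X a) (H *\<^sub>v col Y b)"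
proof -
  have "(madj X * H * Y) $$ (a,b) = (madj X * (H * Y)) $$ (a,b)"
    using X H Y by (subst assoc_mult_mat[of _ e n _ n _ f], auto)
  also have "\<dots> = Matrix.row (madj X) a \<bullet> col (H * Y) b" using X H Y a b by (simp del: row_col_scalar)
  also have "col (H * Y) b = H *\<^sub>v col Y b" using H Y b by (simp add: col_mult2)
  also have "Matrix.row (madj X) a \<bullet> (H *\<^sub>v col Y b) = (madj X *\<^sub>v (H *\<^sub>v col Y b)) $ a"
    using X a by simp
  also have "\<dots> = ip (col X a) (H *\<^sub>v col Y b)"
    by (rule madj_mv_col[OF X _ a], insert H Y b, auto)
  finally show ?thesis .
qed


lemma sum_split_prod: fixes k l :: nat and f :: "nat \<Rightarrow> 'a::comm_monoid_add"
  shows "(\<Sum>m<k*l. f m) = (\<Sum>a<k. \<Sum>b<l. f (a*l + b))"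
proof -
  have "(\<Sum>m<k*l. f m) = (\<Sum>a<k. sum f {a*l..<a*l+l})" by (rule sum.nat_group[symmetric])
  also have "\<dots> = (\<Sum>a<k. \<Sum>b<l. f (a*l + b))"
  proof (rule sum.cong[OF refl])
    fix a
    have "sum f {a*l..<a*l+l} = sum f {0 + a*l..<l + a*l}" by (simp add: add.commute)
    also have "\<dots> = (\<Sum>b=0..<l. f (b + a*l))" by (rule sum.shift_bounds_nat_ivl)
    also have "\<dots> = (\<Sum>b<l. f (a*l + b))" by (simp add: atLeast0LessThan add.commute)
    finally show "sum f {a*l..<a*l+l} = (\<Sum>b<l. f (a*l + b))" .
  qed
  finally show ?thesis .
qed

lemma divmod_lt: fixes i a b :: nat assumes "i < a * b" shows "i div b < a" "i mod b < b"
proof -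
  from assms have b: "b > 0" by (cases b, auto)
  show "i div b < a" using assms by (simp add: less_mult_imp_div_less)
  show "i mod b < b" using b by simp
qed

lemma kron_dims[simp]: "dim_row (kron A B) = dim_row A * dim_row B" "dim_col (kron A B) = dim_col A * dim_col B"
  unfolding kron_def by simp_all

lemma kron_carrier[simp]: "A \<in> carrier_mat a1 a2 \<Longrightarrow> B \<in> carrier_mat b1 b2 \<Longrightarrow> kron A B \<in> carrier_mat (a1*b1) (a2*b2)"
  unfolding carrier_mat_def by simp

lemma kron_index: "i < dim_row A * dim_row B \<Longrightarrow> j < dim_col A * dim_col B \<Longrightarrow>
  kron A B $$ (i,j) = A $$ (i div dim_row B, j div dim_col B) * B $$ (i mod dim_row B, j mod dim_col B)"
  unfolding kron_def by simp

lemma kron_mult: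
  assumes A: "A \<in> carrier_mat a1 a2" and C: "C \<in> carrier_mat a2 a3"
    and B: "B \<in> carrier_mat b1 b2" and D: "D \<in> carrier_mat b2 b3"
  shows "kron A B * kron C D = kron (A * C) (B * D)"
proof (rule eq_matI)
  fix i j assume "i < dim_row (kron (A * C) (B * D))" "j < dim_col (kron (A * C) (B * D))"
  hence i: "i < a1 * b1" and j: "j < a3 * b3" using A B C D by auto
  note ij = divmod_lt[OF i] divmod_lt[OF j]
  have "(kron A B * kron C D) $$ (i,j) = (\<Sum>m<a2*b2. kron A B $$ (i,m) * kron C D $$ (m,j))"
    by (rule mult_entry[OF kron_carrier[OF A B] kron_carrier[OF C D] i j])
  also have "\<dots> = (\<Sum>x<a2. \<Sum>y<b2. kron A B $$ (i,x*b2+y) * kron C D $$ (x*b2+y,j))"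
    by (rule sum_split_prod)
  also have "\<dots> = (\<Sum>x<a2. \<Sum>y<b2. (A $$ (i div b1, x) * C $$ (x, j div b3)) * (B $$ (i mod b1, y) * D $$ (y, j mod b3)))"
  proof (intro sum.cong refl)
    fix x y assume x: "x \<in> {..<a2}" and y: "y \<in> {..<b2}"
    have xy: "x * b2 + y < a2 * b2"
    proof -
      have "x * b2 + y < x * b2 + b2" using y by simp
      also have "\<dots> = (x+1) * b2" by simp
      also have "\<dots> \<le> a2 * b2" using x by (intro mult_right_mono, auto)
      finally show ?thesis .
    qed
    have d: "(x*b2+y) div b2 = x" "(x*b2+y) mod b2 = y" using y by auto
    have ymod: "y mod b2 = y" using y by auto
    show "kron A B $$ (i,x*b2+y) * kron C D $$ (x*b2+y,j) = (A $$ (i div b1, x) * C $$ (x, j div b3)) * (B $$ (i mod b1, y) * D $$ (y, j mod b3))"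
      using A B C D i j xy by (simp add: kron_index d ymod)
  qed
  also have "\<dots> = (\<Sum>x<a2. A $$ (i div b1, x) * C $$ (x, j div b3)) * (\<Sum>y<b2. B $$ (i mod b1, y) * D $$ (y, j mod b3))"
    by (simp add: sum_product)
  also have "\<dots> = (A * C) $$ (i div b1, j div b3) * (B * D) $$ (i mod b1, j mod b3)"
    using mult_entry[OF A C ij(1) ij(3)] mult_entry[OF B D ij(2) ij(4)] by simp
  also have "\<dots> = kron (A * C) (B * D) $$ (i,j)"
    using A B C D i j by (simp add: kron_index)
  finally show "(kron A B * kron C D) $$ (i, j) = kron (A * C) (B * D) $$ (i, j)" .
qed (insert A B C D, auto)

lemma kron_one: "kron (1\<^sub>m a) (1\<^sub>m b) = 1\<^sub>m (a * b)"
proof (rule eq_matI)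
  fix i j assume "i < dim_row (1\<^sub>m (a * b) :: complex mat)" "j < dim_col (1\<^sub>m (a * b) :: complex mat)"
  hence i: "i < a * b" and j: "j < a * b" by auto
  note ij = divmod_lt[OF i] divmod_lt[OF j]
  have "(i div b = j div b \<and> i mod b = j mod b) = (i = j)"
    by (metis div_mult_mod_eq)
  thus "kron (1\<^sub>m a) (1\<^sub>m b) $$ (i, j) = (1\<^sub>m (a * b) :: complex mat) $$ (i, j)"
    using i j ij by (auto simp: kron_index)
qed auto

lemma madj_kron: "madj (kron A B) = kron (madj A) (madj B)"
proof (rule eq_matI)
  fix i j assume "i < dim_row (kron (madj A) (madj B))" "j < dim_col (kron (madj A) (madj B))"
  hence i: "i < dim_col A * dim_col B" and j: "j < dim_row A * dim_row B" by auto
  note ij = divmod_lt[OF i] divmod_lt[OF j]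
  show "madj (kron A B) $$ (i, j) = kron (madj A) (madj B) $$ (i, j)"
    using i j ij by (simp add: kron_index)
qed auto

lemma mconj_kron: "mconj (kron A B) = kron (mconj A) (mconj B)"
proof (rule eq_matI)
  fix i j assume "i < dim_row (kron (mconj A) (mconj B))" "j < dim_col (kron (mconj A) (mconj B))"
  hence i: "i < dim_row A * dim_row B" and j: "j < dim_col A * dim_col B" by auto
  note ij = divmod_lt[OF i] divmod_lt[OF j]
  show "mconj (kron A B) $$ (i, j) = kron (mconj A) (mconj B) $$ (i, j)"
    using i j ij by (simp add: kron_index)
qed auto

lemma mtrace_kron:
  assumes A: "A \<in> carrier_mat a a" and B: "B \<in> carrier_mat b b"
  shows "mtrace (kron A B) = mtrace A * mtrace B"
proof -
  have "mtrace (kron A B) = (\<Sum>m<a*b. kron A B $$ (m,m))" unfolding mtrace_def using A B by simp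
  also have "\<dots> = (\<Sum>x<a. \<Sum>y<b. kron A B $$ (x*b+y,x*b+y))" by (rule sum_split_prod)
  also have "\<dots> = (\<Sum>x<a. \<Sum>y<b. A $$ (x,x) * B $$ (y,y))"
  proof (intro sum.cong refl)
    fix x y assume x: "x \<in> {..<a}" and y: "y \<in> {..<b}"
    have xy: "x * b + y < a * b"
    proof -
      have "x * b + y < x * b + b" using y by simp
      also have "\<dots> = (x+1) * b" by simp
      also have "\<dots> \<le> a * b" using x by (intro mult_right_mono, auto)
      finally show ?thesis .
    qed
    have d: "(x*b+y) div b = x" "(x*b+y) mod b = y" using y by auto
    have ymod: "y mod b = y" using y by auto
    show "kron A B $$ (x*b+y,x*b+y) = A $$ (x,x) * B $$ (y,y)"
      using A B xy by (simp add: kron_index d ymod)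
  qed
  also have "\<dots> = mtrace A * mtrace B" unfolding mtrace_def using A B by (simp add: sum_product)
  finally show ?thesis .
qed

lemma mconj_mult: "A \<in> carrier_mat n m \<Longrightarrow> B \<in> carrier_mat m p \<Longrightarrow> mconj (A * B) = mconj A * mconj B"
  by (rule eq_matI, auto simp: mult_entry)

lemma mconj_one[simp]: "mconj (1\<^sub>m n) = 1\<^sub>m n"
  by (rule eq_matI, auto)

lemma madj_mconj: "madj (mconj A) = mconj (madj A)"
  by (rule eq_matI, auto)

lemma mtrace_mconj: "A \<in> carrier_mat n n \<Longrightarrow> mtrace (mconj A) = cnj (mtrace A)"
  unfolding mtrace_def by simp

section \<open>Tensor powers\<close>

lemma tensor_pow_carrier[simp]: "X \<in> carrier_mat n n \<Longrightarrow> tensor_pow X t \<in> carrier_mat (n^t) (n^t)"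
proof (induct t)
  case (Suc t)
  have "kron (tensor_pow X t) X \<in> carrier_mat (n^t*n) (n^t*n)" using Suc by simp
  thus ?case by (simp add: mult.commute)
qed simp

lemma tensor_pow_mult:
  assumes X: "X \<in> carrier_mat n n" and Y: "Y \<in> carrier_mat n n"
  shows "tensor_pow (X * Y) t = tensor_pow X t * tensor_pow Y t"
proof (induct t)
  case 0 show ?case by simp
next
  case (Suc t)
  have "tensor_pow X (Suc t) * tensor_pow Y (Suc t) = kron (tensor_pow X t * tensor_pow Y t) (X * Y)"
    by (simp, rule kron_mult[OF tensor_pow_carrier[OF X] tensor_pow_carrier[OF Y] X Y])
  thus ?case using Suc by simp
qed

lemma tensor_pow_one: "tensor_pow (1\<^sub>m n) t = 1\<^sub>m (n^t)"
proof (induct t)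
  case (Suc t)
  have "tensor_pow (1\<^sub>m n) (Suc t) = 1\<^sub>m (n^t*n)" using Suc by (simp add: kron_one)
  thus ?case by (simp add: mult.commute)
qed simp

lemma tensor_pow_madj: "tensor_pow (madj X) t = madj (tensor_pow X t)"
  by (induct t, auto simp: madj_kron)

lemma tensor_pow_trace: "X \<in> carrier_mat n n \<Longrightarrow> mtrace (tensor_pow X t) = mtrace X ^ t"
proof (induct t)
  case 0 thus ?case by simp
next
  case (Suc t)
  thus ?case by (simp add: mtrace_kron[OF tensor_pow_carrier[OF Suc(2)] Suc(2)])
qed

section \<open>The representation FFt\<close>

lemma FFt_carrier[simp]: "U \<in> carrier_mat q q \<Longrightarrow> FFt t U \<in> carrier_mat (q^(2*t)) (q^(2*t))"
proof -
  assume U: "U \<in> carrier_mat q q"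
  have "kron U (mconj U) \<in> carrier_mat (q*q) (q*q)" using U by simp
  from tensor_pow_carrier[OF this, of t] show ?thesis
    unfolding FFt_def by (simp add: power_mult power2_eq_square)
qed

lemma FFt_dims: "U \<in> carrier_mat q q \<Longrightarrow> dim_row (FFt t U) = q^(2*t) \<and> dim_col (FFt t U) = q^(2*t)"
  using carrier_matD[OF FFt_carrier] by blast

lemma FFt_mult:
  assumes U: "U \<in> carrier_mat q q" and V: "V \<in> carrier_mat q q"
  shows "FFt t (U * V) = FFt t U * FFt t V"
proof -
  have "kron (U * V) (mconj (U * V)) = kron U (mconj U) * kron V (mconj V)"
    using U V by (simp add: mconj_mult[OF U V] kron_mult[OF U V mconj_carrier[OF U] mconj_carrier[OF V]])
  thus ?thesis unfolding FFt_def
    using tensor_pow_mult[of "kron U (mconj U)" "q*q" "kron V (mconj V)" t] U V by simp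
qed

lemma FFt_one: "FFt t (1\<^sub>m q) = 1\<^sub>m (q^(2*t))"
  unfolding FFt_def by (simp add: kron_one tensor_pow_one power_mult power2_eq_square)

lemma FFt_madj: "FFt t (madj U) = madj (FFt t U)"
  unfolding FFt_def tensor_pow_madj[symmetric] madj_kron madj_mconj ..

lemma FFt_trace:
  assumes U: "U \<in> carrier_mat q q"
  shows "mtrace (FFt t U) = complex_of_real ((cmod (mtrace U)) ^ (2*t))"
proof -
  have "mtrace (FFt t U) = mtrace (kron U (mconj U)) ^ t"
    unfolding FFt_def by (rule tensor_pow_trace[of _ "q*q"], insert U, simp)
  also have "mtrace (kron U (mconj U)) = mtrace U * cnj (mtrace U)"
    using U by (simp add: mtrace_kron[OF U mconj_carrier[OF U]] mtrace_mconj)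
  also have "\<dots> = complex_of_real ((cmod (mtrace U))^2)" by (rule complex_norm_square[symmetric])
  finally show ?thesis by (simp add: power_mult)
qed


lemma unitary_carrier: "U \<in> unitary_group q \<Longrightarrow> U \<in> carrier_mat q q"
  unfolding unitary_group_def by simp

lemma unitary_right: "U \<in> unitary_group q \<Longrightarrow> U * madj U = 1\<^sub>m q"
  unfolding unitary_group_def by simp

lemma unitary_left: "U \<in> unitary_group q \<Longrightarrow> madj U * U = 1\<^sub>m q"
  using mat_mult_left_right_inverse[of U q "madj U"] unfolding unitary_group_def by auto

lemma unitary_madj: "U \<in> unitary_group q \<Longrightarrow> madj U \<in> unitary_group q"
  using unitary_left[of U q] unfolding unitary_group_def by simp

lemma unitary_mult: assumes U: "U \<in> unitary_group q" and V: "V \<in> unitary_group q"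
  shows "U * V \<in> unitary_group q"
proof -
  have U': "U \<in> carrier_mat q q" and V': "V \<in> carrier_mat q q" using U V unitary_carrier by auto
  have aU: "madj U \<in> carrier_mat q q" and aV: "madj V \<in> carrier_mat q q" using U' V' by auto
  have "U * V * madj (U * V) = U * V * (madj V * madj U)" by (simp add: madj_mult[OF U' V'])
  also have "\<dots> = U * (V * (madj V * madj U))" using assoc_mult_mat[OF U' V' mult_carrier_mat[OF aV aU]] .
  also have "V * (madj V * madj U) = (V * madj V) * madj U" using assoc_mult_mat[OF V' aV aU] by simp
  also have "\<dots> = madj U" using unitary_right[OF V] left_mult_one_mat[OF aU] by simp
  also have "U * madj U = 1\<^sub>m q" using unitary_right[OF U] .
  finally show ?thesis unfolding unitary_group_def using U' V' by simp
qed

lemma unitary_one: "1\<^sub>m q \<in> unitary_group q"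
  unfolding unitary_group_def by simp

lemma FFt_unitary_right: "U \<in> unitary_group q \<Longrightarrow> FFt t U * madj (FFt t U) = 1\<^sub>m (q^(2*t))"
  using FFt_mult[of U q "madj U" t] unitary_carrier[of U q] unitary_right[of U q]
  by (simp add: FFt_madj[symmetric] FFt_one)

lemma FFt_unitary_left: "U \<in> unitary_group q \<Longrightarrow> madj (FFt t U) * FFt t U = 1\<^sub>m (q^(2*t))"
  using FFt_unitary_right[OF unitary_madj, of U q t] by (simp add: FFt_madj)

lemma unitary_entry_bound:
  assumes X: "X \<in> carrier_mat n n" and XX: "X * madj X = 1\<^sub>m n" and i: "i < n" and j: "j < n"
  shows "cmod (X $$ (i,j)) \<le> 1"
proof -
  have "(X * madj X) $$ (i,i) = (\<Sum>k<n. X $$ (i,k) * madj X $$ (k,i))"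
    by (rule mult_entry[OF X madj_carrier[OF X] i i])
  also have "\<dots> = (\<Sum>k<n. X $$ (i,k) * cnj (X $$ (i,k)))"
    using X i by (intro sum.cong refl, simp)
  also have "\<dots> = complex_of_real (\<Sum>k<n. (cmod (X $$ (i,k)))^2)"
    unfolding of_real_sum complex_norm_square ..
  finally have "complex_of_real (\<Sum>k<n. (cmod (X $$ (i,k)))^2) = 1" using XX i by simp
  hence "(\<Sum>k<n. (cmod (X $$ (i,k)))^2) = 1" by (simp only: of_real_eq_1_iff)
  moreover have "(cmod (X $$ (i,j)))^2 \<le> (\<Sum>k<n. (cmod (X $$ (i,k)))^2)"
    using j by (intro member_le_sum, auto)
  ultimately have "(cmod (X $$ (i,j)))^2 \<le> 1" by simp
  thus ?thesis by (simp add: power_le_one_iff abs_square_le_1)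
qed

section \<open>Haar measure\<close>

locale haar_ctx =
  fixes q :: nat and M :: "complex mat measure"
  assumes haar: "haar_measure q M"
begin

lemma prob: "prob_space M" using haar unfolding haar_measure_def by simp
lemma space_M: "space M = unitary_group q" using haar unfolding haar_measure_def by simp
lemma sets_M: "sets M = unitary_borel q" using haar unfolding haar_measure_def by simp
lemma left_inv: "V \<in> unitary_group q \<Longrightarrow> (\<lambda>U. V * U) \<in> M \<rightarrow>\<^sub>M M \<and> distr M M (\<lambda>U. V * U) = M"
  using haar unfolding haar_measure_def by simp

lemma entry_meas: assumes i: "i < q" and j: "j < q" shows "(\<lambda>U. U $$ (i,j)) \<in> borel_measurable M"
proof (rule borel_measurableI)
  fix S :: "complex set" assume S: "open S"
  have "(\<lambda>U. U $$ (i,j)) -` S \<inter> space M = {U \<in> unitary_group q. U $$ (i, j) \<in> S}"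
    unfolding space_M by auto
  also have "\<dots> \<in> sets M" unfolding sets_M unitary_borel_def
    by (rule sigma_sets.Basic, insert i j S, blast)
  finally show "(\<lambda>U. U $$ (i,j)) -` S \<inter> space M \<in> sets M" .
qed

lemma cnj_meas: "f \<in> borel_measurable M \<Longrightarrow> (\<lambda>x. cnj (f x)) \<in> borel_measurable M"
  by (rule borel_measurable_continuous_on[OF linear_continuous_on[OF bounded_linear_cnj]])

lemma FFt_entry_meas: "i < q^(2*t) \<Longrightarrow> j < q^(2*t) \<Longrightarrow> (\<lambda>U. FFt t U $$ (i,j)) \<in> borel_measurable M"
proof (induct t arbitrary: i j)
  case 0
  thus ?case unfolding FFt_def by simp
next
  case (Suc t i j)
  let ?Q = "q*q"
  have N: "q^(2*Suc t) = q^(2*t) * ?Q"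
  proof -
    have "2 * Suc t = 2 * t + 2" by simp
    hence "q^(2*Suc t) = q^(2*t) * q^2" by (simp only: power_add)
    thus ?thesis by (simp only: power2_eq_square)
  qed
  have i: "i < q^(2*t) * ?Q" using Suc(2) unfolding N .
  have j: "j < q^(2*t) * ?Q" using Suc(3) unfolding N .
  note ij = divmod_lt[OF i] divmod_lt[OF j]
  note ij2 = divmod_lt[OF ij(2)] divmod_lt[OF ij(4)]
  have eq: "FFt (Suc t) U $$ (i,j) = FFt t U $$ (i div ?Q, j div ?Q) *
     (U $$ (i mod ?Q div q, j mod ?Q div q) * cnj (U $$ (i mod ?Q mod q, j mod ?Q mod q)))"
    if U: "U \<in> space M" for U
  proof -
    have U': "U \<in> carrier_mat q q" using U unitary_carrier unfolding space_M by auto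
    have F: "FFt t U \<in> carrier_mat (q^(2*t)) (q^(2*t))" using U' by simp
    have d: "dim_row (FFt t U) = q^(2*t)" "dim_col (FFt t U) = q^(2*t)" "dim_row U = q" "dim_col U = q"
      using carrier_matD[OF F] carrier_matD[OF U'] by auto
    have "FFt (Suc t) U = kron (FFt t U) (kron U (mconj U))" unfolding FFt_def by simp
    thus ?thesis using i j ij ij2 by (simp add: kron_index d)
  qed
  show ?case
    apply (subst measurable_cong[OF eq], assumption)
    apply (intro borel_measurable_times cnj_meas entry_meas Suc(1) ij ij2)
    done
qed

lemma FFt_entry_bound: "U \<in> space M \<Longrightarrow> i < q^(2*t) \<Longrightarrow> j < q^(2*t) \<Longrightarrow> cmod (FFt t U $$ (i,j)) \<le> 1"
  unfolding space_M
  by (rule unitary_entry_bound[OF FFt_carrier[OF unitary_carrier] FFt_unitary_right], auto)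

lemma FFt_entry_int: "i < q^(2*t) \<Longrightarrow> j < q^(2*t) \<Longrightarrow> integrable M (\<lambda>U. FFt t U $$ (i,j))"
proof -
  assume i: "i < q^(2*t)" and j: "j < q^(2*t)"
  interpret prob_space M by (rule prob)
  show ?thesis
    by (rule integrable_const_bound[where B=1], insert FFt_entry_bound[OF _ i j] FFt_entry_meas[OF i j], auto)
qed

definition PM :: "nat \<Rightarrow> complex mat" where "PM t = mat_integral M (q^(2*t)) (FFt t)"

lemma PM_carrier[simp]: "PM t \<in> carrier_mat (q^(2*t)) (q^(2*t))"
  unfolding PM_def mat_integral_def by simp

lemma PM_dims[simp]: "dim_row (PM t) = q^(2*t)" "dim_col (PM t) = q^(2*t)"
  unfolding PM_def mat_integral_def by simp_all

lemma PM_index: "i < q^(2*t) \<Longrightarrow> j < q^(2*t) \<Longrightarrow> PM t $$ (i,j) = (LINT U|M. FFt t U $$ (i,j))"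
  unfolding PM_def mat_integral_def by simp

lemma PM_left: assumes V: "V \<in> unitary_group q" shows "FFt t V * PM t = PM t"
proof -
  have V': "V \<in> carrier_mat q q" by (rule unitary_carrier[OF V])
  show ?thesis
proof (rule eq_matI)
  let ?N = "q^(2*t)"
  fix i j assume "i < dim_row (PM t)" "j < dim_col (PM t)"
  hence i: "i < ?N" and j: "j < ?N" by auto
  have "(FFt t V * PM t) $$ (i,j) = (\<Sum>k<?N. FFt t V $$ (i,k) * PM t $$ (k,j))"
    by (rule mult_entry[OF FFt_carrier[OF V'] PM_carrier i j])
  also have "\<dots> = (\<Sum>k<?N. LINT U|M. FFt t V $$ (i,k) * FFt t U $$ (k,j))"
    using j by (intro sum.cong refl, simp add: PM_index)
  also have "\<dots> = (LINT U|M. (\<Sum>k<?N. FFt t V $$ (i,k) * FFt t U $$ (k,j)))"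
    apply (subst Bochner_Integration.integral_sum)
    apply (auto intro!: integrable_mult_right FFt_entry_int j)
    done
  also have "\<dots> = (LINT U|M. FFt t (V * U) $$ (i,j))"
  proof (rule Bochner_Integration.integral_cong[OF refl])
    fix U assume U: "U \<in> space M"
    have U': "U \<in> carrier_mat q q" using U unitary_carrier unfolding space_M by auto
    show "(\<Sum>k<?N. FFt t V $$ (i,k) * FFt t U $$ (k,j)) = FFt t (V * U) $$ (i,j)"
      using mult_entry[OF FFt_carrier[OF V'] FFt_carrier[OF U'] i j] FFt_mult[OF V' U'] by simp
  qed
  also have "\<dots> = (LINT U|distr M M (\<lambda>U. V * U). FFt t U $$ (i,j))"
    by (rule integral_distr[symmetric], insert left_inv[OF V] FFt_entry_meas[OF i j], auto)
  also have "\<dots> = PM t $$ (i,j)" using left_inv[OF V] i j by (simp add: PM_index)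
  finally show "(FFt t V * PM t) $$ (i,j) = PM t $$ (i,j)" .
qed (insert FFt_dims[OF V', of t], auto)
qed

lemma PM_mv: assumes x: "x \<in> carrier_vec (q^(2*t))" and i: "i < q^(2*t)"
  shows "(PM t *\<^sub>v x) $ i = (LINT U|M. (FFt t U *\<^sub>v x) $ i)"
proof -
  let ?N = "q^(2*t)"
  have "(PM t *\<^sub>v x) $ i = (\<Sum>k<?N. PM t $$ (i,k) * x $ k)" by (rule mv_entry[OF PM_carrier x i])
  also have "\<dots> = (\<Sum>k<?N. LINT U|M. FFt t U $$ (i,k) * x $ k)"
    using i by (intro sum.cong refl, simp add: PM_index)
  also have "\<dots> = (LINT U|M. (\<Sum>k<?N. FFt t U $$ (i,k) * x $ k))"
    by (subst Bochner_Integration.integral_sum, auto intro!: integrable_mult_left FFt_entry_int i)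
  also have "\<dots> = (LINT U|M. (FFt t U *\<^sub>v x) $ i)"
  proof (rule Bochner_Integration.integral_cong[OF refl])
    fix U assume U: "U \<in> space M"
    have U': "U \<in> carrier_mat q q" using U unitary_carrier unfolding space_M by auto
    show "(\<Sum>k<?N. FFt t U $$ (i,k) * x $ k) = (FFt t U *\<^sub>v x) $ i"
      using mv_entry[OF FFt_carrier[OF U'] x i] by simp
  qed
  finally show ?thesis .
qed

lemma FFt_mv_int: assumes x: "x \<in> carrier_vec (q^(2*t))" and i: "i < q^(2*t)"
  shows "integrable M (\<lambda>U. (FFt t U *\<^sub>v x) $ i)"
proof -
  let ?N = "q^(2*t)"
  have "integrable M (\<lambda>U. \<Sum>k<?N. FFt t U $$ (i,k) * x $ k)"
    by (rule Bochner_Integration.integrable_sum, rule integrable_mult_left, rule FFt_entry_int[OF i], auto)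
  moreover have "integrable M (\<lambda>U. \<Sum>k<?N. FFt t U $$ (i,k) * x $ k) = integrable M (\<lambda>U. (FFt t U *\<^sub>v x) $ i)"
    by (rule Bochner_Integration.integrable_cong[OF refl], insert mv_entry[OF FFt_carrier[OF unitary_carrier] x i], 
       unfold space_M, auto)
  ultimately show ?thesis by simp
qed

lemma PM_ip: assumes y: "y \<in> carrier_vec (q^(2*t))" and x: "x \<in> carrier_vec (q^(2*t))"
  and inv: "\<And>V. V \<in> unitary_group q \<Longrightarrow> FFt t V *\<^sub>v y = y"
  shows "ip y (PM t *\<^sub>v x) = ip y x"
proof -
  let ?N = "q^(2*t)"
  interpret prob_space M by (rule prob)
  have "ip y (PM t *\<^sub>v x) = (\<Sum>i<?N. cnj (y $ i) * (LINT U|M. (FFt t U *\<^sub>v x) $ i))"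
    unfolding ip_def using y x PM_mv[OF x] by (intro sum.cong refl, auto)
  also have "\<dots> = (\<Sum>i<?N. LINT U|M. cnj (y $ i) * (FFt t U *\<^sub>v x) $ i)" by simp
  also have "\<dots> = (LINT U|M. (\<Sum>i<?N. cnj (y $ i) * (FFt t U *\<^sub>v x) $ i))"
    by (subst Bochner_Integration.integral_sum, auto intro!: integrable_mult_right FFt_mv_int x)
  also have "\<dots> = (LINT U|M. ip y x)"
  proof (rule Bochner_Integration.integral_cong[OF refl])
    fix U assume U: "U \<in> space M"
    hence U1: "U \<in> unitary_group q" unfolding space_M .
    have U': "U \<in> carrier_mat q q" using U1 unitary_carrier by auto
    have "(\<Sum>i<?N. cnj (y $ i) * (FFt t U *\<^sub>v x) $ i) = ip y (FFt t U *\<^sub>v x)"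
      unfolding ip_def using y by simp
    also have "\<dots> = ip (madj (FFt t U) *\<^sub>v y) x" by (rule ip_mv[OF FFt_carrier[OF U'] y x])
    also have "madj (FFt t U) *\<^sub>v y = y" using inv[OF unitary_madj[OF U1]] by (simp add: FFt_madj)
    finally show "(\<Sum>i<?N. cnj (y $ i) * (FFt t U *\<^sub>v x) $ i) = ip y x" .
  qed
  also have "\<dots> = ip y x" using prob_space by simp
  finally show ?thesis .
qed

lemma PM_trace: "mtrace (PM t) = complex_of_real (LINT U|M. (cmod (mtrace U)) ^ (2*t))"
proof -
  let ?N = "q^(2*t)"
  have "mtrace (PM t) = (\<Sum>i<?N. LINT U|M. FFt t U $$ (i,i))"
    unfolding mtrace_def by (intro sum.cong, auto simp: PM_index)
  also have "\<dots> = (LINT U|M. (\<Sum>i<?N. FFt t U $$ (i,i)))"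
    by (subst Bochner_Integration.integral_sum, auto intro!: FFt_entry_int)
  also have "\<dots> = (LINT U|M. complex_of_real ((cmod (mtrace U)) ^ (2*t)))"
  proof (rule Bochner_Integration.integral_cong[OF refl])
    fix U assume U: "U \<in> space M"
    have U': "U \<in> carrier_mat q q" using U unitary_carrier unfolding space_M by auto
    show "(\<Sum>i<?N. FFt t U $$ (i,i)) = complex_of_real ((cmod (mtrace U)) ^ (2*t))"
      using FFt_trace[OF U', of t] FFt_carrier[OF U', of t] unfolding mtrace_def by simp
  qed
  also have "\<dots> = complex_of_real (LINT U|M. (cmod (mtrace U)) ^ (2*t))" by (rule integral_complex_of_real)
  finally show ?thesis .
qed

lemma PM_col_inv: assumes V: "V \<in> unitary_group q" and x: "x \<in> carrier_vec (q^(2*t))"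
  shows "FFt t V *\<^sub>v (PM t *\<^sub>v x) = PM t *\<^sub>v x"
proof -
  have V': "V \<in> carrier_mat q q" by (rule unitary_carrier[OF V])
  have "FFt t V *\<^sub>v (PM t *\<^sub>v x) = (FFt t V * PM t) *\<^sub>v x"
    by (rule assoc_mult_mat_vec[symmetric, OF FFt_carrier[OF V'] PM_carrier x])
  thus ?thesis using PM_left[OF V] by simp
qed

lemma PM_mv_carrier[simp]: "x \<in> carrier_vec (q^(2*t)) \<Longrightarrow> PM t *\<^sub>v x \<in> carrier_vec (q^(2*t))"
  using mult_mat_vec_carrier[OF PM_carrier] by blast

lemma PM_adj_mv_carrier[simp]: "x \<in> carrier_vec (q^(2*t)) \<Longrightarrow> madj (PM t) *\<^sub>v x \<in> carrier_vec (q^(2*t))"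
  using mult_mat_vec_carrier[OF madj_carrier[OF PM_carrier]] by blast

lemma PM_herm: "madj (PM t) = PM t"
proof -
  let ?N = "q^(2*t)" and ?P = "PM t"
  have "madj ?P *\<^sub>v x = ?P *\<^sub>v x" if x: "x \<in> carrier_vec ?N" for x
  proof (rule vec_eq_by_ip[of _ ?N])
    fix y :: "complex vec" assume y: "y \<in> carrier_vec ?N"
    have Py: "?P *\<^sub>v y \<in> carrier_vec ?N" and Px: "?P *\<^sub>v x \<in> carrier_vec ?N" using x y by auto
    have "ip y (madj ?P *\<^sub>v x) = ip (?P *\<^sub>v y) x"
      using ip_mv[OF madj_carrier[OF PM_carrier] y x] by simp
    also have "\<dots> = ip (?P *\<^sub>v y) (?P *\<^sub>v x)"
      by (rule PM_ip[symmetric, OF Py x], rule PM_col_inv[OF _ y])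
    also have "\<dots> = cnj (ip (?P *\<^sub>v x) (?P *\<^sub>v y))" by (rule ip_conj, insert Px Py, simp)
    also have "ip (?P *\<^sub>v x) (?P *\<^sub>v y) = ip (?P *\<^sub>v x) y"
      by (rule PM_ip[OF Px y], rule PM_col_inv[OF _ x])
    also have "cnj \<dots> = ip y (?P *\<^sub>v x)" by (rule ip_conj[symmetric], insert Px y, simp)
    finally show "ip y (madj ?P *\<^sub>v x) = ip y (?P *\<^sub>v x)" .
  qed (insert x, auto)
  thus ?thesis by (intro mat_eq_by_mv[of _ ?N ?N], auto)
qed

lemma PM_ip_sym: "x \<in> carrier_vec (q^(2*t)) \<Longrightarrow> y \<in> carrier_vec (q^(2*t)) \<Longrightarrow> ip (PM t *\<^sub>v y) x = ip y (PM t *\<^sub>v x)"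
  using ip_mv[OF PM_carrier, of y t x] PM_herm[of t] by simp

lemma PM_idem: "PM t * PM t = PM t"
proof -
  let ?N = "q^(2*t)" and ?P = "PM t"
  have "(?P * ?P) *\<^sub>v x = ?P *\<^sub>v x" if x: "x \<in> carrier_vec ?N" for x
  proof -
    have "(?P * ?P) *\<^sub>v x = ?P *\<^sub>v (?P *\<^sub>v x)" by (rule assoc_mult_mat_vec[OF PM_carrier PM_carrier x])
    also have "\<dots> = ?P *\<^sub>v x"
    proof (rule vec_eq_by_ip[of _ ?N])
      fix y :: "complex vec" assume y: "y \<in> carrier_vec ?N"
      have Py: "?P *\<^sub>v y \<in> carrier_vec ?N" and Px: "?P *\<^sub>v x \<in> carrier_vec ?N" using x y by auto
      have "ip y (?P *\<^sub>v (?P *\<^sub>v x)) = ip (?P *\<^sub>v y) (?P *\<^sub>v x)" using PM_ip_sym[OF Px y] by simp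
      also have "\<dots> = ip (?P *\<^sub>v y) x"
        by (rule PM_ip[OF Py x], rule PM_col_inv[OF _ y])
      also have "\<dots> = ip y (?P *\<^sub>v x)" by (rule PM_ip_sym[OF x y])
      finally show "ip y (?P *\<^sub>v (?P *\<^sub>v x)) = ip y (?P *\<^sub>v x)" .
    qed (insert x, auto)
    finally show ?thesis .
  qed
  thus ?thesis by (intro mat_eq_by_mv[of _ ?N ?N], auto)
qed

lemma PM_right: assumes V: "V \<in> unitary_group q" shows "PM t * FFt t V = PM t"
proof -
  have V': "V \<in> carrier_mat q q" by (rule unitary_carrier[OF V])
  have "madj (PM t * FFt t V) = madj (FFt t V) * madj (PM t)"
    by (rule madj_mult[OF PM_carrier FFt_carrier[OF V']])
  also have "\<dots> = FFt t (madj V) * PM t" by (simp add: FFt_madj PM_herm)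
  also have "\<dots> = PM t" by (rule PM_left[OF unitary_madj[OF V]])
  finally have "madj (PM t * FFt t V) = madj (PM t)" by (simp add: PM_herm)
  thus ?thesis by (rule madj_inj)
qed

lemma PM_fix: assumes y: "y \<in> carrier_vec (q^(2*t))" and inv: "\<And>V. V \<in> unitary_group q \<Longrightarrow> FFt t V *\<^sub>v y = y"
  shows "PM t *\<^sub>v y = y"
proof (rule vec_eq_by_ip[of _ "q^(2*t)"])
  fix z :: "complex vec" assume z: "z \<in> carrier_vec (q^(2*t))"
  have "ip z (PM t *\<^sub>v y) = ip (PM t *\<^sub>v z) y" by (rule PM_ip_sym[symmetric, OF y z])
  also have "\<dots> = cnj (ip y (PM t *\<^sub>v z))" by (rule ip_conj, insert y z, simp)
  also have "ip y (PM t *\<^sub>v z) = ip y z" by (rule PM_ip[OF y z inv])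
  also have "cnj (ip y z) = ip z y" by (rule ip_conj[symmetric], insert y z, simp)
  finally show "ip z (PM t *\<^sub>v y) = ip z y" .
qed (insert y, auto)

end


section \<open>Linear algebra: bounds, subspaces, bases\<close>

lemma inv_bound:
  fixes A B :: "complex mat"
  assumes A: "A \<in> carrier_mat e d" and B: "B \<in> carrier_mat d e" and AB: "A * B = 1\<^sub>m e"
  shows "e \<le> d"
proof (rule ccontr)
  assume "\<not> e \<le> d" hence de: "d < e" by simp
  define A' where "A' = mat e e (\<lambda>(i,j). if j < d then A $$ (i,j) else 0)"
  define B' where "B' = mat e e (\<lambda>(i,j). if i < d then B $$ (i,j) else 0)"
  have A'c: "A' \<in> carrier_mat e e" and B'c: "B' \<in> carrier_mat e e" unfolding A'_def B'_def by auto
  have "A' * B' = 1\<^sub>m e"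
  proof (rule eq_matI)
    fix i j assume "i < dim_row (1\<^sub>m e :: complex mat)" "j < dim_col (1\<^sub>m e :: complex mat)"
    hence i: "i < e" and j: "j < e" by auto
    have "(A' * B') $$ (i,j) = (\<Sum>k<e. A' $$ (i,k) * B' $$ (k,j))" by (rule mult_entry[OF A'c B'c i j])
    also have "\<dots> = (\<Sum>k<e. if k < d then A $$ (i,k) * B $$ (k,j) else 0)"
      unfolding A'_def B'_def using i j by (intro sum.cong refl, auto)
    also have "\<dots> = sum (\<lambda>k. A $$ (i,k) * B $$ (k,j)) {k \<in> {..<e}. k < d}"
      by (rule sum.inter_filter[symmetric], simp)
    also have "{k \<in> {..<e}. k < d} = {..<d}" using de by auto
    also have "sum (\<lambda>k. A $$ (i,k) * B $$ (k,j)) {..<d} = (A * B) $$ (i,j)"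
      using mult_entry[OF A B i j] by simp
    finally show "(A' * B') $$ (i,j) = (1\<^sub>m e :: complex mat) $$ (i,j)" using AB by simp
  qed (insert A'c B'c, auto)
  hence BA: "B' * A' = 1\<^sub>m e" by (rule mat_mult_left_right_inverse[OF A'c B'c])
  have e1: "e - 1 < e" and e2: "\<not> e - 1 < d" using de by auto
  have "(B' * A') $$ (e-1,e-1) = (\<Sum>k<e. B' $$ (e-1,k) * A' $$ (k,e-1))" by (rule mult_entry[OF B'c A'c e1 e1])
  also have "\<dots> = 0" unfolding B'_def using e1 e2 by (intro sum.neutral, auto)
  finally show False using BA e1 by simp
qed

lemma sub_carrier: "is_subspace n W \<Longrightarrow> w \<in> W \<Longrightarrow> w \<in> carrier_vec n"
  unfolding is_subspace_def by auto

lemma sub_zero: "is_subspace n W \<Longrightarrow> 0\<^sub>v n \<in> W"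
  unfolding is_subspace_def by auto

lemma sub_add: "is_subspace n W \<Longrightarrow> v \<in> W \<Longrightarrow> w \<in> W \<Longrightarrow> v + w \<in> W"
  unfolding is_subspace_def by auto

lemma sub_smult: "is_subspace n W \<Longrightarrow> v \<in> W \<Longrightarrow> c \<cdot>\<^sub>v v \<in> W"
  unfolding is_subspace_def by auto

lemma sub_minus: assumes W: "is_subspace n W" and v: "v \<in> W" and w: "w \<in> W" shows "v - w \<in> W"
proof -
  have vc: "v \<in> carrier_vec n" and wc: "w \<in> carrier_vec n" using sub_carrier[OF W] v w by auto
  have "v - w = v + (-1) \<cdot>\<^sub>v w" using vc wc by (intro eq_vecI, auto)
  thus ?thesis using sub_add[OF W v sub_smult[OF W w]] by simp
qed

lemma orth_subspace: assumes W: "is_subspace n W"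
  shows "is_subspace n {x \<in> carrier_vec n. \<forall>w\<in>W. ip w x = 0}"
  unfolding is_subspace_def
proof (intro conjI ballI allI)
  have "ip w (0\<^sub>v n) = 0" if w: "w \<in> W" for w
    using sub_carrier[OF W w] unfolding ip_def by (intro sum.neutral, auto)
  thus "0\<^sub>v n \<in> {x \<in> carrier_vec n. \<forall>w\<in>W. ip w x = 0}" by auto
  fix v w assume v: "v \<in> {x \<in> carrier_vec n. \<forall>w\<in>W. ip w x = 0}" and w: "w \<in> {x \<in> carrier_vec n. \<forall>w\<in>W. ip w x = 0}"
  have "ip w' (v + w) = 0" if w': "w' \<in> W" for w'
  proof -
    have "ip w' (v + w) = ip w' v + ip w' w" using v w sub_carrier[OF W w'] by (intro ip_add_right, auto)
    thus ?thesis using v w w' by simp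
  qed
  thus "v + w \<in> {x \<in> carrier_vec n. \<forall>w\<in>W. ip w x = 0}" using v w by auto
next
  fix c :: complex and v assume v: "v \<in> {x \<in> carrier_vec n. \<forall>w\<in>W. ip w x = 0}"
  have "ip w' (c \<cdot>\<^sub>v v) = 0" if w': "w' \<in> W" for w'
  proof -
    have "ip w' (c \<cdot>\<^sub>v v) = c * ip w' v" using v sub_carrier[OF W w'] by (intro ip_smult_right, auto)
    thus ?thesis using v w' by simp
  qed
  thus "c \<cdot>\<^sub>v v \<in> {x \<in> carrier_vec n. \<forall>w\<in>W. ip w x = 0}" using v by auto
qed auto

definition hpd :: "complex mat \<Rightarrow> nat \<Rightarrow> bool" where
  "hpd H n \<longleftrightarrow> H \<in> carrier_mat n n \<and> madj H = H \<and> (\<forall>x\<in>carrier_vec n. x \<noteq> 0\<^sub>v n \<longrightarrow> Re (ip x (H *\<^sub>v x)) > 0)"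

lemma hpd_one: "hpd (1\<^sub>m n) n"
  unfolding hpd_def
proof (intro conjI ballI impI)
  fix x :: "complex vec" assume x: "x \<in> carrier_vec n" and x0: "x \<noteq> 0\<^sub>v n"
  have "ip x x \<noteq> 0" using ip_self_zero[OF x] x0 by auto
  moreover have "Im (ip x x) = 0" "Re (ip x x) \<ge> 0" by (rule ip_self_real)+
  ultimately have "Re (ip x x) > 0" using complex_eqI[of "ip x x" 0] by force
  thus "Re (ip x (1\<^sub>m n *\<^sub>v x)) > 0" using x by simp
qed auto

lemma herm_ip: assumes H: "H \<in> carrier_mat n n" and Hh: "madj H = H" and x: "x \<in> carrier_vec n" and y: "y \<in> carrier_vec n"
  shows "ip x (H *\<^sub>v y) = cnj (ip y (H *\<^sub>v x))"
proof -
  have "ip x (H *\<^sub>v y) = ip (H *\<^sub>v x) y" using ip_mv[OF H x y] Hh by simp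
  also have "\<dots> = cnj (ip y (H *\<^sub>v x))" by (rule ip_conj, insert H x y, simp)
  finally show ?thesis .
qed

lemma zero_mat_mv: "a \<in> carrier_vec 0 \<Longrightarrow> (0\<^sub>m n 0 :: complex mat) *\<^sub>v a = 0\<^sub>v n"
  by (intro eq_vecI, auto simp: scalar_prod_def)

lemma basis_exists:
  assumes H: "hpd H n" and W: "is_subspace n W"
  shows "\<exists>e J. J \<in> carrier_mat n e \<and> madj J * H * J = 1\<^sub>m e \<and> (\<forall>a\<in>carrier_vec e. J *\<^sub>v a \<in> W)
            \<and> (\<forall>w\<in>W. J *\<^sub>v (madj J *\<^sub>v (H *\<^sub>v w)) = w)"
proof -
  have Hc: "H \<in> carrier_mat n n" and Hh: "madj H = H" and Hp: "\<And>x. x \<in> carrier_vec n \<Longrightarrow> x \<noteq> 0\<^sub>v n \<Longrightarrow> Re (ip x (H *\<^sub>v x)) > 0"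
    using H unfolding hpd_def by auto
  define S where "S = {e. \<exists>J. J \<in> carrier_mat n e \<and> madj J * H * J = 1\<^sub>m e \<and> (\<forall>a\<in>carrier_vec e. J *\<^sub>v a \<in> W)}"
  have bnd: "e \<le> n" if eS: "e \<in> S" for e
  proof -
    obtain J where J: "J \<in> carrier_mat n e" and JJ: "madj J * H * J = 1\<^sub>m e" using eS unfolding S_def by auto
    show ?thesis by (rule inv_bound[OF mult_carrier_mat[OF madj_carrier[OF J] Hc] J JJ])
  qed
  have finS: "finite S" using bnd by (intro finite_subset[of S "{..n}"], auto)
  have "0 \<in> S" unfolding S_def
    by (intro CollectI exI[of _ "0\<^sub>m n 0"] conjI ballI, auto simp: zero_mat_mv sub_zero[OF W])
  hence neS: "S \<noteq> {}" by auto
  define e where "e = Max S"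
  have "e \<in> S" unfolding e_def using finS neS by (rule Max_in)
  then obtain J where J: "J \<in> carrier_mat n e" and JJ: "madj J * H * J = 1\<^sub>m e"
    and JW: "\<forall>a\<in>carrier_vec e. J *\<^sub>v a \<in> W" unfolding S_def by auto
  have aJ: "madj J \<in> carrier_mat e n" using J by simp
  have span: "J *\<^sub>v (madj J *\<^sub>v (H *\<^sub>v w)) = w" if w: "w \<in> W" for w
  proof (rule ccontr)
    assume ne: "J *\<^sub>v (madj J *\<^sub>v (H *\<^sub>v w)) \<noteq> w"
    have wc: "w \<in> carrier_vec n" using sub_carrier[OF W w] .
    define a0 where "a0 = madj J *\<^sub>v (H *\<^sub>v w)"
    have a0: "a0 \<in> carrier_vec e" unfolding a0_def using aJ Hc wc by simp
    define v0 where "v0 = J *\<^sub>v a0"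
    have v0W: "v0 \<in> W" unfolding v0_def using JW a0 by auto
    have v0c: "v0 \<in> carrier_vec n" unfolding v0_def using J a0 by simp
    define u where "u = w - v0"
    have uW: "u \<in> W" unfolding u_def by (rule sub_minus[OF W w v0W])
    have uc: "u \<in> carrier_vec n" unfolding u_def using wc v0c by simp
    have u0: "u \<noteq> 0\<^sub>v n"
    proof
      assume "u = 0\<^sub>v n"
      hence z: "w - v0 = 0\<^sub>v n" unfolding u_def .
      have "w = v0"
      proof (rule eq_vecI)
        fix i assume "i < dim_vec v0" hence i: "i < n" using v0c by simp
        have "(w - v0) $ i = 0" using z i by simp
        thus "w $ i = v0 $ i" using i wc v0c by simp
      qed (insert wc v0c, simp)
      thus False using ne unfolding v0_def a0_def by simp
    qed
    have JHv0: "madj J *\<^sub>v (H *\<^sub>v v0) = a0"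
    proof -
      have "madj J *\<^sub>v (H *\<^sub>v v0) = madj J *\<^sub>v (H *\<^sub>v (J *\<^sub>v a0))" unfolding v0_def ..
      also have "H *\<^sub>v (J *\<^sub>v a0) = (H * J) *\<^sub>v a0" using assoc_mult_mat_vec[OF Hc J a0] by simp
      also have "madj J *\<^sub>v ((H * J) *\<^sub>v a0) = (madj J * (H * J)) *\<^sub>v a0"
        using assoc_mult_mat_vec[OF aJ mult_carrier_mat[OF Hc J] a0] by simp
      also have "madj J * (H * J) = madj J * H * J" using assoc_mult_mat[OF aJ Hc J] by simp
      finally show ?thesis using JJ a0 by simp
    qed
    have JHu: "madj J *\<^sub>v (H *\<^sub>v u) = 0\<^sub>v e"
    proof -
      have "H *\<^sub>v u = H *\<^sub>v w - H *\<^sub>v v0" unfolding u_def by (rule mult_minus_distrib_mat_vec[OF Hc wc v0c])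
      hence "madj J *\<^sub>v (H *\<^sub>v u) = madj J *\<^sub>v (H *\<^sub>v w) - madj J *\<^sub>v (H *\<^sub>v v0)"
        using mult_minus_distrib_mat_vec[OF aJ, of "H *\<^sub>v w" "H *\<^sub>v v0"] Hc wc v0c by simp
      also have "\<dots> = a0 - a0" unfolding JHv0 a0_def ..
      also have "\<dots> = 0\<^sub>v e" using a0 by simp
      finally show ?thesis .
    qed
    have JHu_i: "ip (col J a) (H *\<^sub>v u) = 0" if a: "a < e" for a
      using madj_mv_col[OF J _ a, of "H *\<^sub>v u"] JHu Hc uc a by simp
    define c where "c = ip u (H *\<^sub>v u)"
    have cpos: "Re c > 0" unfolding c_def by (rule Hp[OF uc u0])
    have creal: "c = complex_of_real (Re c)"
    proof -
      have "c = cnj c" unfolding c_def by (rule herm_ip[OF Hc Hh uc uc])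
      hence "Im c = - Im c" by (metis cnj.sel(2))
      hence "Im c = 0" by simp
      thus ?thesis by (simp add: complex_eq_iff)
    qed
    define s where "s = 1 / sqrt (Re c)"
    have ss: "s * s * Re c = 1" unfolding s_def using cpos
      by (simp add: field_simps)
    define cs where "cs = complex_of_real s"
    define J' where "J' = mat n (Suc e) (\<lambda>(i,j). if j < e then J $$ (i,j) else cs * u $ i)"
    have J'c: "J' \<in> carrier_mat n (Suc e)" unfolding J'_def by simp
    have colJ'1: "col J' a = col J a" if a: "a < e" for a
      unfolding J'_def using J a by (intro eq_vecI, auto)
    have colJ'2: "col J' e = cs \<cdot>\<^sub>v u"
      unfolding J'_def using J uc by (intro eq_vecI, auto)
    have colJc: "col J a \<in> carrier_vec n" for a using J unfolding carrier_vec_def by simp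
    have HJ: "H *\<^sub>v (cs \<cdot>\<^sub>v u) = cs \<cdot>\<^sub>v (H *\<^sub>v u)" by (rule mult_mat_vec[OF Hc uc])
    have "madj J' * H * J' = 1\<^sub>m (Suc e)"
    proof (rule eq_matI)
      fix a b assume "a < dim_row (1\<^sub>m (Suc e) :: complex mat)" "b < dim_col (1\<^sub>m (Suc e) :: complex mat)"
      hence a: "a < Suc e" and b: "b < Suc e" by auto
      have "(madj J' * H * J') $$ (a,b) = ip (col J' a) (H *\<^sub>v col J' b)"
        by (rule adj_H_entry[OF J'c Hc J'c a b])
      also have "\<dots> = (1\<^sub>m (Suc e) :: complex mat) $$ (a,b)"
      proof (cases "a < e")
        case True note a' = this
        show ?thesis
        proof (cases "b < e")
          case True
          have "ip (col J' a) (H *\<^sub>v col J' b) = (madj J * H * J) $$ (a,b)"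
            unfolding colJ'1[OF a'] colJ'1[OF True] by (rule adj_H_entry[OF J Hc J a' True, symmetric])
          thus ?thesis using JJ a' True by simp
        next
          case False hence be: "b = e" using b by simp
          have "ip (col J' a) (H *\<^sub>v col J' b) = cs * ip (col J a) (H *\<^sub>v u)"
            unfolding colJ'1[OF a'] be colJ'2 HJ using Hc uc J by (intro ip_smult_right, simp)
          thus ?thesis using JHu_i[OF a'] a' be by simp
        qed
      next
        case False hence ae: "a = e" using a by simp
        show ?thesis
        proof (cases "b < e")
          case True
          have "ip (col J' a) (H *\<^sub>v col J' b) = cnj cs * ip u (H *\<^sub>v col J b)"
            unfolding colJ'1[OF True] ae colJ'2 by (rule ip_smult_left)
          also have "ip u (H *\<^sub>v col J b) = cnj (ip (col J b) (H *\<^sub>v u))" by (rule herm_ip[OF Hc Hh uc colJc])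
          finally show ?thesis using JHu_i[OF True] True ae by simp
        next
          case False hence be: "b = e" using b by simp
          have "ip (col J' a) (H *\<^sub>v col J' b) = cnj cs * (cs * c)"
            unfolding ae be colJ'2 HJ c_def ip_smult_left using Hc uc by (subst ip_smult_right, auto)
          also have "\<dots> = complex_of_real (s * s * Re c)" unfolding cs_def by (subst creal, simp)
          finally show ?thesis using ss ae be by simp
        qed
      qed
      finally show "(madj J' * H * J') $$ (a,b) = (1\<^sub>m (Suc e) :: complex mat) $$ (a,b)" .
    qed (insert J'c Hc, auto)
    moreover have "J' *\<^sub>v a \<in> W" if a: "a \<in> carrier_vec (Suc e)" for a
    proof -
      define a' where "a' = vec e (\<lambda>j. a $ j)"
      have a'c: "a' \<in> carrier_vec e" unfolding a'_def by simp
      have "J' *\<^sub>v a = J *\<^sub>v a' + (cs * a $ e) \<cdot>\<^sub>v u"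
      proof (rule eq_vecI)
        fix i assume "i < dim_vec (J *\<^sub>v a' + (cs * a $ e) \<cdot>\<^sub>v u)"
        hence i: "i < n" using J uc by simp
        have "(J' *\<^sub>v a) $ i = (\<Sum>k<Suc e. J' $$ (i,k) * a $ k)" by (rule mv_entry[OF J'c a i])
        also have "\<dots> = (\<Sum>k<e. J $$ (i,k) * a' $ k) + cs * u $ i * a $ e"
          unfolding J'_def a'_def using i by (simp add: lessThan_Suc_atMost[symmetric])
        also have "\<dots> = (J *\<^sub>v a' + (cs * a $ e) \<cdot>\<^sub>v u) $ i"
          using mv_entry[OF J a'c i] i J uc by simp
        finally show "(J' *\<^sub>v a) $ i = (J *\<^sub>v a' + (cs * a $ e) \<cdot>\<^sub>v u) $ i" .
      qed (insert J J'c uc, auto)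
      also have "\<dots> \<in> W" using JW a'c uW by (intro sub_add[OF W] sub_smult[OF W], auto)
      finally show ?thesis .
    qed
    ultimately have "Suc e \<in> S" unfolding S_def using J'c by blast
    hence "Suc e \<le> e" unfolding e_def using Max_ge[OF finS] by blast
    thus False by simp
  qed
  show ?thesis using J JJ JW span by blast
qed


definition msum :: "'b set \<Rightarrow> ('b \<Rightarrow> complex mat) \<Rightarrow> nat \<Rightarrow> nat \<Rightarrow> complex mat" where
  "msum S F n m = mat n m (\<lambda>(i,j). \<Sum>x\<in>S. F x $$ (i,j))"

lemma msum_carrier[simp]: "msum S F n m \<in> carrier_mat n m"
  unfolding msum_def by simp

lemma msum_dims[simp]: "dim_row (msum S F n m) = n" "dim_col (msum S F n m) = m"
  unfolding msum_def by simp_all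

lemma msum_index: "i < n \<Longrightarrow> j < m \<Longrightarrow> msum S F n m $$ (i,j) = (\<Sum>x\<in>S. F x $$ (i,j))"
  unfolding msum_def by simp

lemma msum_cong: "(\<And>x. x \<in> S \<Longrightarrow> F x = F' x) \<Longrightarrow> msum S F n m = msum S F' n m"
  unfolding msum_def by (intro eq_matI, auto)

lemma msum_mult_left:
  assumes X: "X \<in> carrier_mat k n" and F: "\<And>x. x \<in> S \<Longrightarrow> F x \<in> carrier_mat n m"
  shows "X * msum S F n m = msum S (\<lambda>x. X * F x) k m"
proof (rule eq_matI)
  fix i j assume "i < dim_row (msum S (\<lambda>x. X * F x) k m)" "j < dim_col (msum S (\<lambda>x. X * F x) k m)"
  hence i: "i < k" and j: "j < m" by auto
  have "(X * msum S F n m) $$ (i,j) = (\<Sum>l<n. X $$ (i,l) * (\<Sum>x\<in>S. F x $$ (l,j)))"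
    using mult_entry[OF X msum_carrier i j] j by (simp add: msum_index)
  also have "\<dots> = (\<Sum>x\<in>S. \<Sum>l<n. X $$ (i,l) * F x $$ (l,j))"
    by (simp add: sum_distrib_left, rule sum.swap)
  also have "\<dots> = (\<Sum>x\<in>S. (X * F x) $$ (i,j))"
    by (intro sum.cong refl, rule mult_entry[symmetric, OF X F i j])
  also have "\<dots> = msum S (\<lambda>x. X * F x) k m $$ (i,j)" using i j by (simp add: msum_index)
  finally show "(X * msum S F n m) $$ (i,j) = msum S (\<lambda>x. X * F x) k m $$ (i,j)" .
qed (insert X, auto)

lemma msum_mult_right:
  assumes F: "\<And>x. x \<in> S \<Longrightarrow> F x \<in> carrier_mat n m" and Y: "Y \<in> carrier_mat m p"
  shows "msum S F n m * Y = msum S (\<lambda>x. F x * Y) n p"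
proof (rule eq_matI)
  fix i j assume "i < dim_row (msum S (\<lambda>x. F x * Y) n p)" "j < dim_col (msum S (\<lambda>x. F x * Y) n p)"
  hence i: "i < n" and j: "j < p" by auto
  have "(msum S F n m * Y) $$ (i,j) = (\<Sum>l<m. (\<Sum>x\<in>S. F x $$ (i,l)) * Y $$ (l,j))"
    using mult_entry[OF msum_carrier Y i j] i by (simp add: msum_index)
  also have "\<dots> = (\<Sum>x\<in>S. \<Sum>l<m. F x $$ (i,l) * Y $$ (l,j))"
    by (simp add: sum_distrib_right, rule sum.swap)
  also have "\<dots> = (\<Sum>x\<in>S. (F x * Y) $$ (i,j))"
    by (intro sum.cong refl, rule mult_entry[symmetric, OF F Y i j])
  also have "\<dots> = msum S (\<lambda>x. F x * Y) n p $$ (i,j)" using i j by (simp add: msum_index)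
  finally show "(msum S F n m * Y) $$ (i,j) = msum S (\<lambda>x. F x * Y) n p $$ (i,j)" .
qed (insert Y, auto)

lemma mtrace_msum: assumes F: "\<And>x. x \<in> S \<Longrightarrow> F x \<in> carrier_mat n n"
  shows "mtrace (msum S F n n) = (\<Sum>x\<in>S. mtrace (F x))"
proof -
  have "mtrace (msum S F n n) = (\<Sum>i<n. \<Sum>x\<in>S. F x $$ (i,i))"
    unfolding mtrace_def by (simp add: msum_index)
  also have "\<dots> = (\<Sum>x\<in>S. \<Sum>i<n. F x $$ (i,i))" by (rule sum.swap)
  also have "\<dots> = (\<Sum>x\<in>S. mtrace (F x))" unfolding mtrace_def using F by (intro sum.cong refl, auto)
  finally show ?thesis .
qed

lemma msum_mv: assumes F: "\<And>x. x \<in> S \<Longrightarrow> F x \<in> carrier_mat n m" and v: "v \<in> carrier_vec m" and i: "i < n"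
  shows "(msum S F n m *\<^sub>v v) $ i = (\<Sum>x\<in>S. (F x *\<^sub>v v) $ i)"
proof -
  have "(msum S F n m *\<^sub>v v) $ i = (\<Sum>k<m. (\<Sum>x\<in>S. F x $$ (i,k)) * v $ k)"
    using mv_entry[OF msum_carrier v i] i by (simp add: msum_index)
  also have "\<dots> = (\<Sum>x\<in>S. \<Sum>k<m. F x $$ (i,k) * v $ k)"
    by (simp add: sum_distrib_right, rule sum.swap)
  also have "\<dots> = (\<Sum>x\<in>S. (F x *\<^sub>v v) $ i)"
    by (intro sum.cong refl, rule mv_entry[symmetric, OF F v i])
  finally show ?thesis .
qed

lemma ip_msum: assumes F: "\<And>x. x \<in> S \<Longrightarrow> F x \<in> carrier_mat n m" and v: "v \<in> carrier_vec m" and y: "y \<in> carrier_vec n"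
  shows "ip y (msum S F n m *\<^sub>v v) = (\<Sum>x\<in>S. ip y (F x *\<^sub>v v))"
proof -
  have e: "cnj (y $ i) * (msum S F n m *\<^sub>v v) $ i = cnj (y $ i) * (\<Sum>x\<in>S. (F x *\<^sub>v v) $ i)"
    if i: "i \<in> {..<n}" for i
    by (subst msum_mv[OF F v], insert i, auto)
  have dy: "dim_vec y = n" using y by simp
  have "ip y (msum S F n m *\<^sub>v v) = (\<Sum>i<n. cnj (y $ i) * (\<Sum>x\<in>S. (F x *\<^sub>v v) $ i))"
    unfolding ip_def dy by (rule sum.cong[OF refl e])
  also have "\<dots> = (\<Sum>x\<in>S. \<Sum>i<n. cnj (y $ i) * (F x *\<^sub>v v) $ i)"
    by (simp add: sum_distrib_left, rule sum.swap)
  also have "\<dots> = (\<Sum>x\<in>S. ip y (F x *\<^sub>v v))" unfolding ip_def using y by simp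
  finally show ?thesis .
qed

lemma sq_mult[simp]: "A \<in> carrier_mat n n \<Longrightarrow> B \<in> carrier_mat n n \<Longrightarrow> A * B \<in> carrier_mat n n"
  by (rule mult_carrier_mat)

lemma madj_sq[simp]: "A \<in> carrier_mat n n \<Longrightarrow> madj A \<in> carrier_mat n n"
  by simp

lemma madj_msum: assumes F: "\<And>x. x \<in> S \<Longrightarrow> F x \<in> carrier_mat n m"
  shows "madj (msum S F n m) = msum S (\<lambda>x. madj (F x)) m n"
proof (rule eq_matI)
  fix i j assume "i < dim_row (msum S (\<lambda>x. madj (F x)) m n)" "j < dim_col (msum S (\<lambda>x. madj (F x)) m n)"
  hence i: "i < m" and j: "j < n" by auto
  have "madj (F x) $$ (i,j) = cnj (F x $$ (j,i))" if x: "x \<in> S" for x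
    using F[OF x] i j by simp
  thus "madj (msum S F n m) $$ (i,j) = msum S (\<lambda>x. madj (F x)) m n $$ (i,j)"
    using i j by (simp add: msum_index)
qed auto

lemma mult_E_entry:
  fixes A B :: "complex mat"
  assumes A: "A \<in> carrier_mat d d" and B: "B \<in> carrier_mat d d" and a: "a < d" and b: "b < d" and r: "r < d" and s: "s < d"
  shows "(A * mat d d (\<lambda>(i,j). if i = a \<and> j = b then 1 else 0) * B) $$ (r,s) = A $$ (r,a) * B $$ (b,s)"
proof -
  let ?E = "mat d d (\<lambda>(i,j). if i = a \<and> j = b then (1::complex) else 0)"
  have E: "?E \<in> carrier_mat d d" by simp
  have AE: "(A * ?E) $$ (r,k) = (if k = b then A $$ (r,a) else 0)" if k: "k < d" for k
  proof -
    have "(A * ?E) $$ (r,k) = (\<Sum>l<d. A $$ (r,l) * ?E $$ (l,k))" by (rule mult_entry[OF A E r k])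
    also have "\<dots> = (\<Sum>l<d. if l = a then (if k = b then A $$ (r,a) else 0) else 0)"
      using k by (intro sum.cong refl, auto)
    also have "\<dots> = (if k = b then A $$ (r,a) else 0)" using a by simp
    finally show ?thesis .
  qed
  have "(A * ?E * B) $$ (r,s) = (\<Sum>k<d. (A * ?E) $$ (r,k) * B $$ (k,s))"
    by (rule mult_entry[OF mult_carrier_mat[OF A E] B r s])
  also have "\<dots> = (\<Sum>k<d. if k = b then A $$ (r,a) * B $$ (k,s) else 0)"
    by (intro sum.cong refl, auto simp: AE)
  also have "\<dots> = A $$ (r,a) * B $$ (b,s)" using b by simp
  finally show ?thesis .
qed

section \<open>Representations of the finite group\<close>

locale rep_ctx =
  fixes q :: nat and G :: "complex mat set" and d :: nat and \<rho> :: "complex mat \<Rightarrow> complex mat"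
  assumes fsu: "finite_subgroup_unitary q G" and irr: "irreducible_rep G d \<rho>"
begin

lemma finG: "finite G" using fsu unfolding finite_subgroup_unitary_def by simp
lemma G_unitary: "g \<in> G \<Longrightarrow> g \<in> unitary_group q" using fsu unfolding finite_subgroup_unitary_def by auto
lemma one_G: "1\<^sub>m q \<in> G" using fsu unfolding finite_subgroup_unitary_def by simp
lemma mult_G: "g \<in> G \<Longrightarrow> h \<in> G \<Longrightarrow> g * h \<in> G" using fsu unfolding finite_subgroup_unitary_def by simp
lemma adj_G: "g \<in> G \<Longrightarrow> madj g \<in> G" using fsu unfolding finite_subgroup_unitary_def by simp
lemma G_carrier: "g \<in> G \<Longrightarrow> g \<in> carrier_mat q q" using G_unitary unitary_carrier by blast
lemma G_left: "g \<in> G \<Longrightarrow> madj g * g = 1\<^sub>m q" using G_unitary unitary_left by blast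
lemma G_right: "g \<in> G \<Longrightarrow> g * madj g = 1\<^sub>m q" using G_unitary unitary_right by blast
lemma cardG: "card G > 0" using finG one_G card_gt_0_iff by blast
lemma d_pos: "d \<ge> 1" using irr unfolding irreducible_rep_def by simp

lemma rho_carrier: "g \<in> G \<Longrightarrow> \<rho> g \<in> carrier_mat d d"
  using irr unfolding irreducible_rep_def is_rep_def by simp
lemma rho_mult: "g \<in> G \<Longrightarrow> h \<in> G \<Longrightarrow> \<rho> (g * h) = \<rho> g * \<rho> h"
  using irr unfolding irreducible_rep_def is_rep_def by simp
lemma rho_invertible: "g \<in> G \<Longrightarrow> \<exists>B\<in>carrier_mat d d. \<rho> g * B = 1\<^sub>m d"
  using irr unfolding irreducible_rep_def is_rep_def by simp
lemma rho_irr: "is_subspace d W \<Longrightarrow> (\<forall>g\<in>G. \<forall>v\<in>W. \<rho> g *\<^sub>v v \<in> W) \<Longrightarrow> W = {0\<^sub>v d} \<or> W = carrier_vec d"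
  using irr unfolding irreducible_rep_def by simp

lemma rho_one: "\<rho> (1\<^sub>m q) = 1\<^sub>m d"
proof -
  let ?R = "\<rho> (1\<^sub>m q)"
  have R: "?R \<in> carrier_mat d d" by (rule rho_carrier[OF one_G])
  obtain B where B: "B \<in> carrier_mat d d" and RB: "?R * B = 1\<^sub>m d" using rho_invertible[OF one_G] by auto
  have RR: "?R * ?R = ?R" using rho_mult[OF one_G one_G] by simp
  have "?R = ?R * (?R * B)" using RB R by simp
  also have "\<dots> = (?R * ?R) * B" using assoc_mult_mat[OF R R B] by simp
  also have "\<dots> = 1\<^sub>m d" using RR RB by simp
  finally show ?thesis .
qed

lemma rho_inv_left: "g \<in> G \<Longrightarrow> \<rho> (madj g) * \<rho> g = 1\<^sub>m d"
  using rho_mult[OF adj_G, of g g] G_left rho_one by simp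

lemma rho_inv_right: "g \<in> G \<Longrightarrow> \<rho> g * \<rho> (madj g) = 1\<^sub>m d"
  using rho_mult[OF _ adj_G, of g g] G_right rho_one by simp

lemma sum_left: assumes h: "h \<in> G" shows "(\<Sum>g\<in>G. f (h * g)) = (\<Sum>g\<in>G. f g)"
proof (rule sum.reindex_bij_witness[where i = "\<lambda>g. madj h * g" and j = "\<lambda>g. h * g"])
  fix g assume g: "g \<in> G"
  show "madj h * (h * g) = g"
    using assoc_mult_mat[OF madj_carrier[OF G_carrier[OF h]] G_carrier[OF h] G_carrier[OF g]] G_left[OF h] G_carrier[OF g] by simp
  show "h * g \<in> G" by (rule mult_G[OF h g])
  show "h * (madj h * g) = g"
    using assoc_mult_mat[OF G_carrier[OF h] madj_carrier[OF G_carrier[OF h]] G_carrier[OF g]] G_right[OF h] G_carrier[OF g] by simp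
  show "madj h * g \<in> G" by (rule mult_G[OF adj_G[OF h] g])
qed simp

lemma sum_right: assumes h: "h \<in> G" shows "(\<Sum>g\<in>G. f (g * h)) = (\<Sum>g\<in>G. f g)"
proof (rule sum.reindex_bij_witness[where i = "\<lambda>g. g * madj h" and j = "\<lambda>g. g * h"])
  fix g assume g: "g \<in> G"
  show "g * h * madj h = g"
    using assoc_mult_mat[OF G_carrier[OF g] G_carrier[OF h] madj_carrier[OF G_carrier[OF h]]] G_right[OF h] G_carrier[OF g] by simp
  show "g * h \<in> G" by (rule mult_G[OF g h])
  show "g * madj h * h = g"
    using assoc_mult_mat[OF G_carrier[OF g] madj_carrier[OF G_carrier[OF h]] G_carrier[OF h]] G_left[OF h] G_carrier[OF g] by simp
  show "g * madj h \<in> G" by (rule mult_G[OF g adj_G[OF h]])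
qed simp

lemma schur:
  assumes T: "T \<in> carrier_mat d d" and comm: "\<And>g. g \<in> G \<Longrightarrow> \<rho> g * T = T * \<rho> g"
  shows "\<exists>\<mu>. \<forall>v\<in>carrier_vec d. T *\<^sub>v v = \<mu> \<cdot>\<^sub>v v"
proof -
  have "spectrum T \<noteq> {}" using spectrum_non_empty[OF T] d_pos by simp
  then obtain \<mu> where "\<mu> \<in> spectrum T" by auto
  then obtain v where v: "v \<in> carrier_vec d" and v0: "v \<noteq> 0\<^sub>v d" and Tv: "T *\<^sub>v v = \<mu> \<cdot>\<^sub>v v"
    unfolding spectrum_def eigenvalue_def eigenvector_def using T by auto
  define E where "E = {v \<in> carrier_vec d. T *\<^sub>v v = \<mu> \<cdot>\<^sub>v v}"
  have sub: "is_subspace d E" unfolding is_subspace_def E_def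
  proof (intro conjI ballI allI)
    show "0\<^sub>v d \<in> {v \<in> carrier_vec d. T *\<^sub>v v = \<mu> \<cdot>\<^sub>v v}" using T by (auto intro!: eq_vecI simp: scalar_prod_def)
    fix x y assume x: "x \<in> {v \<in> carrier_vec d. T *\<^sub>v v = \<mu> \<cdot>\<^sub>v v}" and y: "y \<in> {v \<in> carrier_vec d. T *\<^sub>v v = \<mu> \<cdot>\<^sub>v v}"
    have "T *\<^sub>v (x + y) = T *\<^sub>v x + T *\<^sub>v y" using x y by (intro mult_add_distrib_mat_vec[OF T], auto)
    also have "\<dots> = \<mu> \<cdot>\<^sub>v (x + y)" using x y by (auto simp: smult_add_distrib_vec)
    finally show "x + y \<in> {v \<in> carrier_vec d. T *\<^sub>v v = \<mu> \<cdot>\<^sub>v v}" using x y by auto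
  next
    fix c :: complex and x assume x: "x \<in> {v \<in> carrier_vec d. T *\<^sub>v v = \<mu> \<cdot>\<^sub>v v}"
    have "T *\<^sub>v (c \<cdot>\<^sub>v x) = c \<cdot>\<^sub>v (T *\<^sub>v x)" using x by (intro mult_mat_vec[OF T], auto)
    also have "\<dots> = \<mu> \<cdot>\<^sub>v (c \<cdot>\<^sub>v x)" using x by (auto intro!: eq_vecI)
    finally show "c \<cdot>\<^sub>v x \<in> {v \<in> carrier_vec d. T *\<^sub>v v = \<mu> \<cdot>\<^sub>v v}" using x by auto
  qed auto
  have inv: "\<forall>g\<in>G. \<forall>x\<in>E. \<rho> g *\<^sub>v x \<in> E"
  proof (intro ballI)
    fix g x assume g: "g \<in> G" and x: "x \<in> E"
    have xc: "x \<in> carrier_vec d" and Tx: "T *\<^sub>v x = \<mu> \<cdot>\<^sub>v x" using x unfolding E_def by auto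
    have R: "\<rho> g \<in> carrier_mat d d" by (rule rho_carrier[OF g])
    have "T *\<^sub>v (\<rho> g *\<^sub>v x) = (T * \<rho> g) *\<^sub>v x" using assoc_mult_mat_vec[OF T R xc] by simp
    also have "\<dots> = (\<rho> g * T) *\<^sub>v x" using comm[OF g] by simp
    also have "\<dots> = \<rho> g *\<^sub>v (\<mu> \<cdot>\<^sub>v x)" using assoc_mult_mat_vec[OF R T xc] Tx by simp
    also have "\<dots> = \<mu> \<cdot>\<^sub>v (\<rho> g *\<^sub>v x)" by (rule mult_mat_vec[OF R xc])
    finally show "\<rho> g *\<^sub>v x \<in> E" unfolding E_def using R xc by simp
  qed
  have "E \<noteq> {0\<^sub>v d}" using v v0 Tv unfolding E_def by auto
  hence "E = carrier_vec d" using rho_irr[OF sub inv] by auto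
  thus ?thesis unfolding E_def by auto
qed

lemma schur_mat:
  assumes T: "T \<in> carrier_mat d d" and comm: "\<And>g. g \<in> G \<Longrightarrow> \<rho> g * T = T * \<rho> g"
  shows "\<exists>\<mu>. T = \<mu> \<cdot>\<^sub>m 1\<^sub>m d"
proof -
  obtain \<mu> where mu: "\<forall>v\<in>carrier_vec d. T *\<^sub>v v = \<mu> \<cdot>\<^sub>v v" using schur[OF T comm] by auto
  have "T = \<mu> \<cdot>\<^sub>m 1\<^sub>m d"
  proof (rule mat_eq_by_mv[OF T], simp)
    fix x :: "complex vec" assume x: "x \<in> carrier_vec d"
    have "(\<mu> \<cdot>\<^sub>m 1\<^sub>m d) *\<^sub>v x = \<mu> \<cdot>\<^sub>v x"
    proof (rule eq_vecI)
      fix i assume "i < dim_vec (\<mu> \<cdot>\<^sub>v x)" hence i: "i < d" using x by simp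
      have "((\<mu> \<cdot>\<^sub>m 1\<^sub>m d) *\<^sub>v x) $ i = (\<Sum>k<d. (\<mu> \<cdot>\<^sub>m 1\<^sub>m d) $$ (i,k) * x $ k)"
        by (rule mv_entry[OF _ x i], simp)
      also have "\<dots> = (\<Sum>k<d. if k = i then \<mu> * x $ k else 0)" using i by (intro sum.cong refl, auto)
      also have "\<dots> = \<mu> * x $ i" using i by simp
      finally show "((\<mu> \<cdot>\<^sub>m 1\<^sub>m d) *\<^sub>v x) $ i = (\<mu> \<cdot>\<^sub>v x) $ i" using i x by simp
    qed (insert x, simp)
    thus "T *\<^sub>v x = (\<mu> \<cdot>\<^sub>m 1\<^sub>m d) *\<^sub>v x" using mu x by simp
  qed
  thus ?thesis by auto
qed

definition Tx :: "complex mat \<Rightarrow> complex mat" where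
  "Tx X = msum G (\<lambda>g. \<rho> g * X * \<rho> (madj g)) d d"

lemma Tx_comm: assumes X: "X \<in> carrier_mat d d" and h: "h \<in> G" shows "\<rho> h * Tx X = Tx X * \<rho> h"
proof -
  have R: "\<And>g. g \<in> G \<Longrightarrow> \<rho> g \<in> carrier_mat d d" by (rule rho_carrier)
  have Rh: "\<rho> h \<in> carrier_mat d d" by (rule R[OF h])
  have "\<rho> h * Tx X = msum G (\<lambda>g. \<rho> h * (\<rho> g * X * \<rho> (madj g))) d d"
    unfolding Tx_def by (rule msum_mult_left[OF Rh], insert X R adj_G, auto)
  also have "\<dots> = msum G (\<lambda>g. \<rho> (h * g) * X * \<rho> (madj g)) d d"
  proof (rule msum_cong)
    fix g assume g: "g \<in> G"
    have Rg: "\<rho> g \<in> carrier_mat d d" and Rg': "\<rho> (madj g) \<in> carrier_mat d d" using R g adj_G by auto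
    show "\<rho> h * (\<rho> g * X * \<rho> (madj g)) = \<rho> (h * g) * X * \<rho> (madj g)"
      using rho_mult[OF h g] Rh Rg Rg' X by (simp add: assoc_mult_mat[of _ d d _ d _ d])
  qed
  also have "\<dots> = msum G (\<lambda>g. \<rho> g * X * \<rho> (madj g * h)) d d"
    unfolding msum_def
  proof (intro eq_matI, simp_all)
    fix i j assume i: "i < d" and j: "j < d"
    have "(\<Sum>g\<in>G. (\<rho> (h * g) * X * \<rho> (madj g)) $$ (i, j)) = (\<Sum>g\<in>G. (\<rho> (h * (madj h * g)) * X * \<rho> (madj (madj h * g))) $$ (i, j))"
      by (rule sum_left[OF adj_G[OF h], symmetric])
    also have "\<dots> = (\<Sum>g\<in>G. (\<rho> g * X * \<rho> (madj g * h)) $$ (i, j))"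
    proof (intro sum.cong refl)
      fix g assume g: "g \<in> G"
      have hc: "h \<in> carrier_mat q q" and gc: "g \<in> carrier_mat q q" using G_carrier h g by auto
      have "h * (madj h * g) = g"
        using assoc_mult_mat[OF hc madj_carrier[OF hc] gc] G_right[OF h] gc by simp
      moreover have "madj (madj h * g) = madj g * h" using madj_mult[OF madj_carrier[OF hc] gc] by simp
      ultimately show "(\<rho> (h * (madj h * g)) * X * \<rho> (madj (madj h * g))) $$ (i, j) = (\<rho> g * X * \<rho> (madj g * h)) $$ (i, j)"
        by simp
    qed
    finally show "(\<Sum>g\<in>G. (\<rho> (h * g) * X * \<rho> (madj g)) $$ (i, j)) = (\<Sum>g\<in>G. (\<rho> g * X * \<rho> (madj g * h)) $$ (i, j))" .
  qed
  also have "\<dots> = msum G (\<lambda>g. \<rho> g * X * \<rho> (madj g) * \<rho> h) d d"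
  proof (rule msum_cong)
    fix g assume g: "g \<in> G"
    have Rg: "\<rho> g \<in> carrier_mat d d" and Rg': "\<rho> (madj g) \<in> carrier_mat d d" using R g adj_G by auto
    show "\<rho> g * X * \<rho> (madj g * h) = \<rho> g * X * \<rho> (madj g) * \<rho> h"
      using rho_mult[OF adj_G[OF g] h] Rh Rg Rg' X by (simp add: assoc_mult_mat[of _ d d _ d _ d])
  qed
  also have "\<dots> = Tx X * \<rho> h"
    unfolding Tx_def by (rule msum_mult_right[symmetric, OF _ Rh], insert X R adj_G, auto)
  finally show ?thesis .
qed

lemma Tx_trace: assumes X: "X \<in> carrier_mat d d" shows "mtrace (Tx X) = of_nat (card G) * mtrace X"
proof -
  have R: "\<And>g. g \<in> G \<Longrightarrow> \<rho> g \<in> carrier_mat d d" by (rule rho_carrier)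
  have "mtrace (Tx X) = (\<Sum>g\<in>G. mtrace (\<rho> g * X * \<rho> (madj g)))"
    unfolding Tx_def by (rule mtrace_msum, insert R X adj_G, auto)
  also have "\<dots> = (\<Sum>g\<in>G. mtrace X)"
  proof (intro sum.cong refl)
    fix g assume g: "g \<in> G"
    have Rg: "\<rho> g \<in> carrier_mat d d" and Rg': "\<rho> (madj g) \<in> carrier_mat d d" using R g adj_G by auto
    have "mtrace (\<rho> g * X * \<rho> (madj g)) = mtrace (\<rho> (madj g) * (\<rho> g * X))"
      by (rule mtrace_comm, insert Rg Rg' X, auto)
    also have "\<rho> (madj g) * (\<rho> g * X) = (\<rho> (madj g) * \<rho> g) * X" using assoc_mult_mat[OF Rg' Rg X] by simp
    also have "\<dots> = X" using rho_inv_left[OF g] X by simp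
    finally show "mtrace (\<rho> g * X * \<rho> (madj g)) = mtrace X" .
  qed
  finally show ?thesis by simp
qed

lemma orth_entry: assumes a: "a < d" and b: "b < d"
  shows "(\<Sum>g\<in>G. \<rho> g $$ (a,a) * \<rho> (madj g) $$ (b,b)) = (if a = b then of_nat (card G) / of_nat d else 0)"
proof -
  define X where "X = mat d d (\<lambda>(i,j). if i = a \<and> j = b then (1::complex) else 0)"
  have X: "X \<in> carrier_mat d d" unfolding X_def by simp
  have R: "\<And>g. g \<in> G \<Longrightarrow> \<rho> g \<in> carrier_mat d d" by (rule rho_carrier)
  obtain \<mu> where mu: "Tx X = \<mu> \<cdot>\<^sub>m 1\<^sub>m d"
    using schur_mat[OF _ Tx_comm[OF X]] unfolding Tx_def by auto
  have "mtrace (Tx X) = \<mu> * of_nat d" unfolding mu mtrace_def by simp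
  moreover have "mtrace X = (if a = b then 1 else 0)" unfolding X_def mtrace_def using a b by (auto simp: if_distrib cong: if_cong)
  ultimately have mu_val: "\<mu> * of_nat d = of_nat (card G) * (if a = b then 1 else 0)" using Tx_trace[OF X] by simp
  have "(\<Sum>g\<in>G. \<rho> g $$ (a,a) * \<rho> (madj g) $$ (b,b)) = (\<Sum>g\<in>G. (\<rho> g * X * \<rho> (madj g)) $$ (a,b))"
    unfolding X_def by (intro sum.cong refl, rule mult_E_entry[symmetric], insert R adj_G a b, auto)
  also have "\<dots> = Tx X $$ (a,b)" unfolding Tx_def using a b by (simp add: msum_index)
  also have "\<dots> = (if a = b then \<mu> else 0)" unfolding mu using a b by simp
  also have "\<dots> = (if a = b then of_nat (card G) / of_nat d else 0)"
    using mu_val d_pos by (auto simp: field_simps)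
  finally show ?thesis .
qed

lemma char_orth: "(\<Sum>g\<in>G. mtrace (\<rho> g) * mtrace (\<rho> (madj g))) = of_nat (card G)"
proof -
  have R: "\<And>g. g \<in> G \<Longrightarrow> \<rho> g \<in> carrier_mat d d" by (rule rho_carrier)
  have tr: "mtrace (\<rho> g) = (\<Sum>a<d. \<rho> g $$ (a,a))" if g: "g \<in> G" for g
    unfolding mtrace_def using R[OF g] by simp
  have "(\<Sum>g\<in>G. mtrace (\<rho> g) * mtrace (\<rho> (madj g))) = (\<Sum>g\<in>G. \<Sum>a<d. \<Sum>b<d. \<rho> g $$ (a,a) * \<rho> (madj g) $$ (b,b))"
    by (intro sum.cong refl, simp add: tr adj_G sum_product)
  also have "\<dots> = (\<Sum>a<d. \<Sum>b<d. \<Sum>g\<in>G. \<rho> g $$ (a,a) * \<rho> (madj g) $$ (b,b))"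
    by (subst sum.swap, subst (2) sum.swap, rule refl)
  also have "\<dots> = (\<Sum>a<d. \<Sum>b<d. if a = b then of_nat (card G) / of_nat d else 0)"
    by (intro sum.cong refl, rule orth_entry, auto)
  also have "\<dots> = (\<Sum>a<d. of_nat (card G) / of_nat d)" by simp
  also have "\<dots> = of_nat (card G)" using d_pos by simp
  finally show ?thesis .
qed

end


context rep_ctx
begin

definition Hm :: "complex mat" where "Hm = msum G (\<lambda>g. madj (\<rho> g) * \<rho> g) d d"

lemma Hm_carrier: "Hm \<in> carrier_mat d d" unfolding Hm_def by simp

lemma Hm_herm: "madj Hm = Hm"
proof -
  have R: "\<And>g. g \<in> G \<Longrightarrow> \<rho> g \<in> carrier_mat d d" by (rule rho_carrier)
  have "madj Hm = msum G (\<lambda>g. madj (madj (\<rho> g) * \<rho> g)) d d"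
    unfolding Hm_def by (rule madj_msum, insert R, auto)
  also have "\<dots> = Hm" unfolding Hm_def
  proof (rule msum_cong)
    fix g assume g: "g \<in> G"
    show "madj (madj (\<rho> g) * \<rho> g) = madj (\<rho> g) * \<rho> g"
      using madj_mult[OF madj_carrier[OF R[OF g]] R[OF g]] by simp
  qed
  finally show ?thesis .
qed

lemma Hm_pos: assumes x: "x \<in> carrier_vec d" and x0: "x \<noteq> 0\<^sub>v d" shows "Re (ip x (Hm *\<^sub>v x)) > 0"
proof -
  have R: "\<And>g. g \<in> G \<Longrightarrow> \<rho> g \<in> carrier_mat d d" by (rule rho_carrier)
  have "ip x (Hm *\<^sub>v x) = (\<Sum>g\<in>G. ip x ((madj (\<rho> g) * \<rho> g) *\<^sub>v x))"
    unfolding Hm_def by (rule ip_msum[OF _ x x], insert R, auto)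
  also have "\<dots> = (\<Sum>g\<in>G. ip (\<rho> g *\<^sub>v x) (\<rho> g *\<^sub>v x))"
  proof (intro sum.cong refl)
    fix g assume g: "g \<in> G"
    have "ip x ((madj (\<rho> g) * \<rho> g) *\<^sub>v x) = ip x (madj (\<rho> g) *\<^sub>v (\<rho> g *\<^sub>v x))"
      using assoc_mult_mat_vec[OF madj_carrier[OF R[OF g]] R[OF g] x] by simp
    also have "\<dots> = ip (\<rho> g *\<^sub>v x) (\<rho> g *\<^sub>v x)"
      using ip_mv[OF madj_carrier[OF R[OF g]] x, of "\<rho> g *\<^sub>v x"] R[OF g] x by simp
    finally show "ip x ((madj (\<rho> g) * \<rho> g) *\<^sub>v x) = ip (\<rho> g *\<^sub>v x) (\<rho> g *\<^sub>v x)" .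
  qed
  finally have e: "Re (ip x (Hm *\<^sub>v x)) = (\<Sum>g\<in>G. Re (ip (\<rho> g *\<^sub>v x) (\<rho> g *\<^sub>v x)))" by simp
  have "Re (ip (\<rho> (1\<^sub>m q) *\<^sub>v x) (\<rho> (1\<^sub>m q) *\<^sub>v x)) \<le> (\<Sum>g\<in>G. Re (ip (\<rho> g *\<^sub>v x) (\<rho> g *\<^sub>v x)))"
    by (rule member_le_sum[OF one_G], insert ip_self_real finG, auto)
  moreover have "Re (ip (\<rho> (1\<^sub>m q) *\<^sub>v x) (\<rho> (1\<^sub>m q) *\<^sub>v x)) > 0"
    using hpd_one[of d] x x0 unfolding hpd_def rho_one by auto
  ultimately show ?thesis using e by simp
qed

lemma Hm_hpd: "hpd Hm d" unfolding hpd_def using Hm_carrier Hm_herm Hm_pos by auto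

lemma Hm_inv: assumes h: "h \<in> G" shows "madj (\<rho> h) * Hm * \<rho> h = Hm"
proof -
  have R: "\<And>g. g \<in> G \<Longrightarrow> \<rho> g \<in> carrier_mat d d" by (rule rho_carrier)
  have Rh: "\<rho> h \<in> carrier_mat d d" by (rule R[OF h])
  have "madj (\<rho> h) * Hm = msum G (\<lambda>g. madj (\<rho> h) * (madj (\<rho> g) * \<rho> g)) d d"
    unfolding Hm_def by (rule msum_mult_left, insert R Rh, auto)
  also have "\<dots> * \<rho> h = msum G (\<lambda>g. madj (\<rho> h) * (madj (\<rho> g) * \<rho> g) * \<rho> h) d d"
    by (rule msum_mult_right[OF _ Rh], insert R Rh, auto)
  also have "\<dots> = msum G (\<lambda>g. madj (\<rho> (g * h)) * \<rho> (g * h)) d d"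
  proof (rule msum_cong)
    fix g assume g: "g \<in> G"
    have Rg: "\<rho> g \<in> carrier_mat d d" by (rule R[OF g])
    show "madj (\<rho> h) * (madj (\<rho> g) * \<rho> g) * \<rho> h = madj (\<rho> (g * h)) * \<rho> (g * h)"
      using Rg Rh rho_mult[OF g h] madj_mult[OF Rg Rh] by (simp add: assoc_mult_mat[of _ d d _ d _ d])
  qed
  also have "\<dots> = Hm" unfolding Hm_def msum_def
    by (intro eq_matI, simp_all, rule sum_right[OF h, of "\<lambda>g. (madj (\<rho> g) * \<rho> g) $$ _"])
  finally show ?thesis .
qed

lemma unitarize_ex: "\<exists>p. fst p \<in> carrier_mat d d \<and> snd p \<in> carrier_mat d d \<and> fst p * snd p = 1\<^sub>m d \<and> snd p * fst p = 1\<^sub>m d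
   \<and> (\<forall>g\<in>G. madj (fst p * \<rho> g * snd p) * (fst p * \<rho> g * snd p) = 1\<^sub>m d)"
proof -
  have sub: "is_subspace d (carrier_vec d)" unfolding is_subspace_def by auto
  obtain e J where J: "J \<in> carrier_mat d e" and JHJ: "madj J * Hm * J = 1\<^sub>m e"
    and span: "\<forall>w\<in>carrier_vec d. J *\<^sub>v (madj J *\<^sub>v (Hm *\<^sub>v w)) = w"
    using basis_exists[OF Hm_hpd sub] by auto
  define K where "K = madj J * Hm"
  have K: "K \<in> carrier_mat e d" unfolding K_def using J Hm_carrier by (intro mult_carrier_mat, auto)
  have KJ: "K * J = 1\<^sub>m e" unfolding K_def using JHJ .
  have JK: "J * K = 1\<^sub>m d"
  proof (rule mat_eq_by_mv[OF mult_carrier_mat[OF J K]], simp)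
    fix w :: "complex vec" assume w: "w \<in> carrier_vec d"
    have "(J * K) *\<^sub>v w = J *\<^sub>v (K *\<^sub>v w)" using assoc_mult_mat_vec[OF J K w] .
    also have "K *\<^sub>v w = madj J *\<^sub>v (Hm *\<^sub>v w)" unfolding K_def
      using assoc_mult_mat_vec[OF madj_carrier[OF J] Hm_carrier w] .
    finally show "(J * K) *\<^sub>v w = 1\<^sub>m d *\<^sub>v w" using span w by simp
  qed
  have ed: "e \<le> d" by (rule inv_bound[OF K J KJ])
  have de: "d \<le> e" by (rule inv_bound[OF J K JK])
  hence e: "e = d" using ed by simp
  have J': "J \<in> carrier_mat d d" and K': "K \<in> carrier_mat d d" using J K e by auto
  have KJ': "K * J = 1\<^sub>m d" using KJ e by simp
  have aK: "madj K = Hm * J" unfolding K_def using madj_mult[OF madj_carrier[OF J] Hm_carrier] Hm_herm by simp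
  have unit: "madj (K * \<rho> g * J) * (K * \<rho> g * J) = 1\<^sub>m d" if g: "g \<in> G" for g
  proof -
    have R: "\<rho> g \<in> carrier_mat d d" by (rule rho_carrier[OF g])
    have aR: "madj (\<rho> g) \<in> carrier_mat d d" using R by simp
    have H: "Hm \<in> carrier_mat d d" by (rule Hm_carrier)
    have aJ: "madj J \<in> carrier_mat d d" using J' by simp
    have "madj (K * \<rho> g * J) = madj J * (madj (\<rho> g) * madj K)"
      using madj_mult[OF mult_carrier_mat[OF K' R] J'] madj_mult[OF K' R] by simp
    also have "\<dots> = madj J * (madj (\<rho> g) * (Hm * J))" unfolding aK ..
    finally have "madj (K * \<rho> g * J) * (K * \<rho> g * J) = madj J * (madj (\<rho> g) * (Hm * J)) * (K * \<rho> g * J)" by simp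
    also have "\<dots> = madj J * (madj (\<rho> g) * (Hm * ((J * K) * (\<rho> g * J))))"
      using aJ aR H J' K' R by (simp add: assoc_mult_mat[of _ d d _ d _ d])
    also have "\<dots> = madj J * ((madj (\<rho> g) * Hm * \<rho> g) * J)"
      using aJ aR H J' K' R JK by (simp add: assoc_mult_mat[of _ d d _ d _ d])
    also have "\<dots> = madj J * Hm * J" using Hm_inv[OF g] aJ H J' by (simp add: assoc_mult_mat[of _ d d _ d _ d])
    also have "\<dots> = 1\<^sub>m d" using JHJ e by simp
    finally show ?thesis .
  qed
  show ?thesis by (rule exI[of _ "(K, J)"], insert K' J' KJ' JK unit, auto)
qed

definition UK :: "complex mat" where "UK = fst (SOME p. fst p \<in> carrier_mat d d \<and> snd p \<in> carrier_mat d d \<and> fst p * snd p = 1\<^sub>m d \<and> snd p * fst p = 1\<^sub>m d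
   \<and> (\<forall>g\<in>G. madj (fst p * \<rho> g * snd p) * (fst p * \<rho> g * snd p) = 1\<^sub>m d))"
definition UJ :: "complex mat" where "UJ = snd (SOME p. fst p \<in> carrier_mat d d \<and> snd p \<in> carrier_mat d d \<and> fst p * snd p = 1\<^sub>m d \<and> snd p * fst p = 1\<^sub>m d
   \<and> (\<forall>g\<in>G. madj (fst p * \<rho> g * snd p) * (fst p * \<rho> g * snd p) = 1\<^sub>m d))"

lemma UKJ: "UK \<in> carrier_mat d d" "UJ \<in> carrier_mat d d" "UK * UJ = 1\<^sub>m d" "UJ * UK = 1\<^sub>m d"
  "\<And>g. g \<in> G \<Longrightarrow> madj (UK * \<rho> g * UJ) * (UK * \<rho> g * UJ) = 1\<^sub>m d"
  using someI_ex[OF unitarize_ex] unfolding UK_def UJ_def by auto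

definition \<sigma> :: "complex mat \<Rightarrow> complex mat" where "\<sigma> g = UK * \<rho> g * UJ"

lemma sigma_carrier: "g \<in> G \<Longrightarrow> \<sigma> g \<in> carrier_mat d d"
  unfolding \<sigma>_def using UKJ rho_carrier by (intro mult_carrier_mat, auto)

lemma sigma_left: "g \<in> G \<Longrightarrow> madj (\<sigma> g) * \<sigma> g = 1\<^sub>m d"
  unfolding \<sigma>_def using UKJ by simp

lemma sigma_right: "g \<in> G \<Longrightarrow> \<sigma> g * madj (\<sigma> g) = 1\<^sub>m d"
  using mat_mult_left_right_inverse[OF madj_carrier[OF sigma_carrier] sigma_carrier sigma_left] by blast

lemma sigma_mult: assumes g: "g \<in> G" and h: "h \<in> G" shows "\<sigma> (g * h) = \<sigma> g * \<sigma> h"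
proof -
  have Rg: "\<rho> g \<in> carrier_mat d d" and Rh: "\<rho> h \<in> carrier_mat d d" using rho_carrier g h by auto
  have K: "UK \<in> carrier_mat d d" and J: "UJ \<in> carrier_mat d d" using UKJ by auto
  have "\<sigma> g * \<sigma> h = UK * (\<rho> g * ((UJ * UK) * (\<rho> h * UJ)))"
    unfolding \<sigma>_def using K J Rg Rh by (simp add: assoc_mult_mat[of _ d d _ d _ d])
  also have "\<dots> = UK * (\<rho> g * (\<rho> h * UJ))" using UKJ(4) Rh J by simp
  also have "\<dots> = \<sigma> (g * h)" unfolding \<sigma>_def rho_mult[OF g h] using K J Rg Rh by (simp add: assoc_mult_mat[of _ d d _ d _ d])
  finally show ?thesis by simp
qed

lemma sigma_one: "\<sigma> (1\<^sub>m q) = 1\<^sub>m d"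
  unfolding \<sigma>_def rho_one using UKJ by simp

lemma sigma_trace: assumes g: "g \<in> G" shows "mtrace (\<sigma> g) = mtrace (\<rho> g)"
proof -
  have Rg: "\<rho> g \<in> carrier_mat d d" using rho_carrier g by auto
  have K: "UK \<in> carrier_mat d d" and J: "UJ \<in> carrier_mat d d" using UKJ by auto
  have "mtrace (\<sigma> g) = mtrace (UJ * (UK * \<rho> g))" unfolding \<sigma>_def
    by (rule mtrace_comm[OF mult_carrier_mat[OF K Rg] J])
  also have "UJ * (UK * \<rho> g) = \<rho> g" using assoc_mult_mat[OF J K Rg] UKJ(4) Rg by simp
  finally show ?thesis .
qed

lemma sigma_adj: assumes g: "g \<in> G" shows "\<sigma> (madj g) = madj (\<sigma> g)"
proof -
  have S: "\<sigma> g \<in> carrier_mat d d" and S': "\<sigma> (madj g) \<in> carrier_mat d d" using sigma_carrier g adj_G by auto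
  have l: "\<sigma> (madj g) * \<sigma> g = 1\<^sub>m d" using sigma_mult[OF adj_G[OF g] g] G_left[OF g] sigma_one by simp
  have "\<sigma> (madj g) = \<sigma> (madj g) * (\<sigma> g * madj (\<sigma> g))" using sigma_right[OF g] S' by simp
  also have "\<dots> = (\<sigma> (madj g) * \<sigma> g) * madj (\<sigma> g)" using assoc_mult_mat[OF S' S madj_carrier[OF S]] by simp
  also have "\<dots> = madj (\<sigma> g)" using l S by simp
  finally show ?thesis .
qed

lemma char_conj: assumes g: "g \<in> G" shows "mtrace (\<rho> (madj g)) = cnj (mtrace (\<rho> g))"
  using sigma_trace[OF adj_G[OF g]] sigma_adj[OF g] sigma_trace[OF g] mtrace_madj[OF sigma_carrier[OF g]] by simp

lemma char_norm: "(\<Sum>g\<in>G. cnj (mtrace (\<rho> g)) * mtrace (\<rho> g)) = of_nat (card G)"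
  using char_orth by (simp add: char_conj mult.commute)

lemma char_gram: assumes h: "h \<in> G" and k: "k \<in> G"
  shows "mtrace (\<rho> (madj h * k)) = (\<Sum>a<d. \<Sum>b<d. cnj (\<sigma> h $$ (a,b)) * \<sigma> k $$ (a,b))"
proof -
  have Sh: "\<sigma> h \<in> carrier_mat d d" and Sk: "\<sigma> k \<in> carrier_mat d d" using sigma_carrier h k by auto
  have "mtrace (\<rho> (madj h * k)) = mtrace (\<sigma> (madj h * k))" using sigma_trace[OF mult_G[OF adj_G[OF h] k]] by simp
  also have "\<dots> = mtrace (madj (\<sigma> h) * \<sigma> k)" using sigma_mult[OF adj_G[OF h] k] sigma_adj[OF h] by simp
  also have "\<dots> = (\<Sum>b<d. \<Sum>a<d. madj (\<sigma> h) $$ (b,a) * \<sigma> k $$ (a,b))"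
  proof -
    have dr: "dim_row (madj (\<sigma> h) * \<sigma> k) = d" using Sh by simp
    have "(madj (\<sigma> h) * \<sigma> k) $$ (b,b) = (\<Sum>a<d. madj (\<sigma> h) $$ (b,a) * \<sigma> k $$ (a,b))" if b: "b \<in> {..<d}" for b
      using mult_entry[OF madj_carrier[OF Sh] Sk, of b b] b by simp
    thus ?thesis unfolding mtrace_def dr by (rule sum.cong[OF refl])
  qed
  also have "\<dots> = (\<Sum>b<d. \<Sum>a<d. cnj (\<sigma> h $$ (a,b)) * \<sigma> k $$ (a,b))" using Sh by (intro sum.cong refl, simp)
  also have "\<dots> = (\<Sum>a<d. \<Sum>b<d. cnj (\<sigma> h $$ (a,b)) * \<sigma> k $$ (a,b))" by (rule sum.swap)
  finally show ?thesis .
qed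

end


lemma smult_mv: assumes F: "F \<in> carrier_mat n m" and x: "x \<in> carrier_vec m"
  shows "(c \<cdot>\<^sub>m F) *\<^sub>v x = c \<cdot>\<^sub>v (F *\<^sub>v x)"
proof (rule eq_vecI)
  fix i assume "i < dim_vec (c \<cdot>\<^sub>v (F *\<^sub>v x))" hence i: "i < n" using F by simp
  have "((c \<cdot>\<^sub>m F) *\<^sub>v x) $ i = (\<Sum>k<m. (c \<cdot>\<^sub>m F) $$ (i,k) * x $ k)" by (rule mv_entry[OF _ x i], insert F, simp)
  also have "\<dots> = c * (\<Sum>k<m. F $$ (i,k) * x $ k)" using F i by (simp add: sum_distrib_left mult.assoc)
  also have "\<dots> = (c \<cdot>\<^sub>v (F *\<^sub>v x)) $ i" using mv_entry[OF F x i] F i by simp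
  finally show "((c \<cdot>\<^sub>m F) *\<^sub>v x) $ i = (c \<cdot>\<^sub>v (F *\<^sub>v x)) $ i" .
qed (insert F, simp)

lemma ip_minus_left: "dim_vec y = dim_vec x \<Longrightarrow> ip (x - y) z = ip x z - ip y z"
  unfolding ip_def by (simp add: algebra_simps sum_subtractf)

lemma gram_nonneg: assumes fin: "finite \<Gamma>"
  shows "Im (\<Sum>c\<in>\<Gamma>. cnj (b c) * b c) = 0" "Re (\<Sum>c\<in>\<Gamma>. cnj (b c) * b c) \<ge> 0"
    "(\<Sum>c\<in>\<Gamma>. cnj (b c) * b c) = 0 \<Longrightarrow> \<forall>c\<in>\<Gamma>. b c = 0"
proof -
  have e: "(\<Sum>c\<in>\<Gamma>. cnj (b c) * b c) = complex_of_real (\<Sum>c\<in>\<Gamma>. (cmod (b c))^2)"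
    unfolding of_real_sum cnj_self_mult ..
  show "Im (\<Sum>c\<in>\<Gamma>. cnj (b c) * b c) = 0" unfolding e by simp
  show "Re (\<Sum>c\<in>\<Gamma>. cnj (b c) * b c) \<ge> 0" unfolding e by (simp add: sum_nonneg)
  assume "(\<Sum>c\<in>\<Gamma>. cnj (b c) * b c) = 0"
  hence "(\<Sum>c\<in>\<Gamma>. (cmod (b c))^2) = 0" unfolding e of_real_eq_0_iff .
  hence "\<forall>c\<in>\<Gamma>. (cmod (b c))^2 = 0" using fin by (subst sum_nonneg_eq_0_iff[symmetric], auto)
  thus "\<forall>c\<in>\<Gamma>. b c = 0" by simp
qed

lemma sum_prod3: assumes "finite A" "finite B" "finite C"
  shows "(\<Sum>c\<in>A \<times> B \<times> C. F c) = (\<Sum>a\<in>A. \<Sum>b\<in>B. \<Sum>c\<in>C. F (a,b,c))"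
  using assms by (simp add: sum.cartesian_product split_def)

lemma gram_expand:
  fixes s :: "'p \<Rightarrow> 'g \<Rightarrow> complex" and f g :: "'i \<Rightarrow> 'g \<Rightarrow> complex"
  assumes fX: "finite X" and fI: "finite I" and fL: "finite L"
  shows "(\<Sum>h\<in>X. \<Sum>k\<in>X. (\<Sum>p\<in>I. cnj (s p h) * s p k) * cnj (\<Sum>p\<in>I. cnj (s p h) * s p k) * (\<Sum>i\<in>L. cnj (f i h) * g i k))
    = (\<Sum>c\<in>I \<times> I \<times> L. cnj (\<Sum>h\<in>X. s (fst c) h * cnj (s (fst (snd c)) h) * f (snd (snd c)) h) *
                         (\<Sum>k\<in>X. s (fst c) k * cnj (s (fst (snd c)) k) * g (snd (snd c)) k))"
proof -
  define w where "w c h = s (fst c) h * cnj (s (fst (snd c)) h) * f (snd (snd c)) h" for c h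
  define w' where "w' c k = s (fst c) k * cnj (s (fst (snd c)) k) * g (snd (snd c)) k" for c k
  have tm: "(\<Sum>p\<in>I. cnj (s p h) * s p k) * cnj (\<Sum>p\<in>I. cnj (s p h) * s p k) * (\<Sum>i\<in>L. cnj (f i h) * g i k)
      = (\<Sum>c\<in>I \<times> I \<times> L. cnj (w c h) * w' c k)" for h k
  proof -
    define A where "A p = cnj (s p h) * s p k" for p
    define C where "C i = cnj (f i h) * g i k" for i
    have s1: "(\<Sum>p\<in>I. A p) * cnj (\<Sum>p\<in>I. A p) = (\<Sum>p\<in>I. \<Sum>p'\<in>I. A p * cnj (A p'))"
      by (simp only: cnj_sum sum_product)
    have s2: "(\<Sum>p\<in>I. \<Sum>p'\<in>I. A p * cnj (A p')) * (\<Sum>i\<in>L. C i) = (\<Sum>p\<in>I. (\<Sum>p'\<in>I. A p * cnj (A p')) * (\<Sum>i\<in>L. C i))"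
      by (rule sum_distrib_right)
    have s3: "(\<Sum>p'\<in>I. A p * cnj (A p')) * (\<Sum>i\<in>L. C i) = (\<Sum>p'\<in>I. \<Sum>i\<in>L. A p * cnj (A p') * C i)" for p
      by (rule sum_product)
    have "(\<Sum>p\<in>I. A p) * cnj (\<Sum>p\<in>I. A p) * (\<Sum>i\<in>L. C i) = (\<Sum>p\<in>I. \<Sum>p'\<in>I. \<Sum>i\<in>L. A p * cnj (A p') * C i)"
      unfolding s1 s2 s3 ..
    also have "\<dots> = (\<Sum>p\<in>I. \<Sum>p'\<in>I. \<Sum>i\<in>L. cnj (w (p,p',i) h) * w' (p,p',i) k)"
      unfolding w_def w'_def A_def C_def by (intro sum.cong refl, simp add: ac_simps)
    also have "\<dots> = (\<Sum>c\<in>I \<times> I \<times> L. cnj (w c h) * w' c k)"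
      by (rule sum_prod3[symmetric, OF fI fI fL])
    finally show ?thesis unfolding A_def C_def .
  qed
  have "(\<Sum>h\<in>X. \<Sum>k\<in>X. (\<Sum>p\<in>I. cnj (s p h) * s p k) * cnj (\<Sum>p\<in>I. cnj (s p h) * s p k) * (\<Sum>i\<in>L. cnj (f i h) * g i k))
     = (\<Sum>h\<in>X. \<Sum>k\<in>X. \<Sum>c\<in>I \<times> I \<times> L. cnj (w c h) * w' c k)" unfolding tm ..
  also have "\<dots> = (\<Sum>h\<in>X. \<Sum>c\<in>I \<times> I \<times> L. \<Sum>k\<in>X. cnj (w c h) * w' c k)"
    by (rule sum.cong[OF refl], rule sum.swap)
  also have "\<dots> = (\<Sum>c\<in>I \<times> I \<times> L. \<Sum>h\<in>X. \<Sum>k\<in>X. cnj (w c h) * w' c k)"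
    by (rule sum.swap)
  also have "\<dots> = (\<Sum>c\<in>I \<times> I \<times> L. cnj (\<Sum>h\<in>X. w c h) * (\<Sum>k\<in>X. w' c k))"
    by (rule sum.cong[OF refl], simp only: cnj_sum sum_product)
  finally show ?thesis unfolding w_def w'_def .
qed

locale main_ctx = haar_ctx q M + rep_ctx q G d \<rho> for q M G d \<rho> +
  fixes t :: nat
begin

abbreviation "N \<equiv> q^(2*t)"
abbreviation "\<Phi> \<equiv> FFt t"
abbreviation "P \<equiv> PM t"

definition lamc :: "complex mat \<Rightarrow> complex" where "lamc g = mtrace (\<rho> g)"
definition cw :: "complex mat \<Rightarrow> complex" where
  "cw g = complex_of_real ((cmod (lamc g))^2) / of_nat (card G)"
definition Am :: "complex mat" where "Am = msum G (\<lambda>g. cw g \<cdot>\<^sub>m \<Phi> g) N N"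

lemma Phi_G: "g \<in> G \<Longrightarrow> \<Phi> g \<in> carrier_mat N N"
  using FFt_carrier[OF G_carrier] by blast

lemma Am_carrier: "Am \<in> carrier_mat N N" unfolding Am_def by simp

lemma design_Am: "mat N N (\<lambda>(i, j). (1 / of_nat (card G)) * (\<Sum>g\<in>G. of_real ((cmod (lamc g))\<^sup>2) * \<Phi> g $$ (i, j))) = Am"
proof (rule eq_matI)
  fix i j assume "i < dim_row Am" "j < dim_col Am" hence i: "i < N" and j: "j < N" unfolding Am_def by auto
  have "(cw g \<cdot>\<^sub>m \<Phi> g) $$ (i,j) = cw g * \<Phi> g $$ (i,j)" if g: "g \<in> G" for g
    using Phi_G[OF g] i j by simp
  hence "Am $$ (i,j) = (\<Sum>g\<in>G. cw g * \<Phi> g $$ (i,j))"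
    unfolding Am_def using i j by (simp add: msum_index)
  also have "\<dots> = (1 / of_nat (card G)) * (\<Sum>g\<in>G. of_real ((cmod (lamc g))\<^sup>2) * \<Phi> g $$ (i, j))"
    unfolding cw_def by (simp add: sum_distrib_left)
  finally show "mat N N (\<lambda>(i, j). (1 / of_nat (card G)) * (\<Sum>g\<in>G. of_real ((cmod (lamc g))\<^sup>2) * \<Phi> g $$ (i, j))) $$ (i,j) = Am $$ (i,j)"
    using i j by simp
qed (auto simp: Am_def)

lemma cw_sum: "(\<Sum>g\<in>G. cw g) = 1"
proof -
  have "(\<Sum>g\<in>G. cw g) = (\<Sum>g\<in>G. cnj (lamc g) * lamc g) / of_nat (card G)"
    unfolding cw_def by (simp add: sum_divide_distrib cnj_self_mult)
  also have "\<dots> = 1" unfolding lamc_def char_norm using cardG by simp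
  finally show ?thesis .
qed

lemma Am_trace: "mtrace Am = cnorm G (\<lambda>g. lamc g * (mtrace g) ^ t)"
proof -
  have "mtrace Am = (\<Sum>g\<in>G. mtrace (cw g \<cdot>\<^sub>m \<Phi> g))"
    unfolding Am_def by (rule mtrace_msum, insert Phi_G, auto)
  also have "\<dots> = (\<Sum>g\<in>G. cw g * complex_of_real ((cmod (mtrace g)) ^ (2*t)))"
  proof (intro sum.cong refl)
    fix g assume g: "g \<in> G"
    have "mtrace (cw g \<cdot>\<^sub>m \<Phi> g) = cw g * mtrace (\<Phi> g)"
      unfolding mtrace_def using Phi_G[OF g] by (simp add: sum_distrib_left)
    thus "mtrace (cw g \<cdot>\<^sub>m \<Phi> g) = cw g * complex_of_real ((cmod (mtrace g)) ^ (2*t))"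
      using FFt_trace[OF G_carrier[OF g]] by simp
  qed
  also have "\<dots> = cnorm G (\<lambda>g. lamc g * (mtrace g) ^ t)"
    unfolding cnorm_def cinner_def sum_distrib_left
  proof (intro sum.cong refl)
    fix g
    have p: "(cmod (mtrace g) ^ t)^2 = cmod (mtrace g) ^ (2*t)" by (simp add: power_mult[symmetric] mult.commute)
    have "cnj (lamc g * mtrace g ^ t) * (lamc g * mtrace g ^ t) = complex_of_real ((cmod (lamc g * mtrace g ^ t))^2)"
      by (rule cnj_self_mult)
    also have "(cmod (lamc g * mtrace g ^ t))^2 = (cmod (lamc g))^2 * cmod (mtrace g) ^ (2*t)"
      by (simp add: norm_mult norm_power power_mult_distrib p)
    finally show "cw g * complex_of_real (cmod (mtrace g) ^ (2 * t)) = 1 / of_nat (card G) * (cnj (lamc g * mtrace g ^ t) * (lamc g * mtrace g ^ t))"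
      unfolding cw_def by simp
  qed
  finally show ?thesis .
qed

end


context main_ctx
begin

lemma P_carrier: "P \<in> carrier_mat N N" by simp

lemma Phi_P: "g \<in> G \<Longrightarrow> \<Phi> g * P = P" using PM_left G_unitary by blast
lemma P_Phi: "g \<in> G \<Longrightarrow> P * \<Phi> g = P" using PM_right G_unitary by blast

lemma msum_const: assumes X: "X \<in> carrier_mat N N"
  shows "msum G (\<lambda>g. cw g \<cdot>\<^sub>m X) N N = X"
proof (rule eq_matI)
  fix i j assume "i < dim_row X" "j < dim_col X" hence i: "i < N" and j: "j < N" using X by auto
  have "msum G (\<lambda>g. cw g \<cdot>\<^sub>m X) N N $$ (i,j) = (\<Sum>g\<in>G. cw g * X $$ (i,j))"
    using i j X by (simp add: msum_index)
  also have "\<dots> = X $$ (i,j)" using cw_sum by (simp add: sum_distrib_right[symmetric])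
  finally show "msum G (\<lambda>g. cw g \<cdot>\<^sub>m X) N N $$ (i,j) = X $$ (i,j)" .
qed (insert X, auto)

lemma Am_P: "Am * P = P"
proof -
  have "Am * P = msum G (\<lambda>g. (cw g \<cdot>\<^sub>m \<Phi> g) * P) N N"
    unfolding Am_def by (rule msum_mult_right, insert Phi_G, auto)
  also have "\<dots> = msum G (\<lambda>g. cw g \<cdot>\<^sub>m P) N N"
    by (rule msum_cong, subst mult_smult_assoc_mat[OF Phi_G P_carrier], auto simp: Phi_P)
  also have "\<dots> = P" by (rule msum_const[OF P_carrier])
  finally show ?thesis .
qed

lemma P_Am: "P * Am = P"
proof -
  have "P * Am = msum G (\<lambda>g. P * (cw g \<cdot>\<^sub>m \<Phi> g)) N N"
    unfolding Am_def by (rule msum_mult_left[OF P_carrier], insert Phi_G, auto)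
  also have "\<dots> = msum G (\<lambda>g. cw g \<cdot>\<^sub>m P) N N"
    by (rule msum_cong, subst mult_smult_distrib[OF P_carrier Phi_G], auto simp: P_Phi)
  also have "\<dots> = P" by (rule msum_const[OF P_carrier])
  finally show ?thesis .
qed

lemma Am_dims[simp]: "dim_row Am = N" "dim_col Am = N" unfolding Am_def by simp_all

lemma Am_mv_carrier: "x \<in> carrier_vec N \<Longrightarrow> Am *\<^sub>v x \<in> carrier_vec N"
  using mult_mat_vec_carrier[OF Am_carrier] by blast

lemma Am_Pv: "x \<in> carrier_vec N \<Longrightarrow> Am *\<^sub>v (P *\<^sub>v x) = P *\<^sub>v x"
  using assoc_mult_mat_vec[OF Am_carrier P_carrier, of x] Am_P by simp

lemma P_Amv: "x \<in> carrier_vec N \<Longrightarrow> P *\<^sub>v (Am *\<^sub>v x) = P *\<^sub>v x"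
  using assoc_mult_mat_vec[OF P_carrier Am_carrier, of x] P_Am by simp

lemma P_Pv: "x \<in> carrier_vec N \<Longrightarrow> P *\<^sub>v (P *\<^sub>v x) = P *\<^sub>v x"
  using assoc_mult_mat_vec[OF P_carrier P_carrier, of x] PM_idem by simp

lemma ip_Am: assumes x: "x \<in> carrier_vec N" and y: "y \<in> carrier_vec N"
  shows "ip y (Am *\<^sub>v x) = (\<Sum>g\<in>G. cw g * ip y (\<Phi> g *\<^sub>v x))"
proof -
  have "ip y (Am *\<^sub>v x) = (\<Sum>g\<in>G. ip y ((cw g \<cdot>\<^sub>m \<Phi> g) *\<^sub>v x))"
    unfolding Am_def by (rule ip_msum[OF _ x y], insert Phi_G, auto)
  also have "\<dots> = (\<Sum>g\<in>G. cw g * ip y (\<Phi> g *\<^sub>v x))"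
  proof (intro sum.cong refl)
    fix g assume g: "g \<in> G"
    show "ip y ((cw g \<cdot>\<^sub>m \<Phi> g) *\<^sub>v x) = cw g * ip y (\<Phi> g *\<^sub>v x)"
      unfolding smult_mv[OF Phi_G[OF g] x] by (rule ip_smult_right, insert Phi_G[OF g] y, simp)
  qed
  finally show ?thesis .
qed

definition \<Gamma> :: "((nat \<times> nat) \<times> (nat \<times> nat) \<times> nat) set" where
  "\<Gamma> = ({..<d} \<times> {..<d}) \<times> ({..<d} \<times> {..<d}) \<times> {..<N}"

definition \<beta> :: "((nat \<times> nat) \<times> (nat \<times> nat) \<times> nat) \<Rightarrow> complex vec \<Rightarrow> complex" where
  "\<beta> c z = (\<Sum>k\<in>G. \<sigma> k $$ (fst c) * cnj (\<sigma> k $$ (fst (snd c))) * (\<Phi> k *\<^sub>v z) $ (snd (snd c))) / of_nat (card G)"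

lemma fin_Gamma: "finite \<Gamma>" unfolding \<Gamma>_def by simp

lemma ip_Phi_split: assumes h: "h \<in> G" and k: "k \<in> G" and x: "x \<in> carrier_vec N" and y: "y \<in> carrier_vec N"
  shows "ip y (\<Phi> (madj h * k) *\<^sub>v x) = (\<Sum>i\<in>{..<N}. cnj ((\<Phi> h *\<^sub>v y) $ i) * (\<Phi> k *\<^sub>v x) $ i)"
proof -
  have hc: "h \<in> carrier_mat q q" and kc: "k \<in> carrier_mat q q" using G_carrier h k by auto
  have Fh: "\<Phi> h \<in> carrier_mat N N" and Fk: "\<Phi> k \<in> carrier_mat N N" using Phi_G h k by auto
  have "\<Phi> (madj h * k) = madj (\<Phi> h) * \<Phi> k" using FFt_mult[OF madj_carrier[OF hc] kc] FFt_madj by simp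
  hence "ip y (\<Phi> (madj h * k) *\<^sub>v x) = ip y (madj (\<Phi> h) *\<^sub>v (\<Phi> k *\<^sub>v x))"
    using assoc_mult_mat_vec[OF madj_carrier[OF Fh] Fk x] by simp
  also have "\<dots> = ip (\<Phi> h *\<^sub>v y) (\<Phi> k *\<^sub>v x)"
    using ip_mv[OF madj_carrier[OF Fh] y, of "\<Phi> k *\<^sub>v x"] Fk x by simp
  also have "\<dots> = (\<Sum>i\<in>{..<N}. cnj ((\<Phi> h *\<^sub>v y) $ i) * (\<Phi> k *\<^sub>v x) $ i)" unfolding ip_def using Fh by simp
  finally show ?thesis .
qed

lemma gram_Am: assumes x: "x \<in> carrier_vec N" and y: "y \<in> carrier_vec N"
  shows "ip y (Am *\<^sub>v x) = (\<Sum>c\<in>\<Gamma>. cnj (\<beta> c y) * \<beta> c x)"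
proof -
  let ?n = "of_nat (card G) :: complex"
  have n0: "?n \<noteq> 0" using cardG by simp
  define W where "W c z = (\<Sum>k\<in>G. \<sigma> k $$ (fst c) * cnj (\<sigma> k $$ (fst (snd c))) * (\<Phi> k *\<^sub>v z) $ (snd (snd c)))" for c z
  have bW: "\<beta> c z = W c z / ?n" for c z unfolding \<beta>_def W_def ..
  define T where "T g = lamc g * cnj (lamc g) * ip y (\<Phi> g *\<^sub>v x)" for g
  have tg: "cw g * ip y (\<Phi> g *\<^sub>v x) = T g / ?n" for g
    unfolding cw_def T_def complex_norm_square by simp
  have "ip y (Am *\<^sub>v x) = (\<Sum>g\<in>G. T g) / ?n"
    unfolding ip_Am[OF x y] tg sum_divide_distrib ..
  also have "(\<Sum>g\<in>G. T g) = (\<Sum>h\<in>G. \<Sum>k\<in>G. T (madj h * k)) / ?n"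
  proof -
    have "(\<Sum>h\<in>G. \<Sum>k\<in>G. T (madj h * k)) = (\<Sum>h\<in>G. \<Sum>g\<in>G. T g)"
      by (rule sum.cong[OF refl], rule sum_left[OF adj_G], assumption)
    also have "\<dots> = ?n * (\<Sum>g\<in>G. T g)" by simp
    finally show ?thesis using n0 by simp
  qed
  also have "(\<Sum>h\<in>G. \<Sum>k\<in>G. T (madj h * k)) = (\<Sum>h\<in>G. \<Sum>k\<in>G.
      (\<Sum>p\<in>{..<d} \<times> {..<d}. cnj (\<sigma> h $$ p) * \<sigma> k $$ p) * cnj (\<Sum>p\<in>{..<d} \<times> {..<d}. cnj (\<sigma> h $$ p) * \<sigma> k $$ p)
       * (\<Sum>i\<in>{..<N}. cnj ((\<Phi> h *\<^sub>v y) $ i) * (\<Phi> k *\<^sub>v x) $ i))"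
  proof (intro sum.cong refl)
    fix h k assume h: "h \<in> G" and k: "k \<in> G"
    have "lamc (madj h * k) = (\<Sum>p\<in>{..<d} \<times> {..<d}. cnj (\<sigma> h $$ p) * \<sigma> k $$ p)"
      unfolding lamc_def char_gram[OF h k] by (simp add: sum.cartesian_product)
    thus "T (madj h * k) = (\<Sum>p\<in>{..<d} \<times> {..<d}. cnj (\<sigma> h $$ p) * \<sigma> k $$ p) * cnj (\<Sum>p\<in>{..<d} \<times> {..<d}. cnj (\<sigma> h $$ p) * \<sigma> k $$ p)
       * (\<Sum>i\<in>{..<N}. cnj ((\<Phi> h *\<^sub>v y) $ i) * (\<Phi> k *\<^sub>v x) $ i)"
      unfolding T_def ip_Phi_split[OF h k x y] by simp
  qed
  also have "\<dots> = (\<Sum>c\<in>({..<d} \<times> {..<d}) \<times> ({..<d} \<times> {..<d}) \<times> {..<N}.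
       cnj (\<Sum>h\<in>G. \<sigma> h $$ (fst c) * cnj (\<sigma> h $$ (fst (snd c))) * (\<Phi> h *\<^sub>v y) $ (snd (snd c))) *
           (\<Sum>k\<in>G. \<sigma> k $$ (fst c) * cnj (\<sigma> k $$ (fst (snd c))) * (\<Phi> k *\<^sub>v x) $ (snd (snd c))))"
    by (rule gram_expand[OF finG], auto)
  also have "\<dots> = (\<Sum>c\<in>\<Gamma>. cnj (W c y) * W c x)" unfolding \<Gamma>_def W_def ..
  also have "\<dots> / ?n / ?n = (\<Sum>c\<in>\<Gamma>. cnj (\<beta> c y) * \<beta> c x)"
  proof -
    have "cnj (\<beta> c y) * \<beta> c x = cnj (W c y) * W c x / ?n / ?n" for c unfolding bW by simp
    thus ?thesis by (simp only: sum_divide_distrib)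
  qed
  finally show ?thesis .
qed

lemma D_form: assumes x: "x \<in> carrier_vec N" and y: "y \<in> carrier_vec N"
  shows "ip y (Am *\<^sub>v x) - ip y (P *\<^sub>v x) = ip (y - P *\<^sub>v y) (Am *\<^sub>v (x - P *\<^sub>v x))"
proof -
  have Px: "P *\<^sub>v x \<in> carrier_vec N" and Py: "P *\<^sub>v y \<in> carrier_vec N" using x y by auto
  have Ax: "Am *\<^sub>v x \<in> carrier_vec N" using Am_mv_carrier[OF x] .
  have "Am *\<^sub>v (x - P *\<^sub>v x) = Am *\<^sub>v x - P *\<^sub>v x"
    using mult_minus_distrib_mat_vec[OF Am_carrier x Px] Am_Pv[OF x] by simp
  hence "ip (y - P *\<^sub>v y) (Am *\<^sub>v (x - P *\<^sub>v x)) = ip (y - P *\<^sub>v y) (Am *\<^sub>v x - P *\<^sub>v x)" by simp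
  also have "\<dots> = ip y (Am *\<^sub>v x - P *\<^sub>v x) - ip (P *\<^sub>v y) (Am *\<^sub>v x - P *\<^sub>v x)"
    by (rule ip_minus_left, insert y Py, simp)
  also have "ip y (Am *\<^sub>v x - P *\<^sub>v x) = ip y (Am *\<^sub>v x) - ip y (P *\<^sub>v x)"
    by (rule ip_minus_right, insert y Ax Px, auto)
  also have "ip (P *\<^sub>v y) (Am *\<^sub>v x - P *\<^sub>v x) = ip (P *\<^sub>v y) (Am *\<^sub>v x) - ip (P *\<^sub>v y) (P *\<^sub>v x)"
    by (rule ip_minus_right, insert Py Ax Px, auto)
  also have "ip (P *\<^sub>v y) (Am *\<^sub>v x) = ip y (P *\<^sub>v x)"
    using PM_ip_sym[OF Ax y] P_Amv[OF x] by simp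
  also have "ip (P *\<^sub>v y) (P *\<^sub>v x) = ip y (P *\<^sub>v x)"
    using PM_ip_sym[OF Px y] P_Pv[OF x] by simp
  finally show ?thesis by simp
qed

lemma D_gram: assumes x: "x \<in> carrier_vec N" and y: "y \<in> carrier_vec N"
  shows "ip y (Am *\<^sub>v x) - ip y (P *\<^sub>v x) = (\<Sum>c\<in>\<Gamma>. cnj (\<beta> c (y - P *\<^sub>v y)) * \<beta> c (x - P *\<^sub>v x))"
  unfolding D_form[OF x y] by (rule gram_Am, insert x y, auto)

lemma D_nonneg: assumes x: "x \<in> carrier_vec N"
  shows "Im (ip x (Am *\<^sub>v x) - ip x (P *\<^sub>v x)) = 0" "Re (ip x (Am *\<^sub>v x) - ip x (P *\<^sub>v x)) \<ge> 0"
  unfolding D_gram[OF x x] by (rule gram_nonneg(1)[OF fin_Gamma], rule gram_nonneg(2)[OF fin_Gamma])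

lemma D_zero: assumes x: "x \<in> carrier_vec N" and z: "ip x (Am *\<^sub>v x) - ip x (P *\<^sub>v x) = 0"
  shows "Am *\<^sub>v x = P *\<^sub>v x"
proof -
  have b0: "\<forall>c\<in>\<Gamma>. \<beta> c (x - P *\<^sub>v x) = 0"
    by (rule gram_nonneg(3)[OF fin_Gamma], insert z, unfold D_gram[OF x x])
  show ?thesis
  proof (rule vec_eq_by_ip[of _ N])
    fix y :: "complex vec" assume y: "y \<in> carrier_vec N"
    have "ip y (Am *\<^sub>v x) - ip y (P *\<^sub>v x) = 0" unfolding D_gram[OF x y] using b0 by simp
    thus "ip y (Am *\<^sub>v x) = ip y (P *\<^sub>v x)" by simp
  qed (insert x Am_mv_carrier[OF x], simp_all)
qed

end


lemma nonneg_sum_zero: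
  assumes fin: "finite S" and nn: "\<And>i. i \<in> S \<Longrightarrow> Im (f i) = 0 \<and> Re (f i) \<ge> 0" and z: "sum f S = 0"
  shows "\<forall>i\<in>S. f i = 0"
proof -
  have "(\<Sum>i\<in>S. Re (f i)) = 0" using z by (simp add: Re_sum[symmetric])
  hence "\<forall>i\<in>S. Re (f i) = 0" using fin nn by (subst sum_nonneg_eq_0_iff[symmetric], auto)
  thus ?thesis using nn by (auto simp: complex_eq_iff)
qed

lemma trace_ip: assumes X: "X \<in> carrier_mat n n"
  shows "mtrace X = (\<Sum>i<n. ip (unit_vec n i) (X *\<^sub>v unit_vec n i))"
  unfolding mtrace_def using X
  by (intro sum.cong, auto simp: ip_unit[of _ n] mv_unit[OF X])

lemma mat_eq_by_unit: assumes A: "(A :: complex mat) \<in> carrier_mat n m" and B: "B \<in> carrier_mat n m"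
  and h: "\<And>j. j < m \<Longrightarrow> A *\<^sub>v unit_vec m j = B *\<^sub>v unit_vec m j"
  shows "A = B"
proof (rule eq_matI)
  fix i j assume "i < dim_row B" "j < dim_col B" hence i: "i < n" and j: "j < m" using B by auto
  show "A $$ (i,j) = B $$ (i,j)" using h[OF j] mv_unit[OF A i j] mv_unit[OF B i j] by simp
qed (insert A B, auto)

lemma mat_zero_by_col: assumes X: "(X :: complex mat) \<in> carrier_mat n m" and h: "\<And>a. a < m \<Longrightarrow> col X a = 0\<^sub>v n"
  shows "X = 0\<^sub>m n m"
proof (rule eq_matI)
  fix i j assume "i < dim_row (0\<^sub>m n m :: complex mat)" "j < dim_col (0\<^sub>m n m :: complex mat)"
  hence i: "i < n" and j: "j < m" by auto
  have "col X j $ i = 0" using h[OF j] i by simp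
  thus "X $$ (i,j) = (0\<^sub>m n m :: complex mat) $$ (i,j)" using X i j by simp
qed (insert X, auto)

lemma mv_zero: "(X :: complex mat) \<in> carrier_mat n m \<Longrightarrow> X *\<^sub>v 0\<^sub>v m = 0\<^sub>v n"
  by (intro eq_vecI, auto simp: scalar_prod_def)

lemma zero_mv: "(x :: complex vec) \<in> carrier_vec m \<Longrightarrow> 0\<^sub>m n m *\<^sub>v x = 0\<^sub>v n"
  by (intro eq_vecI, auto simp: scalar_prod_def)

lemma mtrace_smult: "(X :: complex mat) \<in> carrier_mat n n \<Longrightarrow> mtrace (c \<cdot>\<^sub>m X) = c * mtrace X"
  unfolding mtrace_def by (simp add: sum_distrib_left)

context main_ctx
begin

lemma design_iff: "twisted_unitary_design q M G lamc t \<longleftrightarrow> Am = P"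
  unfolding twisted_unitary_design_def design_Am PM_def ..

lemma b_iff: "cnorm G (\<lambda>g. lamc g * (mtrace g) ^ t) = of_real (LINT U|M. (cmod (mtrace U)) ^ (2 * t)) \<longleftrightarrow> mtrace Am = mtrace P"
  unfolding Am_trace PM_trace ..

lemma ab: "Am = P \<longleftrightarrow> mtrace Am = mtrace P"
proof
  assume tr: "mtrace Am = mtrace P"
  let ?f = "\<lambda>i. ip (unit_vec N i) (Am *\<^sub>v unit_vec N i) - ip (unit_vec N i) (P *\<^sub>v unit_vec N i)"
  have "sum ?f {..<N} = mtrace Am - mtrace P"
    unfolding trace_ip[OF Am_carrier] trace_ip[OF P_carrier] by (simp add: sum_subtractf)
  hence "sum ?f {..<N} = 0" using tr by simp
  hence "\<forall>i\<in>{..<N}. ?f i = 0" by (intro nonneg_sum_zero, insert D_nonneg, auto)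
  hence "\<And>j. j < N \<Longrightarrow> Am *\<^sub>v unit_vec N j = P *\<^sub>v unit_vec N j" by (intro D_zero, auto)
  thus "Am = P" by (rule mat_eq_by_unit[OF Am_carrier P_carrier])
qed simp

lemma cinner_eq: "cinner G (\<lambda>g. cnj (lamc g) * lamc g) R' = (\<Sum>g\<in>G. cw g * R' g)"
  unfolding cinner_def cw_def by (simp add: sum_distrib_left cnj_self_mult)

lemma a_imp_c:
  assumes AP: "Am = P" and E: "in_E q t e R" and nt: "\<not> trivial_rep (unitary_group q) e R"
  shows "cinner G (\<lambda>g. cnj (lamc g) * lamc g) (\<lambda>g. mtrace (R g)) = 0"
proof -
  let ?UG = "unitary_group q"
  have irr: "irreducible_rep ?UG e R" and occ: "occurs_in ?UG e R N \<Phi>" using E unfolding in_E_def by auto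
  have Rc: "\<And>U. U \<in> ?UG \<Longrightarrow> R U \<in> carrier_mat e e" and e1: "e \<ge> 1"
    and Rirr: "\<And>W. is_subspace e W \<Longrightarrow> (\<forall>g\<in>?UG. \<forall>v\<in>W. R g *\<^sub>v v \<in> W) \<Longrightarrow> W = {0\<^sub>v e} \<or> W = carrier_vec e"
    using irr unfolding irreducible_rep_def is_rep_def by auto
  obtain Jm where Jm: "Jm \<in> carrier_mat N e" and J0: "Jm \<noteq> 0\<^sub>m N e" and JR: "\<And>U. U \<in> ?UG \<Longrightarrow> \<Phi> U * Jm = Jm * R U"
    using occ unfolding occurs_in_def by auto
  have Rg: "\<And>g. g \<in> G \<Longrightarrow> R g \<in> carrier_mat e e" using Rc G_unitary by blast
  define B where "B = msum G (\<lambda>g. cw g \<cdot>\<^sub>m R g) e e"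
  have B: "B \<in> carrier_mat e e" unfolding B_def by simp
  have trB: "mtrace B = (\<Sum>g\<in>G. cw g * mtrace (R g))"
  proof -
    have "mtrace B = (\<Sum>g\<in>G. mtrace (cw g \<cdot>\<^sub>m R g))" unfolding B_def by (rule mtrace_msum, insert Rg, auto)
    also have "\<dots> = (\<Sum>g\<in>G. cw g * mtrace (R g))"
      by (intro sum.cong refl, rule mtrace_smult, rule Rg)
    finally show ?thesis .
  qed
  have inj: "v \<in> carrier_vec e \<Longrightarrow> Jm *\<^sub>v v = 0\<^sub>v N \<Longrightarrow> v = 0\<^sub>v e" for v
  proof -
    assume v: "v \<in> carrier_vec e" and Jv: "Jm *\<^sub>v v = 0\<^sub>v N"
    define K where "K = {v \<in> carrier_vec e. Jm *\<^sub>v v = 0\<^sub>v N}"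
    have sub: "is_subspace e K" unfolding is_subspace_def K_def
    proof (intro conjI ballI allI)
      show "0\<^sub>v e \<in> {v \<in> carrier_vec e. Jm *\<^sub>v v = 0\<^sub>v N}" using Jm by (auto intro!: eq_vecI simp: scalar_prod_def)
      fix x y assume x: "x \<in> {v \<in> carrier_vec e. Jm *\<^sub>v v = 0\<^sub>v N}" and y: "y \<in> {v \<in> carrier_vec e. Jm *\<^sub>v v = 0\<^sub>v N}"
      show "x + y \<in> {v \<in> carrier_vec e. Jm *\<^sub>v v = 0\<^sub>v N}" using x y mult_add_distrib_mat_vec[OF Jm, of x y] by auto
    next
      fix c :: complex and x assume x: "x \<in> {v \<in> carrier_vec e. Jm *\<^sub>v v = 0\<^sub>v N}"
      show "c \<cdot>\<^sub>v x \<in> {v \<in> carrier_vec e. Jm *\<^sub>v v = 0\<^sub>v N}" using x mult_mat_vec[OF Jm, of x c] by auto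
    qed auto
    have inv: "\<forall>g\<in>?UG. \<forall>x\<in>K. R g *\<^sub>v x \<in> K"
    proof (intro ballI)
      fix g x assume g: "g \<in> ?UG" and x: "x \<in> K"
      have xc: "x \<in> carrier_vec e" and Jx: "Jm *\<^sub>v x = 0\<^sub>v N" using x unfolding K_def by auto
      have gc: "g \<in> carrier_mat q q" using unitary_carrier[OF g] .
      have "Jm *\<^sub>v (R g *\<^sub>v x) = (Jm * R g) *\<^sub>v x" using assoc_mult_mat_vec[OF Jm Rc[OF g] xc] by simp
      also have "\<dots> = (\<Phi> g * Jm) *\<^sub>v x" using JR[OF g] by simp
      also have "\<dots> = \<Phi> g *\<^sub>v (Jm *\<^sub>v x)" using assoc_mult_mat_vec[OF FFt_carrier[OF gc] Jm xc] by simp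
      also have "\<dots> = 0\<^sub>v N" unfolding Jx by (rule mv_zero[OF FFt_carrier[OF gc]])
      finally show "R g *\<^sub>v x \<in> K" unfolding K_def using Rc[OF g] xc by simp
    qed
    have "K \<noteq> carrier_vec e"
    proof
      assume KC: "K = carrier_vec e"
      have "Jm *\<^sub>v x = 0\<^sub>m N e *\<^sub>v x" if x: "x \<in> carrier_vec e" for x
      proof -
        have "x \<in> K" using KC x by simp
        hence "Jm *\<^sub>v x = 0\<^sub>v N" unfolding K_def by simp
        thus ?thesis using zero_mv[OF x] by simp
      qed
      hence "Jm = 0\<^sub>m N e" by (intro mat_eq_by_mv[OF Jm], auto)
      thus False using J0 by simp
    qed
    hence "K = {0\<^sub>v e}" using Rirr[OF sub inv] by auto
    thus "v = 0\<^sub>v e" using v Jv unfolding K_def by auto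
  qed
  have AJ: "Am * Jm = Jm * B"
  proof -
    have "Am * Jm = msum G (\<lambda>g. (cw g \<cdot>\<^sub>m \<Phi> g) * Jm) N e"
      unfolding Am_def by (rule msum_mult_right[OF _ Jm], insert Phi_G, auto)
    also have "\<dots> = msum G (\<lambda>g. Jm * (cw g \<cdot>\<^sub>m R g)) N e"
    proof (rule msum_cong)
      fix g assume g: "g \<in> G"
      show "(cw g \<cdot>\<^sub>m \<Phi> g) * Jm = Jm * (cw g \<cdot>\<^sub>m R g)"
        using mult_smult_assoc_mat[OF Phi_G[OF g] Jm] mult_smult_distrib[OF Jm Rg[OF g]] JR[OF G_unitary[OF g]] by simp
    qed
    also have "\<dots> = Jm * B" unfolding B_def by (rule msum_mult_left[symmetric, OF Jm], insert Rg, auto)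
    finally show ?thesis .
  qed
  have RB: "R V * B = B" if V: "V \<in> ?UG" for V
  proof -
    have Vc: "V \<in> carrier_mat q q" using unitary_carrier[OF V] .
    have "Jm * (R V * B) = (\<Phi> V * Jm) * B" using assoc_mult_mat[OF Jm Rc[OF V] B] JR[OF V] by simp
    also have "\<dots> = \<Phi> V * (P * Jm)" using assoc_mult_mat[OF FFt_carrier[OF Vc] Jm B] AJ AP by simp
    also have "\<dots> = P * Jm" using assoc_mult_mat[OF FFt_carrier[OF Vc] P_carrier Jm] PM_left[OF V] by simp
    also have "\<dots> = Jm * B" using AJ AP by simp
    finally have eq: "Jm * (R V * B) = Jm * B" .
    show ?thesis
    proof (rule mat_eq_by_mv[OF mult_carrier_mat[OF Rc[OF V] B] B])
      fix x :: "complex vec" assume x: "x \<in> carrier_vec e"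
      have c1: "(R V * B) *\<^sub>v x \<in> carrier_vec e" and c2: "B *\<^sub>v x \<in> carrier_vec e" using Rc[OF V] B x by auto
      have "Jm *\<^sub>v ((R V * B) *\<^sub>v x - B *\<^sub>v x) = Jm *\<^sub>v ((R V * B) *\<^sub>v x) - Jm *\<^sub>v (B *\<^sub>v x)"
        by (rule mult_minus_distrib_mat_vec[OF Jm c1 c2])
      also have "\<dots> = 0\<^sub>v N"
        using assoc_mult_mat_vec[OF Jm mult_carrier_mat[OF Rc[OF V] B] x] assoc_mult_mat_vec[OF Jm B x] eq Jm
        by (auto intro!: eq_vecI)
      finally have "(R V * B) *\<^sub>v x - B *\<^sub>v x = 0\<^sub>v e" by (rule inj[rotated], insert c1 c2, simp)
      thus "(R V * B) *\<^sub>v x = B *\<^sub>v x" using c1 c2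
        by (metis (no_types, lifting) carrier_vecD eq_vecI index_minus_vec(1) index_zero_vec(1) right_minus_eq)
    qed
  qed
  have B0: "B = 0\<^sub>m e e"
  proof (rule ccontr)
    assume Bn: "B \<noteq> 0\<^sub>m e e"
    define C where "C = {B *\<^sub>v x | x. x \<in> carrier_vec e}"
    have sub: "is_subspace e C" unfolding is_subspace_def C_def
    proof (intro conjI ballI allI)
      show "{B *\<^sub>v x |x. x \<in> carrier_vec e} \<subseteq> carrier_vec e" using B by auto
      have "0\<^sub>v e = B *\<^sub>v 0\<^sub>v e \<and> 0\<^sub>v e \<in> carrier_vec e" using mv_zero[OF B] by simp
      thus "0\<^sub>v e \<in> {B *\<^sub>v x |x. x \<in> carrier_vec e}" by blast
      fix x y assume x: "x \<in> {B *\<^sub>v x |x. x \<in> carrier_vec e}" and y: "y \<in> {B *\<^sub>v x |x. x \<in> carrier_vec e}"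
      then obtain x' y' where x': "x' \<in> carrier_vec e" "x = B *\<^sub>v x'" and y': "y' \<in> carrier_vec e" "y = B *\<^sub>v y'" by auto
      have "x + y = B *\<^sub>v (x' + y')" using mult_add_distrib_mat_vec[OF B x'(1) y'(1)] x' y' by simp
      thus "x + y \<in> {B *\<^sub>v x |x. x \<in> carrier_vec e}" using x' y' by force
    next
      fix c :: complex and x assume x: "x \<in> {B *\<^sub>v x |x. x \<in> carrier_vec e}"
      then obtain x' where x': "x' \<in> carrier_vec e" "x = B *\<^sub>v x'" by auto
      have "c \<cdot>\<^sub>v x = B *\<^sub>v (c \<cdot>\<^sub>v x')" using mult_mat_vec[OF B x'(1)] x' by simp
      thus "c \<cdot>\<^sub>v x \<in> {B *\<^sub>v x |x. x \<in> carrier_vec e}" using x' by force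
    qed
    have inv: "\<forall>g\<in>?UG. \<forall>x\<in>C. R g *\<^sub>v x \<in> C"
    proof (intro ballI)
      fix g x assume g: "g \<in> ?UG" and x: "x \<in> C"
      then obtain x' where x': "x' \<in> carrier_vec e" "x = B *\<^sub>v x'" unfolding C_def by auto
      have "R g *\<^sub>v x = (R g * B) *\<^sub>v x'" using assoc_mult_mat_vec[OF Rc[OF g] B x'(1)] x' by simp
      also have "\<dots> = B *\<^sub>v x'" using RB[OF g] by simp
      finally show "R g *\<^sub>v x \<in> C" unfolding C_def using x' by auto
    qed
    have "C \<noteq> {0\<^sub>v e}"
    proof
      assume C0: "C = {0\<^sub>v e}"
      have "B *\<^sub>v x = 0\<^sub>m e e *\<^sub>v x" if x: "x \<in> carrier_vec e" for x
      proof -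
        have "B *\<^sub>v x \<in> C" unfolding C_def using x by blast
        hence "B *\<^sub>v x = 0\<^sub>v e" using C0 by simp
        thus ?thesis using zero_mv[OF x] by simp
      qed
      hence "B = 0\<^sub>m e e" by (intro mat_eq_by_mv[OF B], auto)
      thus False using Bn by simp
    qed
    hence CC: "C = carrier_vec e" using Rirr[OF sub inv] by auto
    have Rid: "R g = 1\<^sub>m e" if g: "g \<in> ?UG" for g
    proof (rule mat_eq_by_mv[OF Rc[OF g]], simp)
      fix x :: "complex vec" assume x: "x \<in> carrier_vec e"
      hence "x \<in> C" using CC by simp
      then obtain x' where x': "x' \<in> carrier_vec e" "x = B *\<^sub>v x'" unfolding C_def by auto
      have "R g *\<^sub>v x = (R g * B) *\<^sub>v x'" using assoc_mult_mat_vec[OF Rc[OF g] B x'(1)] x' by simp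
      also have "\<dots> = x" using RB[OF g] x' by simp
      finally show "R g *\<^sub>v x = 1\<^sub>m e *\<^sub>v x" using x by simp
    qed
    have "e = 1"
    proof (rule ccontr)
      assume "e \<noteq> 1" hence e2: "e \<ge> 2" using e1 by simp
      define L :: "complex vec set" where "L = {c \<cdot>\<^sub>v unit_vec e 0 | c. True}"
      have La: "L \<subseteq> carrier_vec e" unfolding L_def by auto
      have "0\<^sub>v e = (0::complex) \<cdot>\<^sub>v unit_vec e 0" by (auto intro!: eq_vecI)
      hence Lb: "0\<^sub>v e \<in> L" unfolding L_def by blast
      have Lc: "x + y \<in> L" if x: "x \<in> L" and y: "y \<in> L" for x y
      proof -
        obtain a b where "x = a \<cdot>\<^sub>v unit_vec e 0" "y = b \<cdot>\<^sub>v unit_vec e 0" using x y unfolding L_def by auto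
        hence "x + y = (a + b) \<cdot>\<^sub>v unit_vec e 0" by (auto intro!: eq_vecI simp: algebra_simps)
        thus ?thesis unfolding L_def by blast
      qed
      have Ld: "c \<cdot>\<^sub>v x \<in> L" if x: "x \<in> L" for x c
      proof -
        obtain a where "x = a \<cdot>\<^sub>v unit_vec e 0" using x unfolding L_def by auto
        hence "c \<cdot>\<^sub>v x = (c * a) \<cdot>\<^sub>v unit_vec e 0" by (auto intro!: eq_vecI)
        thus ?thesis unfolding L_def by blast
      qed
      have sub: "is_subspace e L" unfolding is_subspace_def using La Lb Lc Ld by blast
      have inv: "\<forall>g\<in>?UG. \<forall>x\<in>L. R g *\<^sub>v x \<in> L" using Rid unfolding L_def by auto
      have u0: "unit_vec e 0 \<in> L"
      proof -
        have "unit_vec e 0 = (1::complex) \<cdot>\<^sub>v unit_vec e 0" by (auto intro!: eq_vecI)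
        thus ?thesis unfolding L_def by blast
      qed
      have "L \<noteq> {0\<^sub>v e}"
      proof
        assume "L = {0\<^sub>v e}"
        hence "(unit_vec e 0 :: complex vec) = 0\<^sub>v e" using u0 by auto
        hence "(unit_vec e 0 :: complex vec) $ 0 = (0\<^sub>v e :: complex vec) $ 0" by simp
        thus False using e1 by simp
      qed
      moreover have "L \<noteq> carrier_vec e"
      proof
        assume "L = carrier_vec e"
        hence "unit_vec e 1 \<in> L" by simp
        then obtain c :: complex where "unit_vec e 1 = c \<cdot>\<^sub>v unit_vec e 0" unfolding L_def by auto
        hence "(unit_vec e 1 :: complex vec) $ 1 = (c \<cdot>\<^sub>v unit_vec e 0) $ 1" by simp
        thus False using e2 by simp
      qed
      ultimately show False using Rirr[OF sub inv] by auto
    qed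
    hence "trivial_rep ?UG e R" unfolding trivial_rep_def using Rid by auto
    thus False using nt by simp
  qed
  have "cinner G (\<lambda>g. cnj (lamc g) * lamc g) (\<lambda>g. mtrace (R g)) = mtrace B" unfolding cinner_eq trB ..
  also have "\<dots> = 0" unfolding B0 mtrace_def by simp
  finally show ?thesis .
qed

end


lemma col_unit: "(A :: complex mat) \<in> carrier_mat n m \<Longrightarrow> a < m \<Longrightarrow> col A a = A *\<^sub>v unit_vec m a"
  by (intro eq_vecI, auto simp: mv_unit)

lemma mat_eq_by_mv3:
  fixes X Y :: "complex mat"
  assumes X: "X \<in> carrier_mat n m" and Y: "Y \<in> carrier_mat n m"
  and h: "\<And>v. v \<in> carrier_vec m \<Longrightarrow> X *\<^sub>v v = Y *\<^sub>v v" shows "X = Y"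
  by (rule mat_eq_by_mv[OF X Y h])

context main_ctx
begin

lemma Phi_U: "U \<in> unitary_group q \<Longrightarrow> \<Phi> U \<in> carrier_mat N N"
  using FFt_carrier[OF unitary_carrier] by blast

lemma claim:
  assumes C: "\<forall>e R. in_E q t e R \<and> \<not> trivial_rep (unitary_group q) e R
                 \<longrightarrow> cinner G (\<lambda>g. cnj (lamc g) * lamc g) (\<lambda>g. mtrace (R g)) = 0"
  shows "J \<in> carrier_mat N e \<Longrightarrow> madj J * J = 1\<^sub>m e \<Longrightarrow>
         (\<forall>V\<in>unitary_group q. \<Phi> V * J = J * (madj J * \<Phi> V * J)) \<Longrightarrow> P * J = 0\<^sub>m N e \<Longrightarrow>
         \<forall>v\<in>carrier_vec e. Am *\<^sub>v (J *\<^sub>v v) = 0\<^sub>v N"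
proof (induct e arbitrary: J rule: less_induct)
  case (less e J)
  let ?UG = "unitary_group q"
  have J: "J \<in> carrier_mat N e" and JJ: "madj J * J = 1\<^sub>m e"
    and INV: "\<And>V. V \<in> ?UG \<Longrightarrow> \<Phi> V * J = J * (madj J * \<Phi> V * J)" and PJ: "P * J = 0\<^sub>m N e"
    using less.prems by auto
  have aJ: "madj J \<in> carrier_mat e N" using J by simp
  define R where "R U = madj J * \<Phi> U * J" for U
  have Rc: "R U \<in> carrier_mat e e" if U: "U \<in> ?UG" for U
    unfolding R_def using aJ Phi_U[OF U] J by (intro mult_carrier_mat, auto)
  have JR: "\<Phi> V * J = J * R V" if V: "V \<in> ?UG" for V unfolding R_def using INV[OF V] .
  have Rmult: "R (U * V) = R U * R V" if U: "U \<in> ?UG" and V: "V \<in> ?UG" for U V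
  proof -
    have FU: "\<Phi> U \<in> carrier_mat N N" and FV: "\<Phi> V \<in> carrier_mat N N" using Phi_U U V by auto
    have aF: "madj J * \<Phi> U \<in> carrier_mat e N" using aJ FU by (intro mult_carrier_mat)
    have "R U * R V = (madj J * \<Phi> U) * (J * R V)"
      unfolding R_def[of U] using assoc_mult_mat[OF aF J Rc[OF V]] by simp
    also have "J * R V = \<Phi> V * J" using JR[OF V] by simp
    also have "(madj J * \<Phi> U) * (\<Phi> V * J) = ((madj J * \<Phi> U) * \<Phi> V) * J"
      using assoc_mult_mat[OF aF FV J] by simp
    also have "(madj J * \<Phi> U) * \<Phi> V = madj J * (\<Phi> U * \<Phi> V)" using assoc_mult_mat[OF aJ FU FV] .
    also have "\<Phi> U * \<Phi> V = \<Phi> (U * V)" using FFt_mult[OF unitary_carrier[OF U] unitary_carrier[OF V]] by simp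
    finally show ?thesis unfolding R_def by simp
  qed
  have Rone: "R (1\<^sub>m q) = 1\<^sub>m e" unfolding R_def FFt_one using right_mult_one_mat[OF aJ] JJ by simp
  have Radj: "madj (R U) = R (madj U)" if U: "U \<in> ?UG" for U
  proof -
    have FU: "\<Phi> U \<in> carrier_mat N N" using Phi_U U by auto
    have "madj (R U) = madj J * madj (madj J * \<Phi> U)"
      unfolding R_def by (rule madj_mult[OF mult_carrier_mat[OF aJ FU] J])
    also have "madj (madj J * \<Phi> U) = madj (\<Phi> U) * J" using madj_mult[OF aJ FU] by simp
    also have "madj J * (madj (\<Phi> U) * J) = madj J * madj (\<Phi> U) * J"
      using assoc_mult_mat[OF aJ madj_carrier[OF FU] J] by simp
    finally show ?thesis unfolding R_def FFt_madj by simp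
  qed
  have rep: "is_rep ?UG e R" unfolding is_rep_def
  proof (intro conjI ballI)
    fix g assume g: "g \<in> ?UG"
    show "R g \<in> carrier_mat e e" by (rule Rc[OF g])
    have "R g * R (madj g) = 1\<^sub>m e" using Rmult[OF g unitary_madj[OF g]] unitary_right[OF g] Rone by simp
    thus "\<exists>B\<in>carrier_mat e e. R g * B = 1\<^sub>m e" using Rc[OF unitary_madj[OF g]] by blast
  next
    fix g h assume "g \<in> ?UG" "h \<in> ?UG" thus "R (g * h) = R g * R h" by (rule Rmult)
  qed
  have colP: "P *\<^sub>v col J a = 0\<^sub>v N" if a: "a < e" for a
    using col_mult2[OF P_carrier J a] PJ a by simp
  have colc: "col J a \<in> carrier_vec N" for a using J unfolding carrier_vec_def by simp
  show ?case
  proof (cases "irreducible_rep ?UG e R")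
    case True
    have e1: "e \<ge> 1" using True unfolding irreducible_rep_def by simp
    have J0: "J \<noteq> 0\<^sub>m N e"
    proof
      assume "J = 0\<^sub>m N e"
      hence "madj J * J = 0\<^sub>m e e" by simp
      hence "(1\<^sub>m e :: complex mat) $$ (0,0) = (0\<^sub>m e e :: complex mat) $$ (0,0)" using JJ by simp
      thus False using e1 by simp
    qed
    have inE: "in_E q t e R" unfolding in_E_def occurs_in_def using True J J0 JR by blast
    have ntriv: "\<not> trivial_rep ?UG e R"
    proof
      assume "trivial_rep ?UG e R"
      hence e_1: "e = 1" and R1: "\<And>V. V \<in> ?UG \<Longrightarrow> R V = 1\<^sub>m 1" unfolding trivial_rep_def by auto
      have inv0: "\<Phi> V *\<^sub>v col J 0 = col J 0" if V: "V \<in> ?UG" for V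
      proof -
        have "\<Phi> V * J = J" using JR[OF V] R1[OF V] J e_1 by simp
        thus ?thesis using col_mult2[OF Phi_U[OF V] J, of 0] e_1 by simp
      qed
      have "P *\<^sub>v col J 0 = col J 0" by (rule PM_fix[OF colc inv0])
      hence c0: "col J 0 = 0\<^sub>v N" using colP[of 0] e_1 by simp
      have "(madj J * 1\<^sub>m N * J) $$ (0,0) = ip (col J 0) (1\<^sub>m N *\<^sub>v col J 0)"
        by (rule adj_H_entry[OF J _ J], insert e_1, auto)
      also have "\<dots> = 0" unfolding c0 by (simp add: ip_def)
      finally show False using JJ J e_1 by simp
    qed
    have cz: "cinner G (\<lambda>g. cnj (lamc g) * lamc g) (\<lambda>g. mtrace (R g)) = 0" using C inE ntriv by blast
    have trR: "mtrace (R g) = (\<Sum>a<e. ip (col J a) (\<Phi> g *\<^sub>v col J a))" if g: "g \<in> G" for g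
    proof -
      have "mtrace (R g) = (\<Sum>a<e. R g $$ (a,a))" unfolding mtrace_def using Rc[OF G_unitary[OF g]] by simp
      also have "\<dots> = (\<Sum>a<e. ip (col J a) (\<Phi> g *\<^sub>v col J a))"
        unfolding R_def by (intro sum.cong refl, rule adj_H_entry[OF J Phi_G[OF g] J], auto)
      finally show ?thesis .
    qed
    have "(\<Sum>a<e. ip (col J a) (Am *\<^sub>v col J a)) = (\<Sum>a<e. \<Sum>g\<in>G. cw g * ip (col J a) (\<Phi> g *\<^sub>v col J a))"
      by (intro sum.cong refl, rule ip_Am[OF colc colc])
    also have "\<dots> = (\<Sum>g\<in>G. cw g * mtrace (R g))"
      by (subst sum.swap, intro sum.cong refl, simp add: trR sum_distrib_left)
    also have "\<dots> = 0" using cz unfolding cinner_eq .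
    finally have s0: "(\<Sum>a<e. ip (col J a) (Am *\<^sub>v col J a)) = 0" .
    have ipP: "ip (col J a) (P *\<^sub>v col J a) = 0" if a: "a < e" for a
      unfolding colP[OF a] using ip_zero_right[of "col J a"] J by simp
    have "(\<Sum>a<e. ip (col J a) (Am *\<^sub>v col J a) - ip (col J a) (P *\<^sub>v col J a)) = 0"
      using s0 ipP by simp
    hence "\<forall>a\<in>{..<e}. ip (col J a) (Am *\<^sub>v col J a) - ip (col J a) (P *\<^sub>v col J a) = 0"
      by (intro nonneg_sum_zero, insert D_nonneg colc, auto)
    hence colA: "Am *\<^sub>v col J a = 0\<^sub>v N" if a: "a < e" for a
      using D_zero[OF colc, of a] colP[OF a] a by simp
    have AJ: "Am * J = 0\<^sub>m N e"
      by (rule mat_zero_by_col[OF mult_carrier_mat[OF Am_carrier J]], insert colA col_mult2[OF Am_carrier J], simp)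
    show ?thesis
    proof
      fix v :: "complex vec" assume v: "v \<in> carrier_vec e"
      have "Am *\<^sub>v (J *\<^sub>v v) = (Am * J) *\<^sub>v v" using assoc_mult_mat_vec[OF Am_carrier J v] by simp
      thus "Am *\<^sub>v (J *\<^sub>v v) = 0\<^sub>v N" unfolding AJ using zero_mv[OF v] by simp
    qed
  next
    case False
    show ?thesis
    proof (cases "e = 0")
      case True
      show ?thesis
      proof
        fix v :: "complex vec" assume v: "v \<in> carrier_vec e"
        have "J *\<^sub>v v = 0\<^sub>v N" using J v True by (intro eq_vecI, auto simp: scalar_prod_def)
        thus "Am *\<^sub>v (J *\<^sub>v v) = 0\<^sub>v N" using mv_zero[OF Am_carrier] by simp
      qed
    next
      case e0: False
      obtain W where W: "is_subspace e W" and Winv: "\<forall>g\<in>?UG. \<forall>v\<in>W. R g *\<^sub>v v \<in> W"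
        and W0: "W \<noteq> {0\<^sub>v e}" and WC: "W \<noteq> carrier_vec e"
        using False rep e0 unfolding irreducible_rep_def by auto
      have Wc: "\<And>w. w \<in> W \<Longrightarrow> w \<in> carrier_vec e" using sub_carrier[OF W] by blast
      have useIH: "\<forall>v\<in>carrier_vec ex. Am *\<^sub>v (J *\<^sub>v (Jx *\<^sub>v v)) = 0\<^sub>v N"
        if Jx: "Jx \<in> carrier_mat e ex" and JxJx: "madj Jx * Jx = 1\<^sub>m ex" and ex: "ex < e"
          and JxW: "\<forall>a\<in>carrier_vec ex. Jx *\<^sub>v a \<in> Wx" and Wxinv: "\<forall>g\<in>?UG. \<forall>v\<in>Wx. R g *\<^sub>v v \<in> Wx"
          and Jxspan: "\<forall>w\<in>Wx. Jx *\<^sub>v (madj Jx *\<^sub>v w) = w"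
        for ex Jx Wx
      proof -
        have aJx: "madj Jx \<in> carrier_mat ex e" using Jx by simp
        define J' where "J' = J * Jx"
        have J': "J' \<in> carrier_mat N ex" unfolding J'_def using J Jx by (intro mult_carrier_mat)
        have aJ': "madj (J * Jx) = madj Jx * madj J" by (rule madj_mult[OF J Jx])
        have J'J': "madj J' * J' = 1\<^sub>m ex"
        proof -
          have "madj J' * J' = madj Jx * (madj J * (J * Jx))"
            unfolding aJ' J'_def using assoc_mult_mat[OF aJx aJ mult_carrier_mat[OF J Jx]] by simp
          also have "madj J * (J * Jx) = (madj J * J) * Jx" using assoc_mult_mat[OF aJ J Jx] by simp
          also have "\<dots> = Jx" using JJ Jx by simp
          finally show ?thesis using JxJx by simp
        qed
        have INV': "\<Phi> V * J' = J' * (madj J' * \<Phi> V * J')" if V: "V \<in> ?UG" for V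
        proof -
          have FV: "\<Phi> V \<in> carrier_mat N N" by (rule Phi_U[OF V])
          define S where "S = madj Jx * R V * Jx"
          have S: "S \<in> carrier_mat ex ex" unfolding S_def using aJx Rc[OF V] Jx by (intro mult_carrier_mat, auto)
          have RJx: "R V * Jx = Jx * S"
          proof (rule mat_eq_by_mv3[OF mult_carrier_mat[OF Rc[OF V] Jx] mult_carrier_mat[OF Jx S]])
            fix x :: "complex vec" assume x: "x \<in> carrier_vec ex"
            have y: "R V *\<^sub>v (Jx *\<^sub>v x) \<in> Wx" using Wxinv V JxW x by auto
            have "(Jx * S) *\<^sub>v x = Jx *\<^sub>v (S *\<^sub>v x)" using assoc_mult_mat_vec[OF Jx S x] .
            also have "S *\<^sub>v x = madj Jx *\<^sub>v (R V *\<^sub>v (Jx *\<^sub>v x))"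
              unfolding S_def using assoc_mult_mat_vec[OF mult_carrier_mat[OF aJx Rc[OF V]] Jx x]
                assoc_mult_mat_vec[OF aJx Rc[OF V], of "Jx *\<^sub>v x"] Jx x by simp
            also have "Jx *\<^sub>v \<dots> = R V *\<^sub>v (Jx *\<^sub>v x)" using Jxspan y by simp
            also have "\<dots> = (R V * Jx) *\<^sub>v x" using assoc_mult_mat_vec[OF Rc[OF V] Jx x] by simp
            finally show "(R V * Jx) *\<^sub>v x = (Jx * S) *\<^sub>v x" by simp
          qed
          have "\<Phi> V * J' = (\<Phi> V * J) * Jx" unfolding J'_def using assoc_mult_mat[OF FV J Jx] by simp
          also have "\<dots> = (J * R V) * Jx" using JR[OF V] by simp
          also have "\<dots> = J * (R V * Jx)" using assoc_mult_mat[OF J Rc[OF V] Jx] .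
          also have "\<dots> = J * (Jx * S)" unfolding RJx ..
          also have "\<dots> = J' * S" unfolding J'_def using assoc_mult_mat[OF J Jx S] by simp
          also have "S = madj J' * \<Phi> V * J'"
          proof -
            have "madj J' * \<Phi> V * J' = madj Jx * (madj J * \<Phi> V) * (J * Jx)"
              unfolding aJ' J'_def using assoc_mult_mat[OF aJx aJ FV] by simp
            also have "\<dots> = madj Jx * ((madj J * \<Phi> V) * (J * Jx))"
              using assoc_mult_mat[OF aJx mult_carrier_mat[OF aJ FV] mult_carrier_mat[OF J Jx]] .
            also have "(madj J * \<Phi> V) * (J * Jx) = R V * Jx"
              unfolding R_def using assoc_mult_mat[OF mult_carrier_mat[OF aJ FV] J Jx] by simp
            also have "madj Jx * (R V * Jx) = S" unfolding S_def using assoc_mult_mat[OF aJx Rc[OF V] Jx] by simp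
            finally show ?thesis by simp
          qed
          finally show ?thesis .
        qed
        have PJ': "P * J' = 0\<^sub>m N ex"
          unfolding J'_def using assoc_mult_mat[OF P_carrier J Jx, symmetric] PJ Jx by simp
        have "\<forall>v\<in>carrier_vec ex. Am *\<^sub>v (J' *\<^sub>v v) = 0\<^sub>v N"
          by (rule less.hyps[OF ex J' J'J' _ PJ'], insert INV', auto)
        thus ?thesis unfolding J'_def using assoc_mult_mat_vec[OF J Jx] by simp
      qed
      obtain e1 J1 where J1: "J1 \<in> carrier_mat e e1" and J1J1': "madj J1 * 1\<^sub>m e * J1 = 1\<^sub>m e1"
        and J1W: "\<forall>a\<in>carrier_vec e1. J1 *\<^sub>v a \<in> W" and J1span': "\<forall>w\<in>W. J1 *\<^sub>v (madj J1 *\<^sub>v (1\<^sub>m e *\<^sub>v w)) = w"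
        using basis_exists[OF hpd_one W] by blast
      have aJ1: "madj J1 \<in> carrier_mat e1 e" using J1 by simp
      have J1J1: "madj J1 * J1 = 1\<^sub>m e1" using J1J1' right_mult_one_mat[OF aJ1] by simp
      have J1span: "\<forall>w\<in>W. J1 *\<^sub>v (madj J1 *\<^sub>v w) = w" using J1span' Wc by simp
      define W2 where "W2 = {x \<in> carrier_vec e. \<forall>w\<in>W. ip w x = 0}"
      have W2: "is_subspace e W2" unfolding W2_def by (rule orth_subspace[OF W])
      have W2inv: "\<forall>g\<in>?UG. \<forall>v\<in>W2. R g *\<^sub>v v \<in> W2"
      proof (intro ballI)
        fix g v assume g: "g \<in> ?UG" and v: "v \<in> W2"
        have vc: "v \<in> carrier_vec e" using v unfolding W2_def by simp
        have "ip w (R g *\<^sub>v v) = 0" if w: "w \<in> W" for w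
        proof -
          have "ip w (R g *\<^sub>v v) = ip (madj (R g) *\<^sub>v w) v" by (rule ip_mv[OF Rc[OF g] Wc[OF w] vc])
          also have "madj (R g) *\<^sub>v w = R (madj g) *\<^sub>v w" using Radj[OF g] by simp
          also have "ip \<dots> v = 0" using v Winv unitary_madj[OF g] w unfolding W2_def by auto
          finally show ?thesis .
        qed
        thus "R g *\<^sub>v v \<in> W2" unfolding W2_def using Rc[OF g] vc by auto
      qed
      obtain e2 J2 where J2: "J2 \<in> carrier_mat e e2" and J2J2': "madj J2 * 1\<^sub>m e * J2 = 1\<^sub>m e2"
        and J2W: "\<forall>a\<in>carrier_vec e2. J2 *\<^sub>v a \<in> W2" and J2span': "\<forall>w\<in>W2. J2 *\<^sub>v (madj J2 *\<^sub>v (1\<^sub>m e *\<^sub>v w)) = w"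
        using basis_exists[OF hpd_one W2] by blast
      have aJ2: "madj J2 \<in> carrier_mat e2 e" using J2 by simp
      have J2J2: "madj J2 * J2 = 1\<^sub>m e2" using J2J2' right_mult_one_mat[OF aJ2] by simp
      have J2span: "\<forall>w\<in>W2. J2 *\<^sub>v (madj J2 *\<^sub>v w) = w" using J2span' unfolding W2_def by auto
      have e1: "e1 < e"
      proof -
        have le: "e1 \<le> e" by (rule inv_bound[OF aJ1 J1 J1J1])
        have "e1 \<noteq> e"
        proof
          assume ee: "e1 = e"
          have "J1 * madj J1 = 1\<^sub>m e" using mat_mult_left_right_inverse[of "madj J1" e J1] aJ1 J1 J1J1 ee by simp
          hence "v \<in> W" if v: "v \<in> carrier_vec e" for v
          proof -
            assume JJ1: "J1 * madj J1 = 1\<^sub>m e"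
            have "v = (J1 * madj J1) *\<^sub>v v" using JJ1 v by simp
            also have "\<dots> = J1 *\<^sub>v (madj J1 *\<^sub>v v)" using assoc_mult_mat_vec[OF J1 aJ1 v] .
            finally have veq: "v = J1 *\<^sub>v (madj J1 *\<^sub>v v)" .
            have "J1 *\<^sub>v (madj J1 *\<^sub>v v) \<in> W" using J1W mult_mat_vec_carrier[OF aJ1 v] by blast
            thus ?thesis using veq by simp
          qed
          hence "W = carrier_vec e" using Wc by blast
          thus False using WC by simp
        qed
        thus ?thesis using le by simp
      qed
      have e2: "e2 < e"
      proof -
        have le: "e2 \<le> e" by (rule inv_bound[OF aJ2 J2 J2J2])
        have "e2 \<noteq> e"
        proof
          assume ee: "e2 = e"
          have JJ2: "J2 * madj J2 = 1\<^sub>m e" using mat_mult_left_right_inverse[of "madj J2" e J2] aJ2 J2 J2J2 ee by simp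
          have inW2: "v \<in> W2" if v: "v \<in> carrier_vec e" for v
          proof -
            have "v = (J2 * madj J2) *\<^sub>v v" using JJ2 v by simp
            also have "\<dots> = J2 *\<^sub>v (madj J2 *\<^sub>v v)" using assoc_mult_mat_vec[OF J2 aJ2 v] .
            finally have veq: "v = J2 *\<^sub>v (madj J2 *\<^sub>v v)" .
            have "J2 *\<^sub>v (madj J2 *\<^sub>v v) \<in> W2" using J2W mult_mat_vec_carrier[OF aJ2 v] by blast
            thus ?thesis using veq by simp
          qed
          have "w = 0\<^sub>v e" if w: "w \<in> W" for w
          proof -
            have "ip w w = 0" using inW2[OF Wc[OF w]] w unfolding W2_def by auto
            thus ?thesis by (rule ip_self_zero[OF Wc[OF w]])
          qed
          hence "W = {0\<^sub>v e}" using sub_zero[OF W] by blast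
          thus False using W0 by simp
        qed
        thus ?thesis using le by simp
      qed
      have IH1: "\<forall>v\<in>carrier_vec e1. Am *\<^sub>v (J *\<^sub>v (J1 *\<^sub>v v)) = 0\<^sub>v N"
        by (rule useIH[OF J1 J1J1 e1 J1W Winv J1span])
      have IH2: "\<forall>v\<in>carrier_vec e2. Am *\<^sub>v (J *\<^sub>v (J2 *\<^sub>v v)) = 0\<^sub>v N"
        by (rule useIH[OF J2 J2J2 e2 J2W W2inv J2span])
      show ?thesis
      proof
        fix v :: "complex vec" assume v: "v \<in> carrier_vec e"
        define \<alpha> where "\<alpha> = madj J1 *\<^sub>v v"
        have \<alpha>: "\<alpha> \<in> carrier_vec e1" unfolding \<alpha>_def using aJ1 v by simp
        have J1\<alpha>: "J1 *\<^sub>v \<alpha> \<in> carrier_vec e" using J1 \<alpha> by simp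
        define r where "r = v - J1 *\<^sub>v \<alpha>"
        have rc: "r \<in> carrier_vec e" unfolding r_def using v J1\<alpha> by simp
        have rW2: "r \<in> W2"
        proof -
          have "ip w r = 0" if w: "w \<in> W" for w
          proof -
            have wc: "w \<in> carrier_vec e" by (rule Wc[OF w])
            have "ip w r = ip w v - ip w (J1 *\<^sub>v \<alpha>)" unfolding r_def by (rule ip_minus_right, insert v J1\<alpha> wc J1, auto)
            also have "ip w (J1 *\<^sub>v \<alpha>) = ip (madj J1 *\<^sub>v w) \<alpha>" by (rule ip_mv[OF J1 wc \<alpha>])
            also have "\<dots> = ip (J1 *\<^sub>v (madj J1 *\<^sub>v w)) v"
              unfolding \<alpha>_def using ip_mv[OF aJ1 _ v, of "madj J1 *\<^sub>v w"] aJ1 wc by simp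
            also have "\<dots> = ip w v" using J1span w by simp
            finally show ?thesis by simp
          qed
          thus ?thesis unfolding W2_def using rc by auto
        qed
        define \<beta>' where "\<beta>' = madj J2 *\<^sub>v r"
        have \<beta>': "\<beta>' \<in> carrier_vec e2" unfolding \<beta>'_def using aJ2 rc by simp
        have J2\<beta>: "J2 *\<^sub>v \<beta>' = r" unfolding \<beta>'_def using J2span rW2 by simp
        have dec: "v = J1 *\<^sub>v \<alpha> + J2 *\<^sub>v \<beta>'" unfolding J2\<beta> r_def using v J1\<alpha> J1 by (intro eq_vecI, auto)
        have "J *\<^sub>v v = J *\<^sub>v (J1 *\<^sub>v \<alpha>) + J *\<^sub>v (J2 *\<^sub>v \<beta>')"
          unfolding dec by (rule mult_add_distrib_mat_vec[OF J J1\<alpha>], insert J2 \<beta>', simp)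
        hence "Am *\<^sub>v (J *\<^sub>v v) = Am *\<^sub>v (J *\<^sub>v (J1 *\<^sub>v \<alpha>)) + Am *\<^sub>v (J *\<^sub>v (J2 *\<^sub>v \<beta>'))"
          using mult_add_distrib_mat_vec[OF Am_carrier, of "J *\<^sub>v (J1 *\<^sub>v \<alpha>)" "J *\<^sub>v (J2 *\<^sub>v \<beta>')"] J J1\<alpha> J2 \<beta>' by simp
        also have "\<dots> = 0\<^sub>v N + 0\<^sub>v N" using IH1 IH2 \<alpha> \<beta>' by simp
        finally show "Am *\<^sub>v (J *\<^sub>v v) = 0\<^sub>v N" by simp
      qed
    qed
  qed
qed

end


context main_ctx
begin

lemma c_imp_a:
  assumes C: "\<forall>e R. in_E q t e R \<and> \<not> trivial_rep (unitary_group q) e R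
                 \<longrightarrow> cinner G (\<lambda>g. cnj (lamc g) * lamc g) (\<lambda>g. mtrace (R g)) = 0"
  shows "Am = P"
proof -
  let ?UG = "unitary_group q"
  define Inv where "Inv = {x \<in> carrier_vec N. \<forall>V\<in>?UG. \<Phi> V *\<^sub>v x = x}"
  have Inv: "is_subspace N Inv" unfolding is_subspace_def
  proof (intro conjI ballI allI)
    show "Inv \<subseteq> carrier_vec N" unfolding Inv_def by auto
    show "0\<^sub>v N \<in> Inv" unfolding Inv_def using mv_zero[OF Phi_U] by auto
  next
    fix x y assume x: "x \<in> Inv" and y: "y \<in> Inv"
    show "x + y \<in> Inv" using x y mult_add_distrib_mat_vec[OF Phi_U] unfolding Inv_def by auto
  next
    fix c :: complex and x assume x: "x \<in> Inv"
    show "c \<cdot>\<^sub>v x \<in> Inv" using x mult_mat_vec[OF Phi_U] unfolding Inv_def by auto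
  qed
  define W0 where "W0 = {x \<in> carrier_vec N. \<forall>w\<in>Inv. ip w x = 0}"
  have W0: "is_subspace N W0" unfolding W0_def by (rule orth_subspace[OF Inv])
  obtain e J where J: "J \<in> carrier_mat N e" and JJ': "madj J * 1\<^sub>m N * J = 1\<^sub>m e"
    and JW: "\<forall>a\<in>carrier_vec e. J *\<^sub>v a \<in> W0" and Jspan': "\<forall>w\<in>W0. J *\<^sub>v (madj J *\<^sub>v (1\<^sub>m N *\<^sub>v w)) = w"
    using basis_exists[OF hpd_one W0] by blast
  have aJ: "madj J \<in> carrier_mat e N" using J by simp
  have JJ: "madj J * J = 1\<^sub>m e" using JJ' right_mult_one_mat[OF aJ] by simp
  have Jspan: "\<forall>w\<in>W0. J *\<^sub>v (madj J *\<^sub>v w) = w" using Jspan' unfolding W0_def by auto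
  have W0inv: "\<Phi> V *\<^sub>v v \<in> W0" if V: "V \<in> ?UG" and v: "v \<in> W0" for V v
  proof -
    have vc: "v \<in> carrier_vec N" using v unfolding W0_def by simp
    have "ip y (\<Phi> V *\<^sub>v v) = 0" if y: "y \<in> Inv" for y
    proof -
      have yc: "y \<in> carrier_vec N" using y unfolding Inv_def by simp
      have "ip y (\<Phi> V *\<^sub>v v) = ip (madj (\<Phi> V) *\<^sub>v y) v" by (rule ip_mv[OF Phi_U[OF V] yc vc])
      also have "madj (\<Phi> V) *\<^sub>v y = y" using y unitary_madj[OF V] unfolding Inv_def FFt_madj[symmetric] by auto
      finally show ?thesis using v y unfolding W0_def by auto
    qed
    thus ?thesis unfolding W0_def using Phi_U[OF V] vc by auto
  qed
  have INV: "\<forall>V\<in>?UG. \<Phi> V * J = J * (madj J * \<Phi> V * J)"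
  proof
    fix V assume V: "V \<in> ?UG"
    have FV: "\<Phi> V \<in> carrier_mat N N" by (rule Phi_U[OF V])
    have M: "madj J * \<Phi> V * J \<in> carrier_mat e e" using aJ FV J by (intro mult_carrier_mat, auto)
    show "\<Phi> V * J = J * (madj J * \<Phi> V * J)"
    proof (rule mat_eq_by_mv[OF mult_carrier_mat[OF FV J] mult_carrier_mat[OF J M]])
      fix x :: "complex vec" assume x: "x \<in> carrier_vec e"
      have y: "\<Phi> V *\<^sub>v (J *\<^sub>v x) \<in> W0" using W0inv[OF V] JW x by auto
      have "(J * (madj J * \<Phi> V * J)) *\<^sub>v x = J *\<^sub>v ((madj J * \<Phi> V * J) *\<^sub>v x)" using assoc_mult_mat_vec[OF J M x] .
      also have "(madj J * \<Phi> V * J) *\<^sub>v x = madj J *\<^sub>v (\<Phi> V *\<^sub>v (J *\<^sub>v x))"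
        using assoc_mult_mat_vec[OF mult_carrier_mat[OF aJ FV] J x] assoc_mult_mat_vec[OF aJ FV, of "J *\<^sub>v x"] J x by simp
      also have "J *\<^sub>v \<dots> = \<Phi> V *\<^sub>v (J *\<^sub>v x)" using Jspan y by simp
      also have "\<dots> = (\<Phi> V * J) *\<^sub>v x" using assoc_mult_mat_vec[OF FV J x] by simp
      finally show "(\<Phi> V * J) *\<^sub>v x = (J * (madj J * \<Phi> V * J)) *\<^sub>v x" by simp
    qed
  qed
  have PW0: "P *\<^sub>v w = 0\<^sub>v N" if w: "w \<in> W0" for w
  proof (rule vec_eq_by_ip[of _ N])
    fix z :: "complex vec" assume z: "z \<in> carrier_vec N"
    have wc: "w \<in> carrier_vec N" using w unfolding W0_def by simp
    have "ip z (P *\<^sub>v w) = ip (P *\<^sub>v z) w" by (rule PM_ip_sym[symmetric, OF wc z])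
    also have "\<dots> = 0" using w PM_col_inv[OF _ z] z unfolding W0_def Inv_def by auto
    finally show "ip z (P *\<^sub>v w) = ip z (0\<^sub>v N)" using ip_zero_right[of z] z by simp
  qed (insert w, auto simp: W0_def)
  have PJ: "P * J = 0\<^sub>m N e"
  proof (rule mat_eq_by_mv[OF mult_carrier_mat[OF P_carrier J]], simp)
    fix x :: "complex vec" assume x: "x \<in> carrier_vec e"
    have "(P * J) *\<^sub>v x = P *\<^sub>v (J *\<^sub>v x)" using assoc_mult_mat_vec[OF P_carrier J x] .
    also have "\<dots> = 0\<^sub>v N" using PW0 JW x by auto
    finally show "(P * J) *\<^sub>v x = 0\<^sub>m N e *\<^sub>v x" using zero_mv[OF x] by simp
  qed
  have AJ: "\<forall>v\<in>carrier_vec e. Am *\<^sub>v (J *\<^sub>v v) = 0\<^sub>v N" by (rule claim[OF C J JJ INV PJ])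
  show ?thesis
  proof (rule mat_eq_by_mv[OF Am_carrier P_carrier])
    fix x :: "complex vec" assume x: "x \<in> carrier_vec N"
    have Px: "P *\<^sub>v x \<in> carrier_vec N" using x by simp
    define r where "r = x - P *\<^sub>v x"
    have rc: "r \<in> carrier_vec N" unfolding r_def using x Px by simp
    have rW: "r \<in> W0"
    proof -
      have "ip y r = 0" if y: "y \<in> Inv" for y
      proof -
        have yc: "y \<in> carrier_vec N" using y unfolding Inv_def by simp
        have "ip y r = ip y x - ip y (P *\<^sub>v x)" unfolding r_def by (rule ip_minus_right, insert x Px yc, auto)
        also have "ip y (P *\<^sub>v x) = ip y x" by (rule PM_ip[OF yc x], insert y, unfold Inv_def, auto)
        finally show ?thesis by simp
      qed
      thus ?thesis unfolding W0_def using rc by auto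
    qed
    have Ar: "Am *\<^sub>v r = 0\<^sub>v N"
    proof -
      have "r = J *\<^sub>v (madj J *\<^sub>v r)" using Jspan rW by simp
      moreover have "madj J *\<^sub>v r \<in> carrier_vec e" using aJ rc by simp
      ultimately show ?thesis using AJ by metis
    qed
    have xd: "x = r + P *\<^sub>v x" unfolding r_def using x Px by (intro eq_vecI, auto)
    have "Am *\<^sub>v x = Am *\<^sub>v r + Am *\<^sub>v (P *\<^sub>v x)"
      by (subst xd, rule mult_add_distrib_mat_vec[OF Am_carrier rc Px])
    also have "\<dots> = P *\<^sub>v x" using Ar Am_Pv[OF x] Px by simp
    finally show "Am *\<^sub>v x = P *\<^sub>v x" .
  qed
qed

end

theorem lemma3:
  fixes q t d :: nat and G :: "complex mat set" and M :: "complex mat measure"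
    and \<rho> :: "complex mat \<Rightarrow> complex mat"
  assumes "q \<ge> 1"
    and "haar_measure q M"
    and "finite_subgroup_unitary q G"
    and "irreducible_rep G d \<rho>"
  defines "lam \<equiv> (\<lambda>g. mtrace (\<rho> g))"
  shows "(twisted_unitary_design q M G lam t
          \<longleftrightarrow> cnorm G (\<lambda>g. lam g * (mtrace g) ^ t)
              = of_real (LINT U|M. (cmod (mtrace U)) ^ (2 * t)))
       \<and> (twisted_unitary_design q M G lam t
          \<longleftrightarrow> (\<forall>e R. in_E q t e R \<and> \<not> trivial_rep (unitary_group q) e R
                 \<longrightarrow> cinner G (\<lambda>g. cnj (lam g) * lam g) (\<lambda>g. mtrace (R g)) = 0))"
proof -
  interpret main_ctx q M G d \<rho> t
    by (unfold_locales, insert assms, auto simp: haar_ctx_def rep_ctx_def)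
  have L: "lam = lamc" unfolding lam_def by (rule ext, simp add: lamc_def)
  show ?thesis unfolding L design_iff b_iff ab[symmetric]
    using a_imp_c c_imp_a by blast
qed

end
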